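(* Let $\mathcal P=\{p_0,\dots,p_6\}$ be a typical heptagonal $7$-configuration with a cyclic numeration, indices taken modulo $7$, and let $0\le i\le 6$. Then: (a) $d_{i,j}+d_{i+1,j}=1$ for all $0\le j\le 6$ with $j\ne i,i+1$; (b) if $d(p_i)\ne 0,6$, then $d_{i,i+1}=d_{i+1,i}$ and $d_{i-1,i}=d_{i,i-1}$; (c) if $d(p_i)\ne 0,6$, then $d_{i-1,i}\ne d_{i,i+1}$.
   Context: A $7$-configuration is a set of $7$ distinct points in $\mathbb{RP}^2$; it is typical if no three of its points are collinear and no six lie on a common conic. It is heptagonal if there is a line $\ell$ disjoint from it such that its points are the vertices of a convex heptagon in the affine plane $\mathbb{RP}^2\smallsetminus\ell$; a cyclic numeration $p_0,\dots,p_6$ lists the points as consecutive vertices of this heptagon. For $i\ne j$ let $Q_{i,j}$ be the conic through the five points of $\mathcal P\smallsetminus\{p_i,p_j\}$, and set $d_{i,j}=0$ if $p_i$ lies inside $Q_{i,j}$ and $d_{i,j}=1$ if $p_i$ lies outside $Q_{i,j}$ ("inside" = the component of the complement of the conic homeomorphic to a disc). The dominance index is $d(p_i)=\sum_{j\ne i}d_{i,j}$. *)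

theory Defs
  imports "HOL-Analysis.Analysis"
begin

text \<open>Points of RP^2 are represented by nonzero vectors of real^3 (homogeneous
coordinates).  A 7-configuration with a numeration is a map from the index type 7
(integers mod 7) to real^3.\<close>

definition mat3 :: "real^3 \<Rightarrow> real^3 \<Rightarrow> real^3 \<Rightarrow> real^3^3" where
  "mat3 a b c = (\<chi> r. if r = 1 then a else if r = 2 then b else c)"

definition det3 :: "real^3 \<Rightarrow> real^3 \<Rightarrow> real^3 \<Rightarrow> real" where
  "det3 a b c = det (mat3 a b c)"

text \<open>Quadratic form of a symmetric matrix; a conic is the zero set of a nonzero
quadratic form (matrix up to nonzero scaling).\<close>

definition qf :: "real^3^3 \<Rightarrow> real^3 \<Rightarrow> real" where
  "qf A x = x \<bullet> (A *v x)"

definition conic_through :: "real^3^3 \<Rightarrow> (real^3) set \<Rightarrow> bool" where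
  "conic_through A S \<longleftrightarrow> transpose A = A \<and> A \<noteq> 0 \<and> (\<forall>x\<in>S. qf A x = 0)"

definition config7 :: "(7 \<Rightarrow> real^3) \<Rightarrow> bool" where
  "config7 p \<longleftrightarrow> (\<forall>k. p k \<noteq> 0) \<and> (\<forall>a b. a \<noteq> b \<longrightarrow> \<not> (\<exists>c. p a = c *\<^sub>R p b))"

definition typical7 :: "(7 \<Rightarrow> real^3) \<Rightarrow> bool" where
  "typical7 p \<longleftrightarrow> config7 p
     \<and> (\<forall>a b c. a \<noteq> b \<and> a \<noteq> c \<and> b \<noteq> c \<longrightarrow> det3 (p a) (p b) (p c) \<noteq> 0)
     \<and> (\<forall>m. \<not> (\<exists>A. conic_through A (p ` (UNIV - {m}))))"

text \<open>Affine chart of RP^2 minus the line {x. w \<bullet> x = 0}: the point x is sent to the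
representative lying on the affine plane {y. w \<bullet> y = 1}.  In that plane det3 of three
points is a nonzero multiple (fixed sign) of their oriented area.\<close>

definition aff :: "real^3 \<Rightarrow> real^3 \<Rightarrow> real^3" where
  "aff w x = (1 / (w \<bullet> x)) *\<^sub>R x"

text \<open>Heptagonal with cyclic numeration p 0, ..., p 6: there is a line (w \<noteq> 0)
missing all points such that in the affine plane the points p k are consecutive vertices
of a convex heptagon, i.e. for every edge (p k, p (k+1)) all other vertices lie strictly
on the same side, with a consistent orientation \<sigma>.\<close>

definition heptagonal_cyclic :: "(7 \<Rightarrow> real^3) \<Rightarrow> bool" where
  "heptagonal_cyclic p \<longleftrightarrow> (\<exists>w \<sigma>. w \<noteq> 0 \<and> \<sigma> \<in> {1, -1::real} \<and> (\<forall>k. w \<bullet> p k \<noteq> 0)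
     \<and> (\<forall>k m. m \<noteq> k \<and> m \<noteq> k + 1 \<longrightarrow>
            \<sigma> * det3 (aff w (p k)) (aff w (p (k + 1))) (aff w (p m)) > 0))"

text \<open>Q_{i,j}: the conic through the five points other than p i, p j
(unique up to scaling for a typical configuration).\<close>

definition Qconic :: "(7 \<Rightarrow> real^3) \<Rightarrow> 7 \<Rightarrow> 7 \<Rightarrow> real^3^3" where
  "Qconic p i j = (SOME A. conic_through A (p ` (UNIV - {i, j})))"

text \<open>Outside of a nondegenerate real conic with matrix A: the non-disc component of the
complement.  For signature (2,1) or (1,2) the disc component is where qf A x has the
sign of det A, so x lies outside iff qf A x * det A < 0 (independent of scaling of A
and of the representative x).\<close>

definition outside_conic :: "real^3^3 \<Rightarrow> real^3 \<Rightarrow> bool" where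
  "outside_conic A x \<longleftrightarrow> qf A x * det A < 0"

definition dd :: "(7 \<Rightarrow> real^3) \<Rightarrow> 7 \<Rightarrow> 7 \<Rightarrow> nat" where
  "dd p i j = (if outside_conic (Qconic p i j) (p i) then 1 else 0)"

definition dom_index :: "(7 \<Rightarrow> real^3) \<Rightarrow> 7 \<Rightarrow> nat" where
  "dom_index p i = (\<Sum>j \<in> UNIV - {i}. dd p i j)"

end

theory Submission
  imports Defs
begin


lemma det3_expand: "det3 a b c = a$1*b$2*c$3 + a$2*b$3*c$1 + a$3*b$1*c$2 - a$1*b$3*c$2 - a$2*b$1*c$3 - a$3*b$2*c$1"
  unfolding det3_def det_3 mat3_def by (simp add: algebra_simps)

lemma qf_expand: "qf A x = x$1*(A$1$1*x$1 + A$1$2*x$2 + A$1$3*x$3) + x$2*(A$2$1*x$1 + A$2$2*x$2 + A$2$3*x$3) + x$3*(A$3$1*x$1 + A$3$2*x$2 + A$3$3*x$3)"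
  by (simp add: qf_def inner_vec_def matrix_vector_mult_def sum_3)

definition bil :: "real^3^3 \<Rightarrow> real^3 \<Rightarrow> real^3 \<Rightarrow> real" where
  "bil A x y = x \<bullet> (A *v y)"

lemma bil_expand: "bil A x y = x$1*(A$1$1*y$1 + A$1$2*y$2 + A$1$3*y$3) + x$2*(A$2$1*y$1 + A$2$2*y$2 + A$2$3*y$3) + x$3*(A$3$1*y$1 + A$3$2*y$2 + A$3$3*y$3)"
  by (simp add: bil_def inner_vec_def matrix_vector_mult_def sum_3)

lemma sym_entries: assumes "transpose A = A"
  shows "A$2$1 = A$1$2" "A$3$1 = A$1$3" "A$3$2 = A$2$3"
proof -
  have "\<And>i j. A$i$j = A$j$i" using assms by (metis transpose_def vec_lambda_beta)
  then show "A$2$1 = A$1$2" "A$3$1 = A$1$3" "A$3$2 = A$2$3" by auto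
qed

lemma cramer: "det3 a b c *\<^sub>R x = det3 x b c *\<^sub>R a + det3 a x c *\<^sub>R b + det3 a b x *\<^sub>R c"
  unfolding vec_eq_iff forall_3 det3_expand by (simp add: algebra_simps)

lemma qf_comb: assumes "transpose A = A"
  shows "qf A (r1 *\<^sub>R a + r2 *\<^sub>R b + r3 *\<^sub>R c) = r1^2 * qf A a + r2^2 * qf A b + r3^2 * qf A c
     + 2*r1*r2*bil A a b + 2*r1*r3*bil A a c + 2*r2*r3*bil A b c"
  unfolding qf_expand bil_expand sym_entries[OF assms] vector_add_component vector_scaleR_component real_scaleR_def
  by algebra

lemma qf_scale: "qf A (r *\<^sub>R x) = r^2 * qf A x"
  unfolding qf_expand by (simp add: algebra_simps power2_eq_square)

lemma bil_sym: assumes "transpose A = A" shows "bil A y x = bil A x y"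
  using sym_entries[OF assms] unfolding bil_expand by (simp add: algebra_simps)

lemma qf_bil: "qf A x = bil A x x" by (simp add: qf_def bil_def)

lemma mat3_rows: "mat3 a b c $ 1 = a" "mat3 a b c $ 2 = b" "mat3 a b c $ 3 = c"
  by (simp_all add: mat3_def)

lemma congr_entry: "(M ** A ** transpose M) $ i $ j = bil A (M$i) (M$j)"
  unfolding bil_expand matrix_matrix_mult_def transpose_def
  by (simp add: sum_3 algebra_simps)

definition qc :: "real^3 \<Rightarrow> real^3 \<Rightarrow> real^3 \<Rightarrow> real^3 \<Rightarrow> real^3" where
  "qc a b c u = vector [det3 u b c * det3 a u c, det3 u b c * det3 a b u, det3 a u c * det3 a b u]"

lemma qc_comp: "qc a b c u $ 1 = det3 u b c * det3 a u c" "qc a b c u $ 2 = det3 u b c * det3 a b u"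
   "qc a b c u $ 3 = det3 a u c * det3 a b u"
  by (simp_all add: qc_def)

lemma qf_frame:
  assumes "transpose A = A" "qf A a = 0" "qf A b = 0" "qf A c = 0"
  shows "(det3 a b c)^2 * qf A x = 2*(bil A a b * (qc a b c x)$1 + bil A a c * (qc a b c x)$2 + bil A b c * (qc a b c x)$3)"
proof -
  have "(det3 a b c)^2 * qf A x = qf A (det3 a b c *\<^sub>R x)" by (simp add: qf_scale)
  also have "\<dots> = qf A (det3 x b c *\<^sub>R a + det3 a x c *\<^sub>R b + det3 a b x *\<^sub>R c)" by (subst cramer, rule refl)
  also have "\<dots> = 2*(bil A a b * (qc a b c x)$1 + bil A a c * (qc a b c x)$2 + bil A b c * (qc a b c x)$3)"
    unfolding qf_comb[OF assms(1)] assms(2-4) qc_comp by (simp add: algebra_simps)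
  finally show ?thesis .
qed

lemma det_frame:
  assumes "transpose A = A" "qf A a = 0" "qf A b = 0" "qf A c = 0"
  shows "(det3 a b c)^2 * det A = 2 * bil A a b * bil A a c * bil A b c"
proof -
  let ?M = "mat3 a b c"
  have "det (?M ** A ** transpose ?M) = det ?M * det A * det ?M"
    by (simp add: det_mul det_transpose)
  also have "\<dots> = (det3 a b c)^2 * det A" by (simp add: det3_def power2_eq_square)
  finally have e1: "det (?M ** A ** transpose ?M) = (det3 a b c)^2 * det A" .
  have "det (?M ** A ** transpose ?M) = 2 * bil A a b * bil A a c * bil A b c"
    unfolding det_3 congr_entry mat3_rows qf_bil[symmetric] assms(2-4) bil_sym[OF assms(1), of b a]
      bil_sym[OF assms(1), of c a] bil_sym[OF assms(1), of c b]
    by (simp add: algebra_simps)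
  with e1 show ?thesis by simp
qed

lemma A_zero:
  assumes "transpose A = A" "\<forall>x. qf A x = 0"
  shows "A = 0"
proof -
  have s: "A$2$1 = A$1$2" "A$3$1 = A$1$3" "A$3$2 = A$2$3" using sym_entries[OF assms(1)] by auto
  have q: "\<And>x. qf A x = 0" using assms(2) by auto
  have d1: "A$1$1 = 0" using q[of "vector [1,0,0]"] unfolding qf_expand by simp
  have d2: "A$2$2 = 0" using q[of "vector [0,1,0]"] unfolding qf_expand by simp
  have d3: "A$3$3 = 0" using q[of "vector [0,0,1]"] unfolding qf_expand by simp
  have o1: "A$1$2 = 0" using q[of "vector [1,1,0]"] d1 d2 s unfolding qf_expand by simp
  have o2: "A$1$3 = 0" using q[of "vector [1,0,1]"] d1 d3 s unfolding qf_expand by simp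
  have o3: "A$2$3 = 0" using q[of "vector [0,1,1]"] d2 d3 s unfolding qf_expand by simp
  show ?thesis unfolding vec_eq_iff forall_3 using d1 d2 d3 o1 o2 o3 s by simp
qed

definition crs :: "real^3 \<Rightarrow> real^3 \<Rightarrow> real^3" where
  "crs D E = vector [D$2*E$3 - D$3*E$2, D$3*E$1 - D$1*E$3, D$1*E$2 - D$2*E$1]"

lemma crs_comp: "crs D E $ 1 = D$2*E$3 - D$3*E$2" "crs D E $ 2 = D$3*E$1 - D$1*E$3" "crs D E $ 3 = D$1*E$2 - D$2*E$1"
  by (simp_all add: crs_def)

lemma orth_par:
  fixes v1 v2 v3 d1 d2 d3 e1 e2 e3 :: real
  assumes "v1*d1+v2*d2+v3*d3 = 0" "v1*e1+v2*e2+v3*e3 = 0"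
  defines "w1 \<equiv> d2*e3 - d3*e2" and "w2 \<equiv> d3*e1 - d1*e3" and "w3 \<equiv> d1*e2 - d2*e1"
  shows "v1*(w1^2+w2^2+w3^2) = (v1*w1+v2*w2+v3*w3)*w1"
    "v2*(w1^2+w2^2+w3^2) = (v1*w1+v2*w2+v3*w3)*w2"
    "v3*(w1^2+w2^2+w3^2) = (v1*w1+v2*w2+v3*w3)*w3"
  using assms unfolding w1_def w2_def w3_def by algebra+

lemma CL:
  assumes sym: "transpose A = A" and nz: "A \<noteq> 0"
    and za: "qf A a = 0" and zb: "qf A b = 0" and zc: "qf A c = 0" and zd: "qf A d = 0" and ze: "qf A e = 0"
    and dl: "det3 a b c \<noteq> 0"
    and w1: "crs (qc a b c d) (qc a b c e) $ 1 \<noteq> 0"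
    and w2: "crs (qc a b c d) (qc a b c e) $ 2 \<noteq> 0"
    and w3: "crs (qc a b c d) (qc a b c e) $ 3 \<noteq> 0"
  shows "(outside_conic A x \<longleftrightarrow> det3 (qc a b c d) (qc a b c e) (qc a b c x) *
            (crs (qc a b c d) (qc a b c e) $ 1 * crs (qc a b c d) (qc a b c e) $ 2 * crs (qc a b c d) (qc a b c e) $ 3) < 0)
       \<and> (qf A x \<noteq> 0 \<longrightarrow> det3 (qc a b c d) (qc a b c e) (qc a b c x) \<noteq> 0)"
proof -
  define D where "D = qc a b c d"
  define E where "E = qc a b c e"
  define X where "X = qc a b c x"
  define W where "W = crs D E"
  define \<alpha> where "\<alpha> = bil A a b"
  define \<beta> where "\<beta> = bil A a c"
  define \<gamma> where "\<gamma> = bil A b c"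
  define \<Delta> where "\<Delta> = det3 a b c"
  have fr: "\<And>y. \<Delta>^2 * qf A y = 2*(\<alpha> * (qc a b c y)$1 + \<beta> * (qc a b c y)$2 + \<gamma> * (qc a b c y)$3)"
    unfolding \<alpha>_def \<beta>_def \<gamma>_def \<Delta>_def using qf_frame[OF sym za zb zc] by blast
  have oD: "\<alpha>*D$1 + \<beta>*D$2 + \<gamma>*D$3 = 0" using fr[of d] zd unfolding D_def by simp
  have oE: "\<alpha>*E$1 + \<beta>*E$2 + \<gamma>*E$3 = 0" using fr[of e] ze unfolding E_def by simp
  have W1: "W$1 \<noteq> 0" and W2: "W$2 \<noteq> 0" and W3: "W$3 \<noteq> 0" using w1 w2 w3 unfolding W_def D_def E_def by auto
  define n where "n = (W$1)^2 + (W$2)^2 + (W$3)^2"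
  have npos: "n > 0" unfolding n_def using W1 by (simp add: add_pos_nonneg sum_power2_gt_zero_iff)
  define lam where "lam = (\<alpha>*W$1 + \<beta>*W$2 + \<gamma>*W$3) / n"
  have par: "\<alpha> = lam * W$1" "\<beta> = lam * W$2" "\<gamma> = lam * W$3"
    using orth_par[OF oD oE] npos unfolding lam_def W_def crs_comp n_def
    by (auto simp: field_simps)
  have lnz: "lam \<noteq> 0"
  proof
    assume "lam = 0"
    then have "\<alpha> = 0" "\<beta> = 0" "\<gamma> = 0" using par by auto
    then have "\<forall>y. qf A y = 0" using fr dl unfolding \<Delta>_def by simp
    then have "A = 0" using A_zero[OF sym] by blast
    with nz show False by simp
  qed
  have qx: "\<Delta>^2 * qf A x = 2 * lam * det3 D E X"
    unfolding fr par X_def W_def D_def E_def det3_expand crs_comp by (simp add: algebra_simps)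
  have dA: "\<Delta>^2 * det A = 2 * lam^3 * (W$1 * W$2 * W$3)"
    unfolding \<Delta>_def det_frame[OF sym za zb zc] \<alpha>_def[symmetric] \<beta>_def[symmetric] \<gamma>_def[symmetric] par
    by (simp add: algebra_simps power3_eq_cube)
  have dpos: "\<Delta>^2 > 0" using dl unfolding \<Delta>_def by simp
  have key: "(\<Delta>^2 * qf A x) * (\<Delta>^2 * det A) = (4 * lam^4) * (det3 D E X * (W$1 * W$2 * W$3))"
    unfolding qx dA by (simp add: algebra_simps power3_eq_cube power4_eq_xxxx)
  have l4: "4 * lam^4 > 0" using lnz by simp
  have "outside_conic A x \<longleftrightarrow> qf A x * det A < 0" by (simp add: outside_conic_def)
  also have "\<dots> \<longleftrightarrow> (\<Delta>^2 * qf A x) * (\<Delta>^2 * det A) < 0"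
    using dpos by (simp add: mult_less_0_iff zero_less_mult_iff mult_less_0_iff)
  also have "\<dots> \<longleftrightarrow> det3 D E X * (W$1 * W$2 * W$3) < 0"
    unfolding key using l4 by (simp add: mult_less_0_iff)
  finally have part1: "outside_conic A x \<longleftrightarrow> det3 D E X * (W$1 * W$2 * W$3) < 0" .
  have part2: "qf A x \<noteq> 0 \<longrightarrow> det3 D E X \<noteq> 0" using qx dl lnz unfolding \<Delta>_def by auto
  show ?thesis using part1 part2 unfolding D_def E_def X_def W_def by blast
qed




lemma gp1: "det3 d b c * det3 a e c - det3 a d c * det3 e b c = det3 a b c * det3 d e c"
  unfolding det3_expand by (simp add: algebra_simps)
lemma gp2: "det3 a b d * det3 e b c - det3 d b c * det3 a b e = det3 a b c * det3 d e b"
  unfolding det3_expand by (simp add: algebra_simps)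
lemma gp3: "det3 a d c * det3 a b e - det3 a b d * det3 a e c = det3 a b c * det3 d e a"
  unfolding det3_expand by (simp add: algebra_simps)
lemma gp_chi: "det3 a e v * det3 a u w = det3 a e u * det3 a v w + det3 a e w * det3 a u v"
  unfolding det3_expand by (simp add: algebra_simps)

lemma crs_br:
  "crs (qc a b c d) (qc a b c e) $ 1 = det3 a b d * det3 a b e * (det3 a b c * det3 d e c)"
  "crs (qc a b c d) (qc a b c e) $ 2 = det3 a d c * det3 a e c * (det3 a b c * det3 d e b)"
  "crs (qc a b c d) (qc a b c e) $ 3 = det3 d b c * det3 e b c * (det3 a b c * det3 d e a)"
proof -
  have "crs (qc a b c d) (qc a b c e) $ 1 = det3 a b d * det3 a b e * (det3 d b c * det3 a e c - det3 a d c * det3 e b c)"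
    unfolding crs_comp qc_comp by (simp add: algebra_simps)
  then show "crs (qc a b c d) (qc a b c e) $ 1 = det3 a b d * det3 a b e * (det3 a b c * det3 d e c)" by (simp only: gp1)
  have "crs (qc a b c d) (qc a b c e) $ 2 = det3 a d c * det3 a e c * (det3 a b d * det3 e b c - det3 d b c * det3 a b e)"
    unfolding crs_comp qc_comp by (simp add: algebra_simps)
  then show "crs (qc a b c d) (qc a b c e) $ 2 = det3 a d c * det3 a e c * (det3 a b c * det3 d e b)" by (simp only: gp2)
  have "crs (qc a b c d) (qc a b c e) $ 3 = det3 d b c * det3 e b c * (det3 a d c * det3 a b e - det3 a b d * det3 a e c)"
    unfolding crs_comp qc_comp by (simp add: algebra_simps)
  then show "crs (qc a b c d) (qc a b c e) $ 3 = det3 d b c * det3 e b c * (det3 a b c * det3 d e a)" by (simp only: gp3)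
qed

lemma det3_swap12: "det3 b a c = - det3 a b c" unfolding det3_expand by (simp add: algebra_simps)
lemma det3_swap23: "det3 a c b = - det3 a b c" unfolding det3_expand by (simp add: algebra_simps)
lemma det3_swap13: "det3 c b a = - det3 a b c" unfolding det3_expand by (simp add: algebra_simps)
lemma det3_rot1: "det3 b c a = det3 a b c" unfolding det3_expand by (simp add: algebra_simps)
lemma det3_rot2: "det3 c a b = det3 a b c" unfolding det3_expand by (simp add: algebra_simps)
lemma det3_scale: "det3 (r *\<^sub>R a) (s *\<^sub>R b) (t *\<^sub>R c) = r * s * t * det3 a b c"
  unfolding det3_expand by (simp add: algebra_simps)

lemma chi_trans:
  assumes "det3 a e u \<ge> 0" "det3 a e v > 0" "det3 a e w > 0" "det3 a u v > 0" "det3 a v w > 0"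
  shows "det3 a u w > 0"
proof -
  have h: "det3 a e v * det3 a u w = det3 a e u * det3 a v w + det3 a e w * det3 a u v" by (rule gp_chi)
  have "det3 a e u * det3 a v w + det3 a e w * det3 a u v > 0"
    using assms by (intro add_nonneg_pos mult_nonneg_nonneg mult_pos_pos) auto
  then have "det3 a e v * det3 a u w > 0" using h by linarith
  with assms(2) show ?thesis using zero_less_mult_pos by blast
qed

definition lp :: "real^3 \<Rightarrow> real^3 \<Rightarrow> real^3^3" where
  "lp n m = (\<chi> i j. (n$i * m$j + m$i * n$j) / 2)"

lemma lp_sym: "transpose (lp n m) = lp n m"
  unfolding lp_def transpose_def vec_eq_iff by (simp add: algebra_simps)

lemma qf_lp: "qf (lp n m) x = (n \<bullet> x) * (m \<bullet> x)"
  unfolding qf_expand lp_def inner_vec_def sum_3 by (simp add: algebra_simps)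

lemma det3_crs: "det3 a b x = crs a b \<bullet> x"
  unfolding det3_expand inner_vec_def sum_3 crs_comp by (simp add: algebra_simps)

lemma qf_lp_det: "qf (lp (crs p1 p2) (crs p3 p4)) x = det3 p1 p2 x * det3 p3 p4 x"
  by (simp add: qf_lp det3_crs)

lemma qf_add: "qf (A + B) x = qf A x + qf B x"
  unfolding qf_def by (simp add: matrix_vector_mult_add_rdistrib inner_add_right)
lemma qf_smult: "qf (r *\<^sub>R A) x = r * qf A x"
  unfolding qf_expand by (simp add: algebra_simps)
lemma qf_diff: "qf (A - B) x = qf A x - qf B x"
  unfolding qf_expand by (simp add: algebra_simps)

lemma det3_rep: "det3 a a b = 0" "det3 a b a = 0" "det3 a b b = 0"
  unfolding det3_expand by (simp_all add: algebra_simps)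
lemma det3_add3: "det3 a b (x + y) = det3 a b x + det3 a b y"
  unfolding det3_expand by (simp add: algebra_simps)

definition conic5 :: "real^3 \<Rightarrow> real^3 \<Rightarrow> real^3 \<Rightarrow> real^3 \<Rightarrow> real^3 \<Rightarrow> real^3^3" where
  "conic5 a b c d e = (det3 a c e * det3 b d e) *\<^sub>R lp (crs a b) (crs c d) - (det3 a b e * det3 c d e) *\<^sub>R lp (crs a c) (crs b d)"

lemma qf_conic5: "qf (conic5 a b c d e) x = det3 a c e * det3 b d e * (det3 a b x * det3 c d x) - det3 a b e * det3 c d e * (det3 a c x * det3 b d x)"
  unfolding conic5_def qf_diff qf_smult qf_lp_det by simp

lemma conic5_through:
  assumes "det3 a b e \<noteq> 0" "det3 c d e \<noteq> 0" "det3 a c b \<noteq> 0" "det3 b d a \<noteq> 0"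
  shows "conic_through (conic5 a b c d e) {a,b,c,d,e}"
proof -
  have s: "transpose (conic5 a b c d e) = conic5 a b c d e"
    unfolding conic5_def transpose_def lp_def vec_eq_iff by (simp add: algebra_simps)
  have z: "qf (conic5 a b c d e) y = 0" if "y \<in> {a,b,c,d,e}" for y
    using that unfolding qf_conic5 by (auto simp: det3_rep)
  have "qf (conic5 a b c d e) (a + b) = - (det3 a b e * det3 c d e * (det3 a c b * det3 b d a))"
    unfolding qf_conic5 det3_add3 by (simp add: det3_rep)
  then have "qf (conic5 a b c d e) (a + b) \<noteq> 0" using assms by simp
  then have "conic5 a b c d e \<noteq> 0" unfolding qf_def by auto
  with s z show ?thesis unfolding conic_through_def by blast
qed



lemma four_vec:
  fixes D X Y Z :: "real^3"
  shows "(f1*X$1+f2*X$2+f3*X$3)*det3 D Y Z - (f1*Y$1+f2*Y$2+f3*Y$3)*det3 D X Z + (f1*Z$1+f2*Z$2+f3*Z$3)*det3 D X Y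
     - (f1*D$1+f2*D$2+f3*D$3)*det3 X Y Z = 0"
  unfolding det3_expand by (simp add: algebra_simps)

lemma LP:
  assumes sym: "transpose M = M" and za: "qf M a = 0" and zb: "qf M b = 0" and zc: "qf M c = 0" and zd: "qf M d = 0"
    and dl: "det3 a b c \<noteq> 0"
  shows "qf M x * det3 (qc a b c d) (qc a b c y) (qc a b c z) - qf M y * det3 (qc a b c d) (qc a b c x) (qc a b c z)
     + qf M z * det3 (qc a b c d) (qc a b c x) (qc a b c y) = 0"
proof -
  let ?f = "\<lambda>u. bil M a b * (qc a b c u)$1 + bil M a c * (qc a b c u)$2 + bil M b c * (qc a b c u)$3"
  have fr: "\<And>u. (det3 a b c)^2 * qf M u = 2 * ?f u" using qf_frame[OF sym za zb zc] by blast
  have fd: "?f d = 0" using fr[of d] zd by simp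
  have fv: "?f x * det3 (qc a b c d) (qc a b c y) (qc a b c z) - ?f y * det3 (qc a b c d) (qc a b c x) (qc a b c z)
     + ?f z * det3 (qc a b c d) (qc a b c x) (qc a b c y) = 0"
    using four_vec[of "bil M a b" "qc a b c x" "bil M a c" "bil M b c" "qc a b c d" "qc a b c y" "qc a b c z"] fd
    by simp
  define G1 where "G1 = det3 (qc a b c d) (qc a b c y) (qc a b c z)"
  define G2 where "G2 = det3 (qc a b c d) (qc a b c x) (qc a b c z)"
  define G3 where "G3 = det3 (qc a b c d) (qc a b c x) (qc a b c y)"
  have "(det3 a b c)^2 * (qf M x * G1 - qf M y * G2 + qf M z * G3) =
     ((det3 a b c)^2 * qf M x) * G1 - ((det3 a b c)^2 * qf M y) * G2 + ((det3 a b c)^2 * qf M z) * G3"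
    by (simp add: algebra_simps)
  also have "\<dots> = 2 * (?f x * G1 - ?f y * G2 + ?f z * G3)" unfolding fr by (simp add: algebra_simps)
  also have "\<dots> = 0" using fv unfolding G1_def G2_def G3_def by simp
  finally have "(det3 a b c)^2 * (qf M x * G1 - qf M y * G2 + qf M z * G3) = 0" .
  then show ?thesis using dl unfolding G1_def G2_def G3_def by simp
qed



lemma num7[simp]: "(7::7) = 0" by simp

lemma neg1_7[simp]: "(-1::7) = 6" by simp

lemma U7: "(UNIV::7 set) = {0,1,2,3,4,5,6}"
proof -
  have c: "card {0,1,2,3,4,5,6::7} = 7" by simp
  have d: "CARD(7) = 7" by simp
  show ?thesis
    apply (rule sym, rule card_seteq) using c d by auto
qed

lemma all7: "(\<forall>x::7. P x) \<longleftrightarrow> P 0 \<and> P 1 \<and> P 2 \<and> P 3 \<and> P 4 \<and> P 5 \<and> P 6"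
  by (metis U7 UNIV_I insertE empty_iff)

lemma univ7: assumes "distinct [a,b,c,d,e,f,g::7]" shows "UNIV = {a,b,c,d,e,f,g}"
proof -
  have c: "card {a,b,c,d,e,f,g} = 7" using assms by (simp add: card_insert_if)
  have d: "CARD(7) = 7" by simp
  show ?thesis
    apply (rule sym, rule card_seteq) using c d by auto
qed

definition Gf :: "(7 \<Rightarrow> real^3) \<Rightarrow> 7 \<Rightarrow> 7 \<Rightarrow> 7 \<Rightarrow> 7 \<Rightarrow> 7 \<Rightarrow> 7 \<Rightarrow> real" where
  "Gf q a b c d x y = det3 (qc (q a) (q b) (q c) (q d)) (qc (q a) (q b) (q c) (q x)) (qc (q a) (q b) (q c) (q y))"

definition Kf :: "(7 \<Rightarrow> real^3) \<Rightarrow> 7 \<Rightarrow> 7 \<Rightarrow> 7 \<Rightarrow> 7 \<Rightarrow> 7 \<Rightarrow> real" where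
  "Kf q a b c d w = crs (qc (q a) (q b) (q c) (q d)) (qc (q a) (q b) (q c) (q w)) $ 1 *
     crs (qc (q a) (q b) (q c) (q d)) (qc (q a) (q b) (q c) (q w)) $ 2 *
     crs (qc (q a) (q b) (q c) (q d)) (qc (q a) (q b) (q c) (q w)) $ 3"

lemma Gf_swap: "Gf q a b c d y x = - Gf q a b c d x y"
  unfolding Gf_def by (rule det3_swap23)

lemma Kf_br: "Kf q a b c d w =
   (det3 (q a) (q b) (q d) * det3 (q a) (q b) (q w) * (det3 (q a) (q b) (q c) * det3 (q d) (q w) (q c))) *
   (det3 (q a) (q d) (q c) * det3 (q a) (q w) (q c) * (det3 (q a) (q b) (q c) * det3 (q d) (q w) (q b))) *
   (det3 (q d) (q b) (q c) * det3 (q w) (q b) (q c) * (det3 (q a) (q b) (q c) * det3 (q d) (q w) (q a)))"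
  unfolding Kf_def crs_br by simp

lemma Fgen:
  fixes q :: "7 \<Rightarrow> real^3"
  assumes no6: "\<forall>m A. \<not> conic_through A (q ` (UNIV - {m}))"
    and dist: "distinct [a,b,c,d,w,u,v]"
    and n1: "det3 (q a) (q b) (q c) \<noteq> 0" and n2: "det3 (q a) (q b) (q d) \<noteq> 0"
    and n3: "det3 (q a) (q b) (q w) \<noteq> 0" and n4: "det3 (q d) (q w) (q c) \<noteq> 0"
    and n5: "det3 (q a) (q d) (q c) \<noteq> 0" and n6: "det3 (q a) (q w) (q c) \<noteq> 0"
    and n7: "det3 (q d) (q w) (q b) \<noteq> 0" and n8: "det3 (q d) (q b) (q c) \<noteq> 0"
    and n9: "det3 (q w) (q b) (q c) \<noteq> 0" and n10: "det3 (q d) (q w) (q a) \<noteq> 0"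
    and n11: "det3 (q c) (q d) (q w) \<noteq> 0" and n12: "det3 (q a) (q c) (q b) \<noteq> 0"
    and n13: "det3 (q b) (q d) (q a) \<noteq> 0"
  shows "dd q u v = (if Gf q a b c d w u * Kf q a b c d w < 0 then 1 else 0) \<and> Gf q a b c d w u \<noteq> 0"
proof -
  have U: "UNIV = {a,b,c,d,w,u,v}" using univ7[OF dist] .
  have S5: "UNIV - {u,v} = {a,b,c,d,w}" using dist unfolding U by auto
  have S6: "UNIV - {v} = insert u {a,b,c,d,w}" using dist unfolding U by auto
  have img: "q ` (UNIV - {u,v}) = {q a, q b, q c, q d, q w}" unfolding S5 by simp
  have ex: "\<exists>A. conic_through A (q ` (UNIV - {u,v}))"
    unfolding img using conic5_through[OF n3 n11 n12 n13] by blast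
  define A where "A = Qconic q u v"
  have ct: "conic_through A (q ` (UNIV - {u,v}))"
    unfolding A_def Qconic_def using someI_ex[OF ex] .
  then have sym: "transpose A = A" and nz: "A \<noteq> 0" and
    z: "qf A (q a) = 0" "qf A (q b) = 0" "qf A (q c) = 0" "qf A (q d) = 0" "qf A (q w) = 0"
    unfolding conic_through_def img by auto
  have qu: "qf A (q u) \<noteq> 0"
  proof
    assume "qf A (q u) = 0"
    then have "conic_through A (q ` (UNIV - {v}))" using sym nz z unfolding conic_through_def S6 by auto
    with no6 show False by blast
  qed
  have w1: "crs (qc (q a) (q b) (q c) (q d)) (qc (q a) (q b) (q c) (q w)) $ 1 \<noteq> 0"
    unfolding crs_br using n1 n2 n3 n4 by simp
  have w2: "crs (qc (q a) (q b) (q c) (q d)) (qc (q a) (q b) (q c) (q w)) $ 2 \<noteq> 0"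
    unfolding crs_br using n1 n5 n6 n7 by simp
  have w3: "crs (qc (q a) (q b) (q c) (q d)) (qc (q a) (q b) (q c) (q w)) $ 3 \<noteq> 0"
    unfolding crs_br using n1 n8 n9 n10 by simp
  note cl = CL[OF sym nz z n1 w1 w2 w3, of "q u"]
  show ?thesis using cl qu unfolding dd_def A_def[symmetric] Gf_def Kf_def by auto
qed
lemma conic_scale_iff:
  assumes "\<forall>k. c k \<noteq> (0::real)"
  shows "conic_through A ((\<lambda>k. c k *\<^sub>R p k) ` S) \<longleftrightarrow> conic_through A (p ` S)"
  using assms unfolding conic_through_def by (auto simp: qf_scale)

lemma dd_scale:
  assumes "\<forall>k. c k \<noteq> (0::real)"
  shows "dd (\<lambda>k. c k *\<^sub>R p k) i j = dd p i j"
proof -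
  have Q: "Qconic (\<lambda>k. c k *\<^sub>R p k) i j = Qconic p i j"
    unfolding Qconic_def using conic_scale_iff[OF assms] by simp
  have "outside_conic A (c i *\<^sub>R p i) \<longleftrightarrow> outside_conic A (p i)" for A
  proof -
    have "(c i)^2 > 0" using assms by simp
    then show ?thesis unfolding outside_conic_def qf_scale
      by (simp add: mult.assoc mult_less_0_iff zero_less_mult_iff)
  qed
  then show ?thesis unfolding dd_def Q by simp
qed

lemma dom_scale:
  assumes "\<forall>k. c k \<noteq> (0::real)"
  shows "dom_index (\<lambda>k. c k *\<^sub>R p k) i = dom_index p i"
  unfolding dom_index_def using dd_scale[OF assms] by simp

lemma edge_q:
  fixes p :: "7 \<Rightarrow> real^3"
  assumes "w \<noteq> 0" "\<sigma> \<in> {1, -1::real}" "\<forall>k. w \<bullet> p k \<noteq> 0"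
    "\<forall>k m. m \<noteq> k \<and> m \<noteq> k + 1 \<longrightarrow> \<sigma> * det3 (aff w (p k)) (aff w (p (k + 1))) (aff w (p m)) > 0"
  shows "\<forall>k m. m \<noteq> k \<and> m \<noteq> k + 1 \<longrightarrow> 0 < det3 ((\<lambda>k. (\<sigma> / (w \<bullet> p k)) *\<^sub>R p k) k)
      ((\<lambda>k. (\<sigma> / (w \<bullet> p k)) *\<^sub>R p k) (k+1)) ((\<lambda>k. (\<sigma> / (w \<bullet> p k)) *\<^sub>R p k) m)"
proof (intro allI impI)
  fix k m :: 7 assume km: "m \<noteq> k \<and> m \<noteq> k + 1"
  have e: "\<And>x. (\<sigma> / (w \<bullet> x)) *\<^sub>R x = \<sigma> *\<^sub>R aff w x" unfolding aff_def by simp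
  have s3: "\<sigma> * \<sigma> * \<sigma> = \<sigma>" using assms(2) by auto
  show "0 < det3 ((\<lambda>k. (\<sigma> / (w \<bullet> p k)) *\<^sub>R p k) k)
      ((\<lambda>k. (\<sigma> / (w \<bullet> p k)) *\<^sub>R p k) (k+1)) ((\<lambda>k. (\<sigma> / (w \<bullet> p k)) *\<^sub>R p k) m)"
    unfolding e det3_scale s3 using assms(4) km by blast
qed
lemma LPgen:
  fixes q :: "7 \<Rightarrow> real^3"
  assumes n1: "det3 (q a) (q b) (q c) \<noteq> 0"
    and sub: "{a,b,c,d} \<subseteq> {p1,p2,p3,p4}" and pr: "\<And>t. t \<in> {a,b,c,d} \<Longrightarrow> t \<in> {p1,p2} \<or> t \<in> {p3,p4}"
  shows "(det3 (q p1) (q p2) (q x) * det3 (q p3) (q p4) (q x)) * Gf q a b c d y z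
       + (- (det3 (q p1) (q p2) (q y) * det3 (q p3) (q p4) (q y))) * Gf q a b c d x z
       + (det3 (q p1) (q p2) (q z) * det3 (q p3) (q p4) (q z)) * Gf q a b c d x y = 0"
proof -
  let ?M = "lp (crs (q p1) (q p2)) (crs (q p3) (q p4))"
  have z: "qf ?M (q t) = 0" if "t \<in> {a,b,c,d}" for t
    using pr[OF that] unfolding qf_lp_det by (auto simp: det3_rep)
  have "qf ?M (q x) * Gf q a b c d y z - qf ?M (q y) * Gf q a b c d x z + qf ?M (q z) * Gf q a b c d x y = 0"
    unfolding Gf_def by (rule LP[OF lp_sym z z z z n1]) auto
  then show ?thesis unfolding qf_lp_det by simp
qed

lemma three_sign:
  fixes c1 c2 c3 g1 g2 g3 :: real
  assumes "c1*g1 + c2*g2 + c3*g3 = 0" "g1\<noteq>0" "g2\<noteq>0" "g3\<noteq>0" "c1\<noteq>0" "c2\<noteq>0" "c3\<noteq>0"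
  shows "\<not>((0<c1 \<longleftrightarrow> 0<g1) \<and> (0<c2 \<longleftrightarrow> 0<g2) \<and> (0<c3 \<longleftrightarrow> 0<g3))
       \<and> \<not>((0<c1 \<longleftrightarrow> \<not>0<g1) \<and> (0<c2 \<longleftrightarrow> \<not>0<g2) \<and> (0<c3 \<longleftrightarrow> \<not>0<g3))"
proof -
  have p: "0 < c*g \<longleftrightarrow> (0<c \<longleftrightarrow> 0<g)" if "c\<noteq>0" "g\<noteq>0" for c g :: real
    using that by (auto simp: zero_less_mult_iff)
  have n: "c*g < 0 \<longleftrightarrow> (0<c \<longleftrightarrow> \<not>0<g)" if "c\<noteq>0" "g\<noteq>0" for c g :: real
    using that by (auto simp: mult_less_0_iff)
  have "\<not>(0 < c1*g1 \<and> 0 < c2*g2 \<and> 0 < c3*g3)" "\<not>(c1*g1 < 0 \<and> c2*g2 < 0 \<and> c3*g3 < 0)"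
    using assms(1) by linarith+
  then show ?thesis using p n assms(2-7) by metis
qed

lemma Fbool:
  fixes G K :: real and x :: nat
  assumes "x = (if G * K < 0 then 1 else 0)" "G \<noteq> 0" "K \<noteq> 0"
  shows "(x = 1 \<longleftrightarrow> (0 < K \<longleftrightarrow> \<not> 0 < G)) \<and> (x = 0 \<longleftrightarrow> (0 < K \<longleftrightarrow> 0 < G))"
  using assms by (auto simp: mult_less_0_iff)

lemma dd01: "dd q u v = 0 \<or> dd q u v = 1" unfolding dd_def by auto

lemma dom_ne:
  assumes "dom_index q i \<notin> {0, 6}"
  shows "(\<exists>j\<in>UNIV-{i}. dd q i j = 1) \<and> (\<exists>j\<in>UNIV-{i}. dd q i j = 0)"
proof -
  have c: "card (UNIV - {i::7}) = 6" by (simp add: card_Diff_singleton)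
  have "\<not> (\<forall>j\<in>UNIV-{i}. dd q i j = 0)"
  proof
    assume "\<forall>j\<in>UNIV-{i}. dd q i j = 0"
    then have "dom_index q i = 0" unfolding dom_index_def by simp
    with assms show False by simp
  qed
  moreover have "\<not> (\<forall>j\<in>UNIV-{i}. dd q i j = 1)"
  proof
    assume "\<forall>j\<in>UNIV-{i}. dd q i j = 1"
    then have "dom_index q i = card (UNIV - {i})" unfolding dom_index_def by simp
    with assms c show False by simp
  qed
  ultimately show ?thesis using dd01 by metis
qed

lemma sum_one: "x = 1 \<and> y = 0 \<or> x = 0 \<and> y = (1::nat) \<Longrightarrow> x + y = 1" by auto

lemma Gf_swap_pos: "Gf q a b c d x y \<noteq> 0 \<Longrightarrow> (0 < Gf q a b c d y x \<longleftrightarrow> \<not> 0 < Gf q a b c d x y)"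
  using Gf_swap[of q a b c d y x] by auto

lemma sgn_pos_iff1: "sgn (x::real) = 1 \<Longrightarrow> 0 < x" by (simp add: sgn_if split: if_splits)
lemma sgn_neg_iff1: "sgn (x::real) = -1 \<Longrightarrow> \<not> 0 < x \<and> x \<noteq> 0" by (simp add: sgn_if split: if_splits)

lemma Gf_swap_nz: "Gf q a b c d x y \<noteq> 0 \<Longrightarrow> Gf q a b c d y x \<noteq> 0"
  using Gf_swap[of q a b c d y x] by auto

definition Dd :: "(7 \<Rightarrow> real^3) \<Rightarrow> 7 \<Rightarrow> 7 \<Rightarrow> bool" where
  "Dd q u v \<longleftrightarrow> dd q u v = 1"

lemma ex7: "(\<exists>x::7. P x) \<longleftrightarrow> P 0 \<or> P 1 \<or> P 2 \<or> P 3 \<or> P 4 \<or> P 5 \<or> P 6"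
  by (metis U7 UNIV_I insertE empty_iff)

lemma conv:
  assumes A: "\<forall>j. j \<noteq> i \<and> j \<noteq> i+1 \<longrightarrow> (Dd q i j \<longleftrightarrow> \<not> Dd q (i+1) j)"
    and B: "(\<exists>j. j \<noteq> i \<and> Dd q i j) \<and> (\<exists>j. j \<noteq> i \<and> \<not> Dd q i j) \<longrightarrow>
      (Dd q i (i+1) \<longleftrightarrow> Dd q (i+1) i) \<and> (Dd q (i-1) i \<longleftrightarrow> Dd q i (i-1)) \<and> (Dd q (i-1) i \<longleftrightarrow> \<not> Dd q i (i+1))"
  shows "(\<forall>j. j \<noteq> i \<and> j \<noteq> i + 1 \<longrightarrow> dd q i j + dd q (i + 1) j = 1)
    \<and> (dom_index q i \<notin> {0, 6} \<longrightarrow> dd q i (i + 1) = dd q (i + 1) i \<and> dd q (i - 1) i = dd q i (i - 1))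
    \<and> (dom_index q i \<notin> {0, 6} \<longrightarrow> dd q (i - 1) i \<noteq> dd q i (i + 1))"
proof (intro conjI impI allI)
  fix j assume "j \<noteq> i \<and> j \<noteq> i + 1"
  then show "dd q i j + dd q (i + 1) j = 1" using A dd01[of q i j] dd01[of q "i+1" j] unfolding Dd_def by force
next
  assume "dom_index q i \<notin> {0, 6}"
  then have h0: "(\<exists>j\<in>UNIV-{i}. dd q i j = 1) \<and> (\<exists>j\<in>UNIV-{i}. dd q i j = 0)" by (rule dom_ne)
  then have h: "(\<exists>j. j \<noteq> i \<and> Dd q i j) \<and> (\<exists>j. j \<noteq> i \<and> \<not> Dd q i j)" unfolding Dd_def by force
  have e: "\<And>u v x y. (Dd q u v \<longleftrightarrow> Dd q x y) \<Longrightarrow> dd q u v = dd q x y"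
    unfolding Dd_def by (metis dd01)
  have n: "\<And>u v x y. (Dd q u v \<longleftrightarrow> \<not> Dd q x y) \<Longrightarrow> dd q u v \<noteq> dd q x y"
    unfolding Dd_def by metis
  from B h show "dd q i (i + 1) = dd q (i + 1) i" using e by blast
  from B h show "dd q (i - 1) i = dd q i (i - 1)" using e by blast
  from B h show "dd q (i - 1) i \<noteq> dd q i (i + 1)" using n by blast
qed


lemma qmain:
  fixes q :: "7 \<Rightarrow> real^3" and i :: 7
  assumes edge: "\<forall>k m. m \<noteq> k \<and> m \<noteq> k + 1 \<longrightarrow> 0 < det3 (q k) (q (k+1)) (q m)"
    and no6: "\<forall>m A. \<not> conic_through A (q ` (UNIV - {m}))"
  shows "(\<forall>j. j \<noteq> i \<and> j \<noteq> i + 1 \<longrightarrow> dd q i j + dd q (i + 1) j = 1)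
    \<and> (dom_index q i \<notin> {0, 6} \<longrightarrow> dd q i (i + 1) = dd q (i + 1) i \<and> dd q (i - 1) i = dd q i (i - 1))
    \<and> (dom_index q i \<notin> {0, 6} \<longrightarrow> dd q (i - 1) i \<noteq> dd q i (i + 1))"
proof -
  have P_0_1_2: "0 < det3 (q 0) (q 1) (q 2)" using edge[rule_format, where k=0 and m=2] by simp
  have P_0_2_3: "0 < det3 (q 0) (q 2) (q 3)" using edge[rule_format, where k=2 and m=0] det3_rot1[where a="(q 0)" and b="(q 2)" and c="(q 3)"] by simp
  have P_0_3_4: "0 < det3 (q 0) (q 3) (q 4)" using edge[rule_format, where k=3 and m=0] det3_rot1[where a="(q 0)" and b="(q 3)" and c="(q 4)"] by simp
  have P_0_4_5: "0 < det3 (q 0) (q 4) (q 5)" using edge[rule_format, where k=4 and m=0] det3_rot1[where a="(q 0)" and b="(q 4)" and c="(q 5)"] by simp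
  have P_0_5_6: "0 < det3 (q 0) (q 5) (q 6)" using edge[rule_format, where k=5 and m=0] det3_rot1[where a="(q 0)" and b="(q 5)" and c="(q 6)"] by simp
  have P_1_2_3: "0 < det3 (q 1) (q 2) (q 3)" using edge[rule_format, where k=1 and m=3] by simp
  have P_1_3_4: "0 < det3 (q 1) (q 3) (q 4)" using edge[rule_format, where k=3 and m=1] det3_rot1[where a="(q 1)" and b="(q 3)" and c="(q 4)"] by simp
  have P_1_4_5: "0 < det3 (q 1) (q 4) (q 5)" using edge[rule_format, where k=4 and m=1] det3_rot1[where a="(q 1)" and b="(q 4)" and c="(q 5)"] by simp
  have P_1_5_6: "0 < det3 (q 1) (q 5) (q 6)" using edge[rule_format, where k=5 and m=1] det3_rot1[where a="(q 1)" and b="(q 5)" and c="(q 6)"] by simp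
  have P_2_3_4: "0 < det3 (q 2) (q 3) (q 4)" using edge[rule_format, where k=2 and m=4] by simp
  have P_2_4_5: "0 < det3 (q 2) (q 4) (q 5)" using edge[rule_format, where k=4 and m=2] det3_rot1[where a="(q 2)" and b="(q 4)" and c="(q 5)"] by simp
  have P_2_5_6: "0 < det3 (q 2) (q 5) (q 6)" using edge[rule_format, where k=5 and m=2] det3_rot1[where a="(q 2)" and b="(q 5)" and c="(q 6)"] by simp
  have P_3_4_5: "0 < det3 (q 3) (q 4) (q 5)" using edge[rule_format, where k=3 and m=5] by simp
  have P_3_5_6: "0 < det3 (q 3) (q 5) (q 6)" using edge[rule_format, where k=5 and m=3] det3_rot1[where a="(q 3)" and b="(q 5)" and c="(q 6)"] by simp
  have P_4_5_6: "0 < det3 (q 4) (q 5) (q 6)" using edge[rule_format, where k=4 and m=6] by simp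
  have P_0_1_3: "0 < det3 (q 0) (q 1) (q 3)" using edge[rule_format, where k=0 and m=3] by simp
  have P_0_4_6: "0 < det3 (q 0) (q 4) (q 6)" using edge[rule_format, where k=6 and m=4] det3_rot2[where a="(q 0)" and b="(q 4)" and c="(q 6)"] by simp
  have P_1_2_4: "0 < det3 (q 1) (q 2) (q 4)" using edge[rule_format, where k=1 and m=4] by simp
  have P_2_3_5: "0 < det3 (q 2) (q 3) (q 5)" using edge[rule_format, where k=2 and m=5] by simp
  have P_3_4_6: "0 < det3 (q 3) (q 4) (q 6)" using edge[rule_format, where k=3 and m=6] by simp
  have P_0_1_4: "0 < det3 (q 0) (q 1) (q 4)" using edge[rule_format, where k=0 and m=4] by simp
  have P_0_3_6: "0 < det3 (q 0) (q 3) (q 6)" using edge[rule_format, where k=6 and m=3] det3_rot2[where a="(q 0)" and b="(q 3)" and c="(q 6)"] by simp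
  have P_1_2_5: "0 < det3 (q 1) (q 2) (q 5)" using edge[rule_format, where k=1 and m=5] by simp
  have P_2_3_6: "0 < det3 (q 2) (q 3) (q 6)" using edge[rule_format, where k=2 and m=6] by simp
  have P_0_1_5: "0 < det3 (q 0) (q 1) (q 5)" using edge[rule_format, where k=0 and m=5] by simp
  have P_0_2_6: "0 < det3 (q 0) (q 2) (q 6)" using edge[rule_format, where k=6 and m=2] det3_rot2[where a="(q 0)" and b="(q 2)" and c="(q 6)"] by simp
  have P_1_2_6: "0 < det3 (q 1) (q 2) (q 6)" using edge[rule_format, where k=1 and m=6] by simp
  have P_0_1_6: "0 < det3 (q 0) (q 1) (q 6)" using edge[rule_format, where k=0 and m=6] by simp
  have P_0_2_4: "0 < det3 (q 0) (q 2) (q 4)" by (rule chi_trans[where e="(q 1)" and v="(q 3)"]) (use P_0_1_2 P_0_1_3 P_0_1_4 P_0_2_3 P_0_3_4 in simp_all)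
  have P_0_3_5: "0 < det3 (q 0) (q 3) (q 5)" by (rule chi_trans[where e="(q 1)" and v="(q 4)"]) (use P_0_1_3 P_0_1_4 P_0_1_5 P_0_3_4 P_0_4_5 in simp_all)
  have P_1_3_5: "0 < det3 (q 1) (q 3) (q 5)" by (rule chi_trans[where e="(q 2)" and v="(q 4)"]) (use P_1_2_3 P_1_2_4 P_1_2_5 P_1_3_4 P_1_4_5 in simp_all)
  have P_1_4_6: "0 < det3 (q 1) (q 4) (q 6)" by (rule chi_trans[where e="(q 2)" and v="(q 5)"]) (use P_1_2_4 P_1_2_5 P_1_2_6 P_1_4_5 P_1_5_6 in simp_all)
  have P_2_4_6: "0 < det3 (q 2) (q 4) (q 6)" by (rule chi_trans[where e="(q 3)" and v="(q 5)"]) (use P_2_3_4 P_2_3_5 P_2_3_6 P_2_4_5 P_2_5_6 in simp_all)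
  have P_0_2_5: "0 < det3 (q 0) (q 2) (q 5)" by (rule chi_trans[where e="(q 1)" and v="(q 4)"]) (use P_0_1_2 P_0_1_4 P_0_1_5 P_0_2_4 P_0_4_5 in simp_all)
  have P_1_3_6: "0 < det3 (q 1) (q 3) (q 6)" by (rule chi_trans[where e="(q 2)" and v="(q 5)"]) (use P_1_2_3 P_1_2_5 P_1_2_6 P_1_3_5 P_1_5_6 in simp_all)
  have B_0_1_2: "0 < det3 (q 0) (q 1) (q 2)" by (rule P_0_1_2)
  have B_0_1_3: "0 < det3 (q 0) (q 1) (q 3)" by (rule P_0_1_3)
  have B_0_1_4: "0 < det3 (q 0) (q 1) (q 4)" by (rule P_0_1_4)
  have B_0_1_5: "0 < det3 (q 0) (q 1) (q 5)" by (rule P_0_1_5)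
  have B_0_1_6: "0 < det3 (q 0) (q 1) (q 6)" by (rule P_0_1_6)
  have B_0_2_1: "det3 (q 0) (q 2) (q 1) < 0" using P_0_1_2 det3_swap23[where a="(q 0)" and b="(q 1)" and c="(q 2)"] by simp
  have B_0_2_3: "0 < det3 (q 0) (q 2) (q 3)" by (rule P_0_2_3)
  have B_0_2_4: "0 < det3 (q 0) (q 2) (q 4)" by (rule P_0_2_4)
  have B_0_2_5: "0 < det3 (q 0) (q 2) (q 5)" by (rule P_0_2_5)
  have B_0_2_6: "0 < det3 (q 0) (q 2) (q 6)" by (rule P_0_2_6)
  have B_0_3_1: "det3 (q 0) (q 3) (q 1) < 0" using P_0_1_3 det3_swap23[where a="(q 0)" and b="(q 1)" and c="(q 3)"] by simp
  have B_0_3_2: "det3 (q 0) (q 3) (q 2) < 0" using P_0_2_3 det3_swap23[where a="(q 0)" and b="(q 2)" and c="(q 3)"] by simp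
  have B_0_3_4: "0 < det3 (q 0) (q 3) (q 4)" by (rule P_0_3_4)
  have B_0_3_5: "0 < det3 (q 0) (q 3) (q 5)" by (rule P_0_3_5)
  have B_0_3_6: "0 < det3 (q 0) (q 3) (q 6)" by (rule P_0_3_6)
  have B_0_4_1: "det3 (q 0) (q 4) (q 1) < 0" using P_0_1_4 det3_swap23[where a="(q 0)" and b="(q 1)" and c="(q 4)"] by simp
  have B_0_4_2: "det3 (q 0) (q 4) (q 2) < 0" using P_0_2_4 det3_swap23[where a="(q 0)" and b="(q 2)" and c="(q 4)"] by simp
  have B_0_4_3: "det3 (q 0) (q 4) (q 3) < 0" using P_0_3_4 det3_swap23[where a="(q 0)" and b="(q 3)" and c="(q 4)"] by simp
  have B_0_4_5: "0 < det3 (q 0) (q 4) (q 5)" by (rule P_0_4_5)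
  have B_0_4_6: "0 < det3 (q 0) (q 4) (q 6)" by (rule P_0_4_6)
  have B_0_5_1: "det3 (q 0) (q 5) (q 1) < 0" using P_0_1_5 det3_swap23[where a="(q 0)" and b="(q 1)" and c="(q 5)"] by simp
  have B_0_5_2: "det3 (q 0) (q 5) (q 2) < 0" using P_0_2_5 det3_swap23[where a="(q 0)" and b="(q 2)" and c="(q 5)"] by simp
  have B_0_5_3: "det3 (q 0) (q 5) (q 3) < 0" using P_0_3_5 det3_swap23[where a="(q 0)" and b="(q 3)" and c="(q 5)"] by simp
  have B_0_5_4: "det3 (q 0) (q 5) (q 4) < 0" using P_0_4_5 det3_swap23[where a="(q 0)" and b="(q 4)" and c="(q 5)"] by simp
  have B_0_6_1: "det3 (q 0) (q 6) (q 1) < 0" using P_0_1_6 det3_swap23[where a="(q 0)" and b="(q 1)" and c="(q 6)"] by simp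
  have B_0_6_2: "det3 (q 0) (q 6) (q 2) < 0" using P_0_2_6 det3_swap23[where a="(q 0)" and b="(q 2)" and c="(q 6)"] by simp
  have B_0_6_3: "det3 (q 0) (q 6) (q 3) < 0" using P_0_3_6 det3_swap23[where a="(q 0)" and b="(q 3)" and c="(q 6)"] by simp
  have B_0_6_4: "det3 (q 0) (q 6) (q 4) < 0" using P_0_4_6 det3_swap23[where a="(q 0)" and b="(q 4)" and c="(q 6)"] by simp
  have B_0_6_5: "det3 (q 0) (q 6) (q 5) < 0" using P_0_5_6 det3_swap23[where a="(q 0)" and b="(q 5)" and c="(q 6)"] by simp
  have B_1_0_3: "det3 (q 1) (q 0) (q 3) < 0" using P_0_1_3 det3_swap12[where a="(q 0)" and b="(q 1)" and c="(q 3)"] by simp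
  have B_1_0_4: "det3 (q 1) (q 0) (q 4) < 0" using P_0_1_4 det3_swap12[where a="(q 0)" and b="(q 1)" and c="(q 4)"] by simp
  have B_1_0_5: "det3 (q 1) (q 0) (q 5) < 0" using P_0_1_5 det3_swap12[where a="(q 0)" and b="(q 1)" and c="(q 5)"] by simp
  have B_1_2_0: "0 < det3 (q 1) (q 2) (q 0)" using P_0_1_2 det3_rot1[where a="(q 0)" and b="(q 1)" and c="(q 2)"] by simp
  have B_1_2_3: "0 < det3 (q 1) (q 2) (q 3)" by (rule P_1_2_3)
  have B_1_2_4: "0 < det3 (q 1) (q 2) (q 4)" by (rule P_1_2_4)
  have B_1_2_5: "0 < det3 (q 1) (q 2) (q 5)" by (rule P_1_2_5)
  have B_1_2_6: "0 < det3 (q 1) (q 2) (q 6)" by (rule P_1_2_6)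
  have B_1_3_0: "0 < det3 (q 1) (q 3) (q 0)" using P_0_1_3 det3_rot1[where a="(q 0)" and b="(q 1)" and c="(q 3)"] by simp
  have B_1_3_2: "det3 (q 1) (q 3) (q 2) < 0" using P_1_2_3 det3_swap23[where a="(q 1)" and b="(q 2)" and c="(q 3)"] by simp
  have B_1_3_4: "0 < det3 (q 1) (q 3) (q 4)" by (rule P_1_3_4)
  have B_1_3_5: "0 < det3 (q 1) (q 3) (q 5)" by (rule P_1_3_5)
  have B_1_3_6: "0 < det3 (q 1) (q 3) (q 6)" by (rule P_1_3_6)
  have B_1_4_0: "0 < det3 (q 1) (q 4) (q 0)" using P_0_1_4 det3_rot1[where a="(q 0)" and b="(q 1)" and c="(q 4)"] by simp
  have B_1_4_2: "det3 (q 1) (q 4) (q 2) < 0" using P_1_2_4 det3_swap23[where a="(q 1)" and b="(q 2)" and c="(q 4)"] by simp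
  have B_1_4_3: "det3 (q 1) (q 4) (q 3) < 0" using P_1_3_4 det3_swap23[where a="(q 1)" and b="(q 3)" and c="(q 4)"] by simp
  have B_1_4_5: "0 < det3 (q 1) (q 4) (q 5)" by (rule P_1_4_5)
  have B_1_4_6: "0 < det3 (q 1) (q 4) (q 6)" by (rule P_1_4_6)
  have B_1_5_0: "0 < det3 (q 1) (q 5) (q 0)" using P_0_1_5 det3_rot1[where a="(q 0)" and b="(q 1)" and c="(q 5)"] by simp
  have B_1_5_2: "det3 (q 1) (q 5) (q 2) < 0" using P_1_2_5 det3_swap23[where a="(q 1)" and b="(q 2)" and c="(q 5)"] by simp
  have B_1_5_3: "det3 (q 1) (q 5) (q 3) < 0" using P_1_3_5 det3_swap23[where a="(q 1)" and b="(q 3)" and c="(q 5)"] by simp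
  have B_1_5_4: "det3 (q 1) (q 5) (q 4) < 0" using P_1_4_5 det3_swap23[where a="(q 1)" and b="(q 4)" and c="(q 5)"] by simp
  have B_1_5_6: "0 < det3 (q 1) (q 5) (q 6)" by (rule P_1_5_6)
  have B_1_6_0: "0 < det3 (q 1) (q 6) (q 0)" using P_0_1_6 det3_rot1[where a="(q 0)" and b="(q 1)" and c="(q 6)"] by simp
  have B_1_6_3: "det3 (q 1) (q 6) (q 3) < 0" using P_1_3_6 det3_swap23[where a="(q 1)" and b="(q 3)" and c="(q 6)"] by simp
  have B_1_6_4: "det3 (q 1) (q 6) (q 4) < 0" using P_1_4_6 det3_swap23[where a="(q 1)" and b="(q 4)" and c="(q 6)"] by simp
  have B_1_6_5: "det3 (q 1) (q 6) (q 5) < 0" using P_1_5_6 det3_swap23[where a="(q 1)" and b="(q 5)" and c="(q 6)"] by simp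
  have B_2_0_4: "det3 (q 2) (q 0) (q 4) < 0" using P_0_2_4 det3_swap12[where a="(q 0)" and b="(q 2)" and c="(q 4)"] by simp
  have B_2_0_5: "det3 (q 2) (q 0) (q 5) < 0" using P_0_2_5 det3_swap12[where a="(q 0)" and b="(q 2)" and c="(q 5)"] by simp
  have B_2_1_3: "det3 (q 2) (q 1) (q 3) < 0" using P_1_2_3 det3_swap12[where a="(q 1)" and b="(q 2)" and c="(q 3)"] by simp
  have B_2_1_4: "det3 (q 2) (q 1) (q 4) < 0" using P_1_2_4 det3_swap12[where a="(q 1)" and b="(q 2)" and c="(q 4)"] by simp
  have B_2_1_5: "det3 (q 2) (q 1) (q 5) < 0" using P_1_2_5 det3_swap12[where a="(q 1)" and b="(q 2)" and c="(q 5)"] by simp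
  have B_2_3_0: "0 < det3 (q 2) (q 3) (q 0)" using P_0_2_3 det3_rot1[where a="(q 0)" and b="(q 2)" and c="(q 3)"] by simp
  have B_2_3_1: "0 < det3 (q 2) (q 3) (q 1)" using P_1_2_3 det3_rot1[where a="(q 1)" and b="(q 2)" and c="(q 3)"] by simp
  have B_2_3_4: "0 < det3 (q 2) (q 3) (q 4)" by (rule P_2_3_4)
  have B_2_3_5: "0 < det3 (q 2) (q 3) (q 5)" by (rule P_2_3_5)
  have B_2_3_6: "0 < det3 (q 2) (q 3) (q 6)" by (rule P_2_3_6)
  have B_2_4_0: "0 < det3 (q 2) (q 4) (q 0)" using P_0_2_4 det3_rot1[where a="(q 0)" and b="(q 2)" and c="(q 4)"] by simp
  have B_2_4_1: "0 < det3 (q 2) (q 4) (q 1)" using P_1_2_4 det3_rot1[where a="(q 1)" and b="(q 2)" and c="(q 4)"] by simp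
  have B_2_4_3: "det3 (q 2) (q 4) (q 3) < 0" using P_2_3_4 det3_swap23[where a="(q 2)" and b="(q 3)" and c="(q 4)"] by simp
  have B_2_4_5: "0 < det3 (q 2) (q 4) (q 5)" by (rule P_2_4_5)
  have B_2_4_6: "0 < det3 (q 2) (q 4) (q 6)" by (rule P_2_4_6)
  have B_2_5_1: "0 < det3 (q 2) (q 5) (q 1)" using P_1_2_5 det3_rot1[where a="(q 1)" and b="(q 2)" and c="(q 5)"] by simp
  have B_2_5_3: "det3 (q 2) (q 5) (q 3) < 0" using P_2_3_5 det3_swap23[where a="(q 2)" and b="(q 3)" and c="(q 5)"] by simp
  have B_2_5_4: "det3 (q 2) (q 5) (q 4) < 0" using P_2_4_5 det3_swap23[where a="(q 2)" and b="(q 4)" and c="(q 5)"] by simp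
  have B_2_5_6: "0 < det3 (q 2) (q 5) (q 6)" by (rule P_2_5_6)
  have B_2_6_0: "0 < det3 (q 2) (q 6) (q 0)" using P_0_2_6 det3_rot1[where a="(q 0)" and b="(q 2)" and c="(q 6)"] by simp
  have B_2_6_1: "0 < det3 (q 2) (q 6) (q 1)" using P_1_2_6 det3_rot1[where a="(q 1)" and b="(q 2)" and c="(q 6)"] by simp
  have B_2_6_4: "det3 (q 2) (q 6) (q 4) < 0" using P_2_4_6 det3_swap23[where a="(q 2)" and b="(q 4)" and c="(q 6)"] by simp
  have B_2_6_5: "det3 (q 2) (q 6) (q 5) < 0" using P_2_5_6 det3_swap23[where a="(q 2)" and b="(q 5)" and c="(q 6)"] by simp
  have B_3_1_2: "0 < det3 (q 3) (q 1) (q 2)" using P_1_2_3 det3_rot2[where a="(q 1)" and b="(q 2)" and c="(q 3)"] by simp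
  have B_3_1_4: "det3 (q 3) (q 1) (q 4) < 0" using P_1_3_4 det3_swap12[where a="(q 1)" and b="(q 3)" and c="(q 4)"] by simp
  have B_3_1_5: "det3 (q 3) (q 1) (q 5) < 0" using P_1_3_5 det3_swap12[where a="(q 1)" and b="(q 3)" and c="(q 5)"] by simp
  have B_3_2_4: "det3 (q 3) (q 2) (q 4) < 0" using P_2_3_4 det3_swap12[where a="(q 2)" and b="(q 3)" and c="(q 4)"] by simp
  have B_3_2_5: "det3 (q 3) (q 2) (q 5) < 0" using P_2_3_5 det3_swap12[where a="(q 2)" and b="(q 3)" and c="(q 5)"] by simp
  have B_3_4_0: "0 < det3 (q 3) (q 4) (q 0)" using P_0_3_4 det3_rot1[where a="(q 0)" and b="(q 3)" and c="(q 4)"] by simp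
  have B_3_4_1: "0 < det3 (q 3) (q 4) (q 1)" using P_1_3_4 det3_rot1[where a="(q 1)" and b="(q 3)" and c="(q 4)"] by simp
  have B_3_4_2: "0 < det3 (q 3) (q 4) (q 2)" using P_2_3_4 det3_rot1[where a="(q 2)" and b="(q 3)" and c="(q 4)"] by simp
  have B_3_4_5: "0 < det3 (q 3) (q 4) (q 5)" by (rule P_3_4_5)
  have B_3_4_6: "0 < det3 (q 3) (q 4) (q 6)" by (rule P_3_4_6)
  have B_3_5_0: "0 < det3 (q 3) (q 5) (q 0)" using P_0_3_5 det3_rot1[where a="(q 0)" and b="(q 3)" and c="(q 5)"] by simp
  have B_3_5_2: "0 < det3 (q 3) (q 5) (q 2)" using P_2_3_5 det3_rot1[where a="(q 2)" and b="(q 3)" and c="(q 5)"] by simp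
  have B_3_5_4: "det3 (q 3) (q 5) (q 4) < 0" using P_3_4_5 det3_swap23[where a="(q 3)" and b="(q 4)" and c="(q 5)"] by simp
  have B_3_5_6: "0 < det3 (q 3) (q 5) (q 6)" by (rule P_3_5_6)
  have B_3_6_0: "0 < det3 (q 3) (q 6) (q 0)" using P_0_3_6 det3_rot1[where a="(q 0)" and b="(q 3)" and c="(q 6)"] by simp
  have B_3_6_1: "0 < det3 (q 3) (q 6) (q 1)" using P_1_3_6 det3_rot1[where a="(q 1)" and b="(q 3)" and c="(q 6)"] by simp
  have B_3_6_2: "0 < det3 (q 3) (q 6) (q 2)" using P_2_3_6 det3_rot1[where a="(q 2)" and b="(q 3)" and c="(q 6)"] by simp
  have B_3_6_4: "det3 (q 3) (q 6) (q 4) < 0" using P_3_4_6 det3_swap23[where a="(q 3)" and b="(q 4)" and c="(q 6)"] by simp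
  have B_3_6_5: "det3 (q 3) (q 6) (q 5) < 0" using P_3_5_6 det3_swap23[where a="(q 3)" and b="(q 5)" and c="(q 6)"] by simp
  have B_4_0_1: "0 < det3 (q 4) (q 0) (q 1)" using P_0_1_4 det3_rot2[where a="(q 0)" and b="(q 1)" and c="(q 4)"] by simp
  have B_4_0_2: "0 < det3 (q 4) (q 0) (q 2)" using P_0_2_4 det3_rot2[where a="(q 0)" and b="(q 2)" and c="(q 4)"] by simp
  have B_4_0_3: "0 < det3 (q 4) (q 0) (q 3)" using P_0_3_4 det3_rot2[where a="(q 0)" and b="(q 3)" and c="(q 4)"] by simp
  have B_4_1_0: "det3 (q 4) (q 1) (q 0) < 0" using P_0_1_4 det3_swap13[where a="(q 0)" and b="(q 1)" and c="(q 4)"] by simp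
  have B_4_1_2: "0 < det3 (q 4) (q 1) (q 2)" using P_1_2_4 det3_rot2[where a="(q 1)" and b="(q 2)" and c="(q 4)"] by simp
  have B_4_1_3: "0 < det3 (q 4) (q 1) (q 3)" using P_1_3_4 det3_rot2[where a="(q 1)" and b="(q 3)" and c="(q 4)"] by simp
  have B_4_2_3: "0 < det3 (q 4) (q 2) (q 3)" using P_2_3_4 det3_rot2[where a="(q 2)" and b="(q 3)" and c="(q 4)"] by simp
  have B_4_2_5: "det3 (q 4) (q 2) (q 5) < 0" using P_2_4_5 det3_swap12[where a="(q 2)" and b="(q 4)" and c="(q 5)"] by simp
  have B_4_3_0: "det3 (q 4) (q 3) (q 0) < 0" using P_0_3_4 det3_swap13[where a="(q 0)" and b="(q 3)" and c="(q 4)"] by simp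
  have B_4_3_1: "det3 (q 4) (q 3) (q 1) < 0" using P_1_3_4 det3_swap13[where a="(q 1)" and b="(q 3)" and c="(q 4)"] by simp
  have B_4_3_2: "det3 (q 4) (q 3) (q 2) < 0" using P_2_3_4 det3_swap13[where a="(q 2)" and b="(q 3)" and c="(q 4)"] by simp
  have B_4_3_5: "det3 (q 4) (q 3) (q 5) < 0" using P_3_4_5 det3_swap12[where a="(q 3)" and b="(q 4)" and c="(q 5)"] by simp
  have B_4_5_0: "0 < det3 (q 4) (q 5) (q 0)" using P_0_4_5 det3_rot1[where a="(q 0)" and b="(q 4)" and c="(q 5)"] by simp
  have B_4_5_1: "0 < det3 (q 4) (q 5) (q 1)" using P_1_4_5 det3_rot1[where a="(q 1)" and b="(q 4)" and c="(q 5)"] by simp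
  have B_4_5_2: "0 < det3 (q 4) (q 5) (q 2)" using P_2_4_5 det3_rot1[where a="(q 2)" and b="(q 4)" and c="(q 5)"] by simp
  have B_4_5_3: "0 < det3 (q 4) (q 5) (q 3)" using P_3_4_5 det3_rot1[where a="(q 3)" and b="(q 4)" and c="(q 5)"] by simp
  have B_4_5_6: "0 < det3 (q 4) (q 5) (q 6)" by (rule P_4_5_6)
  have B_4_6_0: "0 < det3 (q 4) (q 6) (q 0)" using P_0_4_6 det3_rot1[where a="(q 0)" and b="(q 4)" and c="(q 6)"] by simp
  have B_4_6_1: "0 < det3 (q 4) (q 6) (q 1)" using P_1_4_6 det3_rot1[where a="(q 1)" and b="(q 4)" and c="(q 6)"] by simp
  have B_4_6_2: "0 < det3 (q 4) (q 6) (q 2)" using P_2_4_6 det3_rot1[where a="(q 2)" and b="(q 4)" and c="(q 6)"] by simp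
  have B_4_6_3: "0 < det3 (q 4) (q 6) (q 3)" using P_3_4_6 det3_rot1[where a="(q 3)" and b="(q 4)" and c="(q 6)"] by simp
  have B_4_6_5: "det3 (q 4) (q 6) (q 5) < 0" using P_4_5_6 det3_swap23[where a="(q 4)" and b="(q 5)" and c="(q 6)"] by simp
  have B_5_0_1: "0 < det3 (q 5) (q 0) (q 1)" using P_0_1_5 det3_rot2[where a="(q 0)" and b="(q 1)" and c="(q 5)"] by simp
  have B_5_0_2: "0 < det3 (q 5) (q 0) (q 2)" using P_0_2_5 det3_rot2[where a="(q 0)" and b="(q 2)" and c="(q 5)"] by simp
  have B_5_0_3: "0 < det3 (q 5) (q 0) (q 3)" using P_0_3_5 det3_rot2[where a="(q 0)" and b="(q 3)" and c="(q 5)"] by simp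
  have B_5_0_4: "0 < det3 (q 5) (q 0) (q 4)" using P_0_4_5 det3_rot2[where a="(q 0)" and b="(q 4)" and c="(q 5)"] by simp
  have B_5_1_0: "det3 (q 5) (q 1) (q 0) < 0" using P_0_1_5 det3_swap13[where a="(q 0)" and b="(q 1)" and c="(q 5)"] by simp
  have B_5_1_2: "0 < det3 (q 5) (q 1) (q 2)" using P_1_2_5 det3_rot2[where a="(q 1)" and b="(q 2)" and c="(q 5)"] by simp
  have B_5_1_3: "0 < det3 (q 5) (q 1) (q 3)" using P_1_3_5 det3_rot2[where a="(q 1)" and b="(q 3)" and c="(q 5)"] by simp
  have B_5_1_4: "0 < det3 (q 5) (q 1) (q 4)" using P_1_4_5 det3_rot2[where a="(q 1)" and b="(q 4)" and c="(q 5)"] by simp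
  have B_5_2_0: "det3 (q 5) (q 2) (q 0) < 0" using P_0_2_5 det3_swap13[where a="(q 0)" and b="(q 2)" and c="(q 5)"] by simp
  have B_5_2_1: "det3 (q 5) (q 2) (q 1) < 0" using P_1_2_5 det3_swap13[where a="(q 1)" and b="(q 2)" and c="(q 5)"] by simp
  have B_5_2_3: "0 < det3 (q 5) (q 2) (q 3)" using P_2_3_5 det3_rot2[where a="(q 2)" and b="(q 3)" and c="(q 5)"] by simp
  have B_5_2_4: "0 < det3 (q 5) (q 2) (q 4)" using P_2_4_5 det3_rot2[where a="(q 2)" and b="(q 4)" and c="(q 5)"] by simp
  have B_5_3_0: "det3 (q 5) (q 3) (q 0) < 0" using P_0_3_5 det3_swap13[where a="(q 0)" and b="(q 3)" and c="(q 5)"] by simp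
  have B_5_3_1: "det3 (q 5) (q 3) (q 1) < 0" using P_1_3_5 det3_swap13[where a="(q 1)" and b="(q 3)" and c="(q 5)"] by simp
  have B_5_3_2: "det3 (q 5) (q 3) (q 2) < 0" using P_2_3_5 det3_swap13[where a="(q 2)" and b="(q 3)" and c="(q 5)"] by simp
  have B_5_3_4: "0 < det3 (q 5) (q 3) (q 4)" using P_3_4_5 det3_rot2[where a="(q 3)" and b="(q 4)" and c="(q 5)"] by simp
  have B_5_4_0: "det3 (q 5) (q 4) (q 0) < 0" using P_0_4_5 det3_swap13[where a="(q 0)" and b="(q 4)" and c="(q 5)"] by simp
  have B_5_4_1: "det3 (q 5) (q 4) (q 1) < 0" using P_1_4_5 det3_swap13[where a="(q 1)" and b="(q 4)" and c="(q 5)"] by simp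
  have B_5_4_2: "det3 (q 5) (q 4) (q 2) < 0" using P_2_4_5 det3_swap13[where a="(q 2)" and b="(q 4)" and c="(q 5)"] by simp
  have B_5_4_3: "det3 (q 5) (q 4) (q 3) < 0" using P_3_4_5 det3_swap13[where a="(q 3)" and b="(q 4)" and c="(q 5)"] by simp
  have B_5_6_0: "0 < det3 (q 5) (q 6) (q 0)" using P_0_5_6 det3_rot1[where a="(q 0)" and b="(q 5)" and c="(q 6)"] by simp
  have B_5_6_1: "0 < det3 (q 5) (q 6) (q 1)" using P_1_5_6 det3_rot1[where a="(q 1)" and b="(q 5)" and c="(q 6)"] by simp
  have B_5_6_2: "0 < det3 (q 5) (q 6) (q 2)" using P_2_5_6 det3_rot1[where a="(q 2)" and b="(q 5)" and c="(q 6)"] by simp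
  have B_5_6_3: "0 < det3 (q 5) (q 6) (q 3)" using P_3_5_6 det3_rot1[where a="(q 3)" and b="(q 5)" and c="(q 6)"] by simp
  have B_5_6_4: "0 < det3 (q 5) (q 6) (q 4)" using P_4_5_6 det3_rot1[where a="(q 4)" and b="(q 5)" and c="(q 6)"] by simp
  have B_6_0_1: "0 < det3 (q 6) (q 0) (q 1)" using P_0_1_6 det3_rot2[where a="(q 0)" and b="(q 1)" and c="(q 6)"] by simp
  have B_6_0_2: "0 < det3 (q 6) (q 0) (q 2)" using P_0_2_6 det3_rot2[where a="(q 0)" and b="(q 2)" and c="(q 6)"] by simp
  have B_6_0_3: "0 < det3 (q 6) (q 0) (q 3)" using P_0_3_6 det3_rot2[where a="(q 0)" and b="(q 3)" and c="(q 6)"] by simp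
  have B_6_0_4: "0 < det3 (q 6) (q 0) (q 4)" using P_0_4_6 det3_rot2[where a="(q 0)" and b="(q 4)" and c="(q 6)"] by simp
  have B_6_0_5: "0 < det3 (q 6) (q 0) (q 5)" using P_0_5_6 det3_rot2[where a="(q 0)" and b="(q 5)" and c="(q 6)"] by simp
  have B_6_1_0: "det3 (q 6) (q 1) (q 0) < 0" using P_0_1_6 det3_swap13[where a="(q 0)" and b="(q 1)" and c="(q 6)"] by simp
  have B_6_1_2: "0 < det3 (q 6) (q 1) (q 2)" using P_1_2_6 det3_rot2[where a="(q 1)" and b="(q 2)" and c="(q 6)"] by simp
  have B_6_1_3: "0 < det3 (q 6) (q 1) (q 3)" using P_1_3_6 det3_rot2[where a="(q 1)" and b="(q 3)" and c="(q 6)"] by simp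
  have B_6_1_4: "0 < det3 (q 6) (q 1) (q 4)" using P_1_4_6 det3_rot2[where a="(q 1)" and b="(q 4)" and c="(q 6)"] by simp
  have B_6_1_5: "0 < det3 (q 6) (q 1) (q 5)" using P_1_5_6 det3_rot2[where a="(q 1)" and b="(q 5)" and c="(q 6)"] by simp
  have B_6_2_0: "det3 (q 6) (q 2) (q 0) < 0" using P_0_2_6 det3_swap13[where a="(q 0)" and b="(q 2)" and c="(q 6)"] by simp
  have B_6_2_1: "det3 (q 6) (q 2) (q 1) < 0" using P_1_2_6 det3_swap13[where a="(q 1)" and b="(q 2)" and c="(q 6)"] by simp
  have B_6_2_3: "0 < det3 (q 6) (q 2) (q 3)" using P_2_3_6 det3_rot2[where a="(q 2)" and b="(q 3)" and c="(q 6)"] by simp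
  have B_6_2_4: "0 < det3 (q 6) (q 2) (q 4)" using P_2_4_6 det3_rot2[where a="(q 2)" and b="(q 4)" and c="(q 6)"] by simp
  have B_6_2_5: "0 < det3 (q 6) (q 2) (q 5)" using P_2_5_6 det3_rot2[where a="(q 2)" and b="(q 5)" and c="(q 6)"] by simp
  have B_6_3_0: "det3 (q 6) (q 3) (q 0) < 0" using P_0_3_6 det3_swap13[where a="(q 0)" and b="(q 3)" and c="(q 6)"] by simp
  have B_6_3_1: "det3 (q 6) (q 3) (q 1) < 0" using P_1_3_6 det3_swap13[where a="(q 1)" and b="(q 3)" and c="(q 6)"] by simp
  have B_6_3_2: "det3 (q 6) (q 3) (q 2) < 0" using P_2_3_6 det3_swap13[where a="(q 2)" and b="(q 3)" and c="(q 6)"] by simp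
  have B_6_3_4: "0 < det3 (q 6) (q 3) (q 4)" using P_3_4_6 det3_rot2[where a="(q 3)" and b="(q 4)" and c="(q 6)"] by simp
  have B_6_3_5: "0 < det3 (q 6) (q 3) (q 5)" using P_3_5_6 det3_rot2[where a="(q 3)" and b="(q 5)" and c="(q 6)"] by simp
  have B_6_4_0: "det3 (q 6) (q 4) (q 0) < 0" using P_0_4_6 det3_swap13[where a="(q 0)" and b="(q 4)" and c="(q 6)"] by simp
  have B_6_4_1: "det3 (q 6) (q 4) (q 1) < 0" using P_1_4_6 det3_swap13[where a="(q 1)" and b="(q 4)" and c="(q 6)"] by simp
  have B_6_4_2: "det3 (q 6) (q 4) (q 2) < 0" using P_2_4_6 det3_swap13[where a="(q 2)" and b="(q 4)" and c="(q 6)"] by simp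
  have B_6_4_3: "det3 (q 6) (q 4) (q 3) < 0" using P_3_4_6 det3_swap13[where a="(q 3)" and b="(q 4)" and c="(q 6)"] by simp
  have B_6_4_5: "0 < det3 (q 6) (q 4) (q 5)" using P_4_5_6 det3_rot2[where a="(q 4)" and b="(q 5)" and c="(q 6)"] by simp
  have B_6_5_0: "det3 (q 6) (q 5) (q 0) < 0" using P_0_5_6 det3_swap13[where a="(q 0)" and b="(q 5)" and c="(q 6)"] by simp
  have B_6_5_1: "det3 (q 6) (q 5) (q 1) < 0" using P_1_5_6 det3_swap13[where a="(q 1)" and b="(q 5)" and c="(q 6)"] by simp
  have B_6_5_2: "det3 (q 6) (q 5) (q 2) < 0" using P_2_5_6 det3_swap13[where a="(q 2)" and b="(q 5)" and c="(q 6)"] by simp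
  have B_6_5_3: "det3 (q 6) (q 5) (q 3) < 0" using P_3_5_6 det3_swap13[where a="(q 3)" and b="(q 5)" and c="(q 6)"] by simp
  have B_6_5_4: "det3 (q 6) (q 5) (q 4) < 0" using P_4_5_6 det3_swap13[where a="(q 4)" and b="(q 5)" and c="(q 6)"] by simp
  have I_0123_4_5: "dd q 5 6 = (if Gf q 0 1 2 3 4 5 * Kf q 0 1 2 3 4 < 0 then 1 else 0) \<and> Gf q 0 1 2 3 4 5 \<noteq> 0"
    by (rule Fgen[OF no6]) (use B_0_1_2 B_0_1_3 B_0_1_4 B_3_4_2 B_0_3_2 B_0_4_2 B_3_4_1 B_3_1_2 B_4_1_2 B_3_4_0 B_2_3_4 B_0_2_1 B_1_3_0 in simp_all)
  have K_0123_4s: "sgn (Kf q 0 1 2 3 4) = 1" unfolding Kf_br using B_0_1_4 B_3_4_0 B_0_1_3 B_3_4_2 B_4_1_2 B_3_4_1 B_3_1_2 B_0_1_2 B_0_4_2 B_0_3_2 by (simp add: sgn_mult)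
  have K_0123_4: "0 < Kf q 0 1 2 3 4" "Kf q 0 1 2 3 4 \<noteq> 0" using sgn_pos_iff1[OF K_0123_4s] by auto
  note F_0123_4_5 = Fbool[OF conjunct1[OF I_0123_4_5] conjunct2[OF I_0123_4_5] K_0123_4(2)]
  have I_0123_4_6: "dd q 6 5 = (if Gf q 0 1 2 3 4 6 * Kf q 0 1 2 3 4 < 0 then 1 else 0) \<and> Gf q 0 1 2 3 4 6 \<noteq> 0"
    by (rule Fgen[OF no6]) (use B_0_1_2 B_0_1_3 B_0_1_4 B_3_4_2 B_0_3_2 B_0_4_2 B_3_4_1 B_3_1_2 B_4_1_2 B_3_4_0 B_2_3_4 B_0_2_1 B_1_3_0 in simp_all)
  note F_0123_4_6 = Fbool[OF conjunct1[OF I_0123_4_6] conjunct2[OF I_0123_4_6] K_0123_4(2)]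
  have I_0123_6_4: "dd q 4 5 = (if Gf q 0 1 2 3 6 4 * Kf q 0 1 2 3 6 < 0 then 1 else 0) \<and> Gf q 0 1 2 3 6 4 \<noteq> 0"
    by (rule Fgen[OF no6]) (use B_0_1_2 B_0_1_3 B_0_1_6 B_3_6_2 B_0_3_2 B_0_6_2 B_3_6_1 B_3_1_2 B_6_1_2 B_3_6_0 B_2_3_6 B_0_2_1 B_1_3_0 in simp_all)
  have K_0123_6s: "sgn (Kf q 0 1 2 3 6) = 1" unfolding Kf_br using B_6_1_2 B_0_1_3 B_3_6_0 B_0_1_6 B_3_6_2 B_3_1_2 B_0_1_2 B_3_6_1 B_0_3_2 B_0_6_2 by (simp add: sgn_mult)
  have K_0123_6: "0 < Kf q 0 1 2 3 6" "Kf q 0 1 2 3 6 \<noteq> 0" using sgn_pos_iff1[OF K_0123_6s] by auto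
  note F_0123_6_4 = Fbool[OF conjunct1[OF I_0123_6_4] conjunct2[OF I_0123_6_4] K_0123_6(2)]
  note SW_0123_6_4 = Gf_swap_pos[OF conjunct2[OF I_0123_6_4]]
  have I_0123_6_5: "dd q 5 4 = (if Gf q 0 1 2 3 6 5 * Kf q 0 1 2 3 6 < 0 then 1 else 0) \<and> Gf q 0 1 2 3 6 5 \<noteq> 0"
    by (rule Fgen[OF no6]) (use B_0_1_2 B_0_1_3 B_0_1_6 B_3_6_2 B_0_3_2 B_0_6_2 B_3_6_1 B_3_1_2 B_6_1_2 B_3_6_0 B_2_3_6 B_0_2_1 B_1_3_0 in simp_all)
  note F_0123_6_5 = Fbool[OF conjunct1[OF I_0123_6_5] conjunct2[OF I_0123_6_5] K_0123_6(2)]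
  note SW_0123_6_5 = Gf_swap_pos[OF conjunct2[OF I_0123_6_5]]
  have I_0124_3_5: "dd q 5 6 = (if Gf q 0 1 2 4 3 5 * Kf q 0 1 2 4 3 < 0 then 1 else 0) \<and> Gf q 0 1 2 4 3 5 \<noteq> 0"
    by (rule Fgen[OF no6]) (use B_0_1_2 B_0_1_4 B_0_1_3 B_4_3_2 B_0_4_2 B_0_3_2 B_4_3_1 B_4_1_2 B_3_1_2 B_4_3_0 B_2_4_3 B_0_2_1 B_1_4_0 in simp_all)
  have K_0124_3s: "sgn (Kf q 0 1 2 4 3) = -1" unfolding Kf_br using B_4_3_2 B_0_1_4 B_4_3_1 B_0_1_3 B_4_1_2 B_3_1_2 B_4_3_0 B_0_1_2 B_0_4_2 B_0_3_2 by (simp add: sgn_mult)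
  have K_0124_3: "\<not> 0 < Kf q 0 1 2 4 3" "Kf q 0 1 2 4 3 \<noteq> 0" using sgn_neg_iff1[OF K_0124_3s] by auto
  note F_0124_3_5 = Fbool[OF conjunct1[OF I_0124_3_5] conjunct2[OF I_0124_3_5] K_0124_3(2)]
  have I_0124_5_3: "dd q 3 6 = (if Gf q 0 1 2 4 5 3 * Kf q 0 1 2 4 5 < 0 then 1 else 0) \<and> Gf q 0 1 2 4 5 3 \<noteq> 0"
    by (rule Fgen[OF no6]) (use B_0_1_2 B_0_1_4 B_0_1_5 B_4_5_2 B_0_4_2 B_0_5_2 B_4_5_1 B_4_1_2 B_5_1_2 B_4_5_0 B_2_4_5 B_0_2_1 B_1_4_0 in simp_all)
  have K_0124_5s: "sgn (Kf q 0 1 2 4 5) = 1" unfolding Kf_br using B_0_1_4 B_4_5_1 B_5_1_2 B_4_5_0 B_4_1_2 B_0_5_2 B_0_1_5 B_0_1_2 B_4_5_2 B_0_4_2 by (simp add: sgn_mult)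
  have K_0124_5: "0 < Kf q 0 1 2 4 5" "Kf q 0 1 2 4 5 \<noteq> 0" using sgn_pos_iff1[OF K_0124_5s] by auto
  note F_0124_5_3 = Fbool[OF conjunct1[OF I_0124_5_3] conjunct2[OF I_0124_5_3] K_0124_5(2)]
  note SW_0124_5_3 = Gf_swap_pos[OF conjunct2[OF I_0124_5_3]]
  have I_0125_3_4: "dd q 4 6 = (if Gf q 0 1 2 5 3 4 * Kf q 0 1 2 5 3 < 0 then 1 else 0) \<and> Gf q 0 1 2 5 3 4 \<noteq> 0"
    by (rule Fgen[OF no6]) (use B_0_1_2 B_0_1_5 B_0_1_3 B_5_3_2 B_0_5_2 B_0_3_2 B_5_3_1 B_5_1_2 B_3_1_2 B_5_3_0 B_2_5_3 B_0_2_1 B_1_5_0 in simp_all)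
  have K_0125_3s: "sgn (Kf q 0 1 2 5 3) = -1" unfolding Kf_br using B_5_3_0 B_5_3_2 B_0_1_3 B_5_1_2 B_0_5_2 B_0_1_5 B_5_3_1 B_3_1_2 B_0_1_2 B_0_3_2 by (simp add: sgn_mult)
  have K_0125_3: "\<not> 0 < Kf q 0 1 2 5 3" "Kf q 0 1 2 5 3 \<noteq> 0" using sgn_neg_iff1[OF K_0125_3s] by auto
  note F_0125_3_4 = Fbool[OF conjunct1[OF I_0125_3_4] conjunct2[OF I_0125_3_4] K_0125_3(2)]
  have I_0125_4_3: "dd q 3 6 = (if Gf q 0 1 2 5 4 3 * Kf q 0 1 2 5 4 < 0 then 1 else 0) \<and> Gf q 0 1 2 5 4 3 \<noteq> 0"
    by (rule Fgen[OF no6]) (use B_0_1_2 B_0_1_5 B_0_1_4 B_5_4_2 B_0_5_2 B_0_4_2 B_5_4_1 B_5_1_2 B_4_1_2 B_5_4_0 B_2_5_4 B_0_2_1 B_1_5_0 in simp_all)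
  have K_0125_4s: "sgn (Kf q 0 1 2 5 4) = -1" unfolding Kf_br using B_0_1_4 B_5_4_2 B_5_4_1 B_5_1_2 B_5_4_0 B_0_5_2 B_0_1_5 B_0_1_2 B_0_4_2 B_4_1_2 by (simp add: sgn_mult)
  have K_0125_4: "\<not> 0 < Kf q 0 1 2 5 4" "Kf q 0 1 2 5 4 \<noteq> 0" using sgn_neg_iff1[OF K_0125_4s] by auto
  note F_0125_4_3 = Fbool[OF conjunct1[OF I_0125_4_3] conjunct2[OF I_0125_4_3] K_0125_4(2)]
  note SW_0125_4_3 = Gf_swap_pos[OF conjunct2[OF I_0125_4_3]]
  have I_0125_4_6: "dd q 6 3 = (if Gf q 0 1 2 5 4 6 * Kf q 0 1 2 5 4 < 0 then 1 else 0) \<and> Gf q 0 1 2 5 4 6 \<noteq> 0"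
    by (rule Fgen[OF no6]) (use B_0_1_2 B_0_1_5 B_0_1_4 B_5_4_2 B_0_5_2 B_0_4_2 B_5_4_1 B_5_1_2 B_4_1_2 B_5_4_0 B_2_5_4 B_0_2_1 B_1_5_0 in simp_all)
  note F_0125_4_6 = Fbool[OF conjunct1[OF I_0125_4_6] conjunct2[OF I_0125_4_6] K_0125_4(2)]
  have I_0125_6_3: "dd q 3 4 = (if Gf q 0 1 2 5 6 3 * Kf q 0 1 2 5 6 < 0 then 1 else 0) \<and> Gf q 0 1 2 5 6 3 \<noteq> 0"
    by (rule Fgen[OF no6]) (use B_0_1_2 B_0_1_5 B_0_1_6 B_5_6_2 B_0_5_2 B_0_6_2 B_5_6_1 B_5_1_2 B_6_1_2 B_5_6_0 B_2_5_6 B_0_2_1 B_1_5_0 in simp_all)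
  have K_0125_6s: "sgn (Kf q 0 1 2 5 6) = 1" unfolding Kf_br using B_6_1_2 B_5_6_2 B_5_1_2 B_0_1_6 B_5_6_1 B_0_5_2 B_0_1_5 B_5_6_0 B_0_1_2 B_0_6_2 by (simp add: sgn_mult)
  have K_0125_6: "0 < Kf q 0 1 2 5 6" "Kf q 0 1 2 5 6 \<noteq> 0" using sgn_pos_iff1[OF K_0125_6s] by auto
  note F_0125_6_3 = Fbool[OF conjunct1[OF I_0125_6_3] conjunct2[OF I_0125_6_3] K_0125_6(2)]
  note SW_0125_6_3 = Gf_swap_pos[OF conjunct2[OF I_0125_6_3]]
  have I_0125_6_4: "dd q 4 3 = (if Gf q 0 1 2 5 6 4 * Kf q 0 1 2 5 6 < 0 then 1 else 0) \<and> Gf q 0 1 2 5 6 4 \<noteq> 0"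
    by (rule Fgen[OF no6]) (use B_0_1_2 B_0_1_5 B_0_1_6 B_5_6_2 B_0_5_2 B_0_6_2 B_5_6_1 B_5_1_2 B_6_1_2 B_5_6_0 B_2_5_6 B_0_2_1 B_1_5_0 in simp_all)
  note F_0125_6_4 = Fbool[OF conjunct1[OF I_0125_6_4] conjunct2[OF I_0125_6_4] K_0125_6(2)]
  note SW_0125_6_4 = Gf_swap_pos[OF conjunct2[OF I_0125_6_4]]
  have I_0126_4_5: "dd q 5 3 = (if Gf q 0 1 2 6 4 5 * Kf q 0 1 2 6 4 < 0 then 1 else 0) \<and> Gf q 0 1 2 6 4 5 \<noteq> 0"
    by (rule Fgen[OF no6]) (use B_0_1_2 B_0_1_6 B_0_1_4 B_6_4_2 B_0_6_2 B_0_4_2 B_6_4_1 B_6_1_2 B_4_1_2 B_6_4_0 B_2_6_4 B_0_2_1 B_1_6_0 in simp_all)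
  have K_0126_4s: "sgn (Kf q 0 1 2 6 4) = -1" unfolding Kf_br using B_6_4_0 B_0_1_4 B_6_1_2 B_6_4_2 B_0_1_6 B_0_1_2 B_0_4_2 B_6_4_1 B_4_1_2 B_0_6_2 by (simp add: sgn_mult)
  have K_0126_4: "\<not> 0 < Kf q 0 1 2 6 4" "Kf q 0 1 2 6 4 \<noteq> 0" using sgn_neg_iff1[OF K_0126_4s] by auto
  note F_0126_4_5 = Fbool[OF conjunct1[OF I_0126_4_5] conjunct2[OF I_0126_4_5] K_0126_4(2)]
  have I_0126_5_4: "dd q 4 3 = (if Gf q 0 1 2 6 5 4 * Kf q 0 1 2 6 5 < 0 then 1 else 0) \<and> Gf q 0 1 2 6 5 4 \<noteq> 0"
    by (rule Fgen[OF no6]) (use B_0_1_2 B_0_1_6 B_0_1_5 B_6_5_2 B_0_6_2 B_0_5_2 B_6_5_1 B_6_1_2 B_5_1_2 B_6_5_0 B_2_6_5 B_0_2_1 B_1_6_0 in simp_all)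
  have K_0126_5s: "sgn (Kf q 0 1 2 6 5) = -1" unfolding Kf_br using B_6_1_2 B_6_5_0 B_5_1_2 B_0_1_6 B_6_5_2 B_0_5_2 B_0_1_5 B_6_5_1 B_0_1_2 B_0_6_2 by (simp add: sgn_mult)
  have K_0126_5: "\<not> 0 < Kf q 0 1 2 6 5" "Kf q 0 1 2 6 5 \<noteq> 0" using sgn_neg_iff1[OF K_0126_5s] by auto
  note F_0126_5_4 = Fbool[OF conjunct1[OF I_0126_5_4] conjunct2[OF I_0126_5_4] K_0126_5(2)]
  note SW_0126_5_4 = Gf_swap_pos[OF conjunct2[OF I_0126_5_4]]
  have I_0135_2_4: "dd q 4 6 = (if Gf q 0 1 3 5 2 4 * Kf q 0 1 3 5 2 < 0 then 1 else 0) \<and> Gf q 0 1 3 5 2 4 \<noteq> 0"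
    by (rule Fgen[OF no6]) (use B_0_1_3 B_0_1_5 B_0_1_2 B_5_2_3 B_0_5_3 B_0_2_3 B_5_2_1 B_5_1_3 B_2_1_3 B_5_2_0 B_3_5_2 B_0_3_1 B_1_5_0 in simp_all)
  have K_0135_2s: "sgn (Kf q 0 1 3 5 2) = 1" unfolding Kf_br using B_0_5_3 B_0_1_3 B_0_2_3 B_2_1_3 B_5_2_1 B_0_1_5 B_0_1_2 B_5_2_0 B_5_1_3 B_5_2_3 by (simp add: sgn_mult)
  have K_0135_2: "0 < Kf q 0 1 3 5 2" "Kf q 0 1 3 5 2 \<noteq> 0" using sgn_pos_iff1[OF K_0135_2s] by auto
  note F_0135_2_4 = Fbool[OF conjunct1[OF I_0135_2_4] conjunct2[OF I_0135_2_4] K_0135_2(2)]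
  have I_0135_4_2: "dd q 2 6 = (if Gf q 0 1 3 5 4 2 * Kf q 0 1 3 5 4 < 0 then 1 else 0) \<and> Gf q 0 1 3 5 4 2 \<noteq> 0"
    by (rule Fgen[OF no6]) (use B_0_1_3 B_0_1_5 B_0_1_4 B_5_4_3 B_0_5_3 B_0_4_3 B_5_4_1 B_5_1_3 B_4_1_3 B_5_4_0 B_3_5_4 B_0_3_1 B_1_5_0 in simp_all)
  have K_0135_4s: "sgn (Kf q 0 1 3 5 4) = -1" unfolding Kf_br using B_0_1_4 B_0_5_3 B_0_1_3 B_5_4_1 B_5_4_0 B_0_4_3 B_5_4_3 B_0_1_5 B_4_1_3 B_5_1_3 by (simp add: sgn_mult)
  have K_0135_4: "\<not> 0 < Kf q 0 1 3 5 4" "Kf q 0 1 3 5 4 \<noteq> 0" using sgn_neg_iff1[OF K_0135_4s] by auto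
  note F_0135_4_2 = Fbool[OF conjunct1[OF I_0135_4_2] conjunct2[OF I_0135_4_2] K_0135_4(2)]
  note SW_0135_4_2 = Gf_swap_pos[OF conjunct2[OF I_0135_4_2]]
  have I_0135_4_6: "dd q 6 2 = (if Gf q 0 1 3 5 4 6 * Kf q 0 1 3 5 4 < 0 then 1 else 0) \<and> Gf q 0 1 3 5 4 6 \<noteq> 0"
    by (rule Fgen[OF no6]) (use B_0_1_3 B_0_1_5 B_0_1_4 B_5_4_3 B_0_5_3 B_0_4_3 B_5_4_1 B_5_1_3 B_4_1_3 B_5_4_0 B_3_5_4 B_0_3_1 B_1_5_0 in simp_all)
  note F_0135_4_6 = Fbool[OF conjunct1[OF I_0135_4_6] conjunct2[OF I_0135_4_6] K_0135_4(2)]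
  have I_0135_6_4: "dd q 4 2 = (if Gf q 0 1 3 5 6 4 * Kf q 0 1 3 5 6 < 0 then 1 else 0) \<and> Gf q 0 1 3 5 6 4 \<noteq> 0"
    by (rule Fgen[OF no6]) (use B_0_1_3 B_0_1_5 B_0_1_6 B_5_6_3 B_0_5_3 B_0_6_3 B_5_6_1 B_5_1_3 B_6_1_3 B_5_6_0 B_3_5_6 B_0_3_1 B_1_5_0 in simp_all)
  have K_0135_6s: "sgn (Kf q 0 1 3 5 6) = 1" unfolding Kf_br using B_0_5_3 B_0_1_3 B_0_1_6 B_5_6_1 B_0_1_5 B_5_6_0 B_0_6_3 B_5_6_3 B_5_1_3 B_6_1_3 by (simp add: sgn_mult)
  have K_0135_6: "0 < Kf q 0 1 3 5 6" "Kf q 0 1 3 5 6 \<noteq> 0" using sgn_pos_iff1[OF K_0135_6s] by auto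
  note F_0135_6_4 = Fbool[OF conjunct1[OF I_0135_6_4] conjunct2[OF I_0135_6_4] K_0135_6(2)]
  note SW_0135_6_4 = Gf_swap_pos[OF conjunct2[OF I_0135_6_4]]
  have I_0146_2_3: "dd q 3 5 = (if Gf q 0 1 4 6 2 3 * Kf q 0 1 4 6 2 < 0 then 1 else 0) \<and> Gf q 0 1 4 6 2 3 \<noteq> 0"
    by (rule Fgen[OF no6]) (use B_0_1_4 B_0_1_6 B_0_1_2 B_6_2_4 B_0_6_4 B_0_2_4 B_6_2_1 B_6_1_4 B_2_1_4 B_6_2_0 B_4_6_2 B_0_4_1 B_1_6_0 in simp_all)
  have K_0146_2s: "sgn (Kf q 0 1 4 6 2) = 1" unfolding Kf_br using B_0_1_4 B_0_2_4 B_0_1_6 B_0_6_4 B_6_1_4 B_6_2_4 B_6_2_1 B_0_1_2 B_6_2_0 B_2_1_4 by (simp add: sgn_mult)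
  have K_0146_2: "0 < Kf q 0 1 4 6 2" "Kf q 0 1 4 6 2 \<noteq> 0" using sgn_pos_iff1[OF K_0146_2s] by auto
  note F_0146_2_3 = Fbool[OF conjunct1[OF I_0146_2_3] conjunct2[OF I_0146_2_3] K_0146_2(2)]
  have I_0146_3_2: "dd q 2 5 = (if Gf q 0 1 4 6 3 2 * Kf q 0 1 4 6 3 < 0 then 1 else 0) \<and> Gf q 0 1 4 6 3 2 \<noteq> 0"
    by (rule Fgen[OF no6]) (use B_0_1_4 B_0_1_6 B_0_1_3 B_6_3_4 B_0_6_4 B_0_3_4 B_6_3_1 B_6_1_4 B_3_1_4 B_6_3_0 B_4_6_3 B_0_4_1 B_1_6_0 in simp_all)
  have K_0146_3s: "sgn (Kf q 0 1 4 6 3) = 1" unfolding Kf_br using B_6_3_0 B_3_1_4 B_0_1_4 B_0_3_4 B_0_1_3 B_0_1_6 B_0_6_4 B_6_1_4 B_6_3_4 B_6_3_1 by (simp add: sgn_mult)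
  have K_0146_3: "0 < Kf q 0 1 4 6 3" "Kf q 0 1 4 6 3 \<noteq> 0" using sgn_pos_iff1[OF K_0146_3s] by auto
  note F_0146_3_2 = Fbool[OF conjunct1[OF I_0146_3_2] conjunct2[OF I_0146_3_2] K_0146_3(2)]
  note SW_0146_3_2 = Gf_swap_pos[OF conjunct2[OF I_0146_3_2]]
  have I_0146_3_5: "dd q 5 2 = (if Gf q 0 1 4 6 3 5 * Kf q 0 1 4 6 3 < 0 then 1 else 0) \<and> Gf q 0 1 4 6 3 5 \<noteq> 0"
    by (rule Fgen[OF no6]) (use B_0_1_4 B_0_1_6 B_0_1_3 B_6_3_4 B_0_6_4 B_0_3_4 B_6_3_1 B_6_1_4 B_3_1_4 B_6_3_0 B_4_6_3 B_0_4_1 B_1_6_0 in simp_all)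
  note F_0146_3_5 = Fbool[OF conjunct1[OF I_0146_3_5] conjunct2[OF I_0146_3_5] K_0146_3(2)]
  have I_0146_5_3: "dd q 3 2 = (if Gf q 0 1 4 6 5 3 * Kf q 0 1 4 6 5 < 0 then 1 else 0) \<and> Gf q 0 1 4 6 5 3 \<noteq> 0"
    by (rule Fgen[OF no6]) (use B_0_1_4 B_0_1_6 B_0_1_5 B_6_5_4 B_0_6_4 B_0_5_4 B_6_5_1 B_6_1_4 B_5_1_4 B_6_5_0 B_4_6_5 B_0_4_1 B_1_6_0 in simp_all)
  have K_0146_5s: "sgn (Kf q 0 1 4 6 5) = -1" unfolding Kf_br using B_0_1_4 B_6_5_0 B_0_1_6 B_0_6_4 B_6_1_4 B_0_1_5 B_5_1_4 B_6_5_1 B_6_5_4 B_0_5_4 by (simp add: sgn_mult)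
  have K_0146_5: "\<not> 0 < Kf q 0 1 4 6 5" "Kf q 0 1 4 6 5 \<noteq> 0" using sgn_neg_iff1[OF K_0146_5s] by auto
  note F_0146_5_3 = Fbool[OF conjunct1[OF I_0146_5_3] conjunct2[OF I_0146_5_3] K_0146_5(2)]
  note SW_0146_5_3 = Gf_swap_pos[OF conjunct2[OF I_0146_5_3]]
  have I_0156_2_3: "dd q 3 4 = (if Gf q 0 1 5 6 2 3 * Kf q 0 1 5 6 2 < 0 then 1 else 0) \<and> Gf q 0 1 5 6 2 3 \<noteq> 0"
    by (rule Fgen[OF no6]) (use B_0_1_5 B_0_1_6 B_0_1_2 B_6_2_5 B_0_6_5 B_0_2_5 B_6_2_1 B_6_1_5 B_2_1_5 B_6_2_0 B_5_6_2 B_0_5_1 B_1_6_0 in simp_all)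
  have K_0156_2s: "sgn (Kf q 0 1 5 6 2) = 1" unfolding Kf_br using B_0_6_5 B_6_1_5 B_6_2_5 B_2_1_5 B_0_1_6 B_0_1_5 B_6_2_1 B_0_2_5 B_0_1_2 B_6_2_0 by (simp add: sgn_mult)
  have K_0156_2: "0 < Kf q 0 1 5 6 2" "Kf q 0 1 5 6 2 \<noteq> 0" using sgn_pos_iff1[OF K_0156_2s] by auto
  note F_0156_2_3 = Fbool[OF conjunct1[OF I_0156_2_3] conjunct2[OF I_0156_2_3] K_0156_2(2)]
  have I_0156_3_2: "dd q 2 4 = (if Gf q 0 1 5 6 3 2 * Kf q 0 1 5 6 3 < 0 then 1 else 0) \<and> Gf q 0 1 5 6 3 2 \<noteq> 0"
    by (rule Fgen[OF no6]) (use B_0_1_5 B_0_1_6 B_0_1_3 B_6_3_5 B_0_6_5 B_0_3_5 B_6_3_1 B_6_1_5 B_3_1_5 B_6_3_0 B_5_6_3 B_0_5_1 B_1_6_0 in simp_all)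
  have K_0156_3s: "sgn (Kf q 0 1 5 6 3) = 1" unfolding Kf_br using B_6_3_0 B_0_6_5 B_6_1_5 B_0_1_3 B_0_1_6 B_6_3_5 B_3_1_5 B_0_1_5 B_6_3_1 B_0_3_5 by (simp add: sgn_mult)
  have K_0156_3: "0 < Kf q 0 1 5 6 3" "Kf q 0 1 5 6 3 \<noteq> 0" using sgn_pos_iff1[OF K_0156_3s] by auto
  note F_0156_3_2 = Fbool[OF conjunct1[OF I_0156_3_2] conjunct2[OF I_0156_3_2] K_0156_3(2)]
  note SW_0156_3_2 = Gf_swap_pos[OF conjunct2[OF I_0156_3_2]]
  have I_0234_1_6: "dd q 6 5 = (if Gf q 0 2 3 4 1 6 * Kf q 0 2 3 4 1 < 0 then 1 else 0) \<and> Gf q 0 2 3 4 1 6 \<noteq> 0"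
    by (rule Fgen[OF no6]) (use B_0_2_3 B_0_2_4 B_0_2_1 B_4_1_3 B_0_4_3 B_0_1_3 B_4_1_2 B_4_2_3 B_1_2_3 B_4_1_0 B_3_4_1 B_0_3_2 B_2_4_0 in simp_all)
  have K_0234_1s: "sgn (Kf q 0 2 3 4 1) = -1" unfolding Kf_br using B_0_2_1 B_0_2_4 B_0_1_3 B_1_2_3 B_0_2_3 B_0_4_3 B_4_1_0 B_4_1_3 B_4_2_3 B_4_1_2 by (simp add: sgn_mult)
  have K_0234_1: "\<not> 0 < Kf q 0 2 3 4 1" "Kf q 0 2 3 4 1 \<noteq> 0" using sgn_neg_iff1[OF K_0234_1s] by auto
  note F_0234_1_6 = Fbool[OF conjunct1[OF I_0234_1_6] conjunct2[OF I_0234_1_6] K_0234_1(2)]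
  have I_0234_6_1: "dd q 1 5 = (if Gf q 0 2 3 4 6 1 * Kf q 0 2 3 4 6 < 0 then 1 else 0) \<and> Gf q 0 2 3 4 6 1 \<noteq> 0"
    by (rule Fgen[OF no6]) (use B_0_2_3 B_0_2_4 B_0_2_6 B_4_6_3 B_0_4_3 B_0_6_3 B_4_6_2 B_4_2_3 B_6_2_3 B_4_6_0 B_3_4_6 B_0_3_2 B_2_4_0 in simp_all)
  have K_0234_6s: "sgn (Kf q 0 2 3 4 6) = 1" unfolding Kf_br using B_6_2_3 B_0_2_4 B_4_6_2 B_0_2_3 B_0_2_6 B_0_4_3 B_0_6_3 B_4_2_3 B_4_6_3 B_4_6_0 by (simp add: sgn_mult)
  have K_0234_6: "0 < Kf q 0 2 3 4 6" "Kf q 0 2 3 4 6 \<noteq> 0" using sgn_pos_iff1[OF K_0234_6s] by auto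
  note F_0234_6_1 = Fbool[OF conjunct1[OF I_0234_6_1] conjunct2[OF I_0234_6_1] K_0234_6(2)]
  note SW_0234_6_1 = Gf_swap_pos[OF conjunct2[OF I_0234_6_1]]
  have I_0236_4_5: "dd q 5 1 = (if Gf q 0 2 3 6 4 5 * Kf q 0 2 3 6 4 < 0 then 1 else 0) \<and> Gf q 0 2 3 6 4 5 \<noteq> 0"
    by (rule Fgen[OF no6]) (use B_0_2_3 B_0_2_6 B_0_2_4 B_6_4_3 B_0_6_3 B_0_4_3 B_6_4_2 B_6_2_3 B_4_2_3 B_6_4_0 B_3_6_4 B_0_3_2 B_2_6_0 in simp_all)
  have K_0236_4s: "sgn (Kf q 0 2 3 6 4) = -1" unfolding Kf_br using B_6_2_3 B_6_4_0 B_0_2_4 B_6_4_3 B_0_2_3 B_6_4_2 B_0_2_6 B_0_4_3 B_0_6_3 B_4_2_3 by (simp add: sgn_mult)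
  have K_0236_4: "\<not> 0 < Kf q 0 2 3 6 4" "Kf q 0 2 3 6 4 \<noteq> 0" using sgn_neg_iff1[OF K_0236_4s] by auto
  note F_0236_4_5 = Fbool[OF conjunct1[OF I_0236_4_5] conjunct2[OF I_0236_4_5] K_0236_4(2)]
  have I_0236_5_4: "dd q 4 1 = (if Gf q 0 2 3 6 5 4 * Kf q 0 2 3 6 5 < 0 then 1 else 0) \<and> Gf q 0 2 3 6 5 4 \<noteq> 0"
    by (rule Fgen[OF no6]) (use B_0_2_3 B_0_2_6 B_0_2_5 B_6_5_3 B_0_6_3 B_0_5_3 B_6_5_2 B_6_2_3 B_5_2_3 B_6_5_0 B_3_6_5 B_0_3_2 B_2_6_0 in simp_all)
  have K_0236_5s: "sgn (Kf q 0 2 3 6 5) = -1" unfolding Kf_br using B_6_2_3 B_6_5_0 B_0_5_3 B_6_5_3 B_0_2_3 B_0_2_6 B_6_5_2 B_0_6_3 B_0_2_5 B_5_2_3 by (simp add: sgn_mult)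
  have K_0236_5: "\<not> 0 < Kf q 0 2 3 6 5" "Kf q 0 2 3 6 5 \<noteq> 0" using sgn_neg_iff1[OF K_0236_5s] by auto
  note F_0236_5_4 = Fbool[OF conjunct1[OF I_0236_5_4] conjunct2[OF I_0236_5_4] K_0236_5(2)]
  note SW_0236_5_4 = Gf_swap_pos[OF conjunct2[OF I_0236_5_4]]
  have I_0246_1_3: "dd q 3 5 = (if Gf q 0 2 4 6 1 3 * Kf q 0 2 4 6 1 < 0 then 1 else 0) \<and> Gf q 0 2 4 6 1 3 \<noteq> 0"
    by (rule Fgen[OF no6]) (use B_0_2_4 B_0_2_6 B_0_2_1 B_6_1_4 B_0_6_4 B_0_1_4 B_6_1_2 B_6_2_4 B_1_2_4 B_6_1_0 B_4_6_1 B_0_4_2 B_2_6_0 in simp_all)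
  have K_0246_1s: "sgn (Kf q 0 2 4 6 1) = -1" unfolding Kf_br using B_0_2_1 B_0_1_4 B_0_2_4 B_6_1_2 B_0_2_6 B_6_1_4 B_0_6_4 B_6_2_4 B_6_1_0 B_1_2_4 by (simp add: sgn_mult)
  have K_0246_1: "\<not> 0 < Kf q 0 2 4 6 1" "Kf q 0 2 4 6 1 \<noteq> 0" using sgn_neg_iff1[OF K_0246_1s] by auto
  note F_0246_1_3 = Fbool[OF conjunct1[OF I_0246_1_3] conjunct2[OF I_0246_1_3] K_0246_1(2)]
  have I_0246_3_1: "dd q 1 5 = (if Gf q 0 2 4 6 3 1 * Kf q 0 2 4 6 3 < 0 then 1 else 0) \<and> Gf q 0 2 4 6 3 1 \<noteq> 0"
    by (rule Fgen[OF no6]) (use B_0_2_4 B_0_2_6 B_0_2_3 B_6_3_4 B_0_6_4 B_0_3_4 B_6_3_2 B_6_2_4 B_3_2_4 B_6_3_0 B_4_6_3 B_0_4_2 B_2_6_0 in simp_all)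
  have K_0246_3s: "sgn (Kf q 0 2 4 6 3) = 1" unfolding Kf_br using B_6_3_0 B_0_2_4 B_0_3_4 B_6_3_2 B_0_2_3 B_0_2_6 B_0_6_4 B_6_2_4 B_3_2_4 B_6_3_4 by (simp add: sgn_mult)
  have K_0246_3: "0 < Kf q 0 2 4 6 3" "Kf q 0 2 4 6 3 \<noteq> 0" using sgn_pos_iff1[OF K_0246_3s] by auto
  note F_0246_3_1 = Fbool[OF conjunct1[OF I_0246_3_1] conjunct2[OF I_0246_3_1] K_0246_3(2)]
  note SW_0246_3_1 = Gf_swap_pos[OF conjunct2[OF I_0246_3_1]]
  have I_0256_1_4: "dd q 4 3 = (if Gf q 0 2 5 6 1 4 * Kf q 0 2 5 6 1 < 0 then 1 else 0) \<and> Gf q 0 2 5 6 1 4 \<noteq> 0"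
    by (rule Fgen[OF no6]) (use B_0_2_5 B_0_2_6 B_0_2_1 B_6_1_5 B_0_6_5 B_0_1_5 B_6_1_2 B_6_2_5 B_1_2_5 B_6_1_0 B_5_6_1 B_0_5_2 B_2_6_0 in simp_all)
  have K_0256_1s: "sgn (Kf q 0 2 5 6 1) = -1" unfolding Kf_br using B_0_2_1 B_0_6_5 B_6_1_2 B_6_1_5 B_6_2_5 B_0_2_6 B_0_1_5 B_1_2_5 B_0_2_5 B_6_1_0 by (simp add: sgn_mult)
  have K_0256_1: "\<not> 0 < Kf q 0 2 5 6 1" "Kf q 0 2 5 6 1 \<noteq> 0" using sgn_neg_iff1[OF K_0256_1s] by auto
  note F_0256_1_4 = Fbool[OF conjunct1[OF I_0256_1_4] conjunct2[OF I_0256_1_4] K_0256_1(2)]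
  have I_0256_3_4: "dd q 4 1 = (if Gf q 0 2 5 6 3 4 * Kf q 0 2 5 6 3 < 0 then 1 else 0) \<and> Gf q 0 2 5 6 3 4 \<noteq> 0"
    by (rule Fgen[OF no6]) (use B_0_2_5 B_0_2_6 B_0_2_3 B_6_3_5 B_0_6_5 B_0_3_5 B_6_3_2 B_6_2_5 B_3_2_5 B_6_3_0 B_5_6_3 B_0_5_2 B_2_6_0 in simp_all)
  have K_0256_3s: "sgn (Kf q 0 2 5 6 3) = 1" unfolding Kf_br using B_6_3_0 B_0_6_5 B_6_3_2 B_0_2_3 B_6_2_5 B_3_2_5 B_6_3_5 B_0_2_6 B_0_2_5 B_0_3_5 by (simp add: sgn_mult)
  have K_0256_3: "0 < Kf q 0 2 5 6 3" "Kf q 0 2 5 6 3 \<noteq> 0" using sgn_pos_iff1[OF K_0256_3s] by auto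
  note F_0256_3_4 = Fbool[OF conjunct1[OF I_0256_3_4] conjunct2[OF I_0256_3_4] K_0256_3(2)]
  have I_0256_4_1: "dd q 1 3 = (if Gf q 0 2 5 6 4 1 * Kf q 0 2 5 6 4 < 0 then 1 else 0) \<and> Gf q 0 2 5 6 4 1 \<noteq> 0"
    by (rule Fgen[OF no6]) (use B_0_2_5 B_0_2_6 B_0_2_4 B_6_4_5 B_0_6_5 B_0_4_5 B_6_4_2 B_6_2_5 B_4_2_5 B_6_4_0 B_5_6_4 B_0_5_2 B_2_6_0 in simp_all)
  have K_0256_4s: "sgn (Kf q 0 2 5 6 4) = 1" unfolding Kf_br using B_0_6_5 B_4_2_5 B_6_4_0 B_0_2_4 B_6_2_5 B_6_4_2 B_0_2_6 B_6_4_5 B_0_2_5 B_0_4_5 by (simp add: sgn_mult)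
  have K_0256_4: "0 < Kf q 0 2 5 6 4" "Kf q 0 2 5 6 4 \<noteq> 0" using sgn_pos_iff1[OF K_0256_4s] by auto
  note F_0256_4_1 = Fbool[OF conjunct1[OF I_0256_4_1] conjunct2[OF I_0256_4_1] K_0256_4(2)]
  note SW_0256_4_1 = Gf_swap_pos[OF conjunct2[OF I_0256_4_1]]
  have I_0256_4_3: "dd q 3 1 = (if Gf q 0 2 5 6 4 3 * Kf q 0 2 5 6 4 < 0 then 1 else 0) \<and> Gf q 0 2 5 6 4 3 \<noteq> 0"
    by (rule Fgen[OF no6]) (use B_0_2_5 B_0_2_6 B_0_2_4 B_6_4_5 B_0_6_5 B_0_4_5 B_6_4_2 B_6_2_5 B_4_2_5 B_6_4_0 B_5_6_4 B_0_5_2 B_2_6_0 in simp_all)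
  note F_0256_4_3 = Fbool[OF conjunct1[OF I_0256_4_3] conjunct2[OF I_0256_4_3] K_0256_4(2)]
  note SW_0256_4_3 = Gf_swap_pos[OF conjunct2[OF I_0256_4_3]]
  have I_0345_1_2: "dd q 2 6 = (if Gf q 0 3 4 5 1 2 * Kf q 0 3 4 5 1 < 0 then 1 else 0) \<and> Gf q 0 3 4 5 1 2 \<noteq> 0"
    by (rule Fgen[OF no6]) (use B_0_3_4 B_0_3_5 B_0_3_1 B_5_1_4 B_0_5_4 B_0_1_4 B_5_1_3 B_5_3_4 B_1_3_4 B_5_1_0 B_4_5_1 B_0_4_3 B_3_5_0 in simp_all)
  have K_0345_1s: "sgn (Kf q 0 3 4 5 1) = -1" unfolding Kf_br using B_0_1_4 B_0_3_1 B_0_3_4 B_5_3_4 B_1_3_4 B_5_1_4 B_5_1_0 B_0_3_5 B_5_1_3 B_0_5_4 by (simp add: sgn_mult)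
  have K_0345_1: "\<not> 0 < Kf q 0 3 4 5 1" "Kf q 0 3 4 5 1 \<noteq> 0" using sgn_neg_iff1[OF K_0345_1s] by auto
  note F_0345_1_2 = Fbool[OF conjunct1[OF I_0345_1_2] conjunct2[OF I_0345_1_2] K_0345_1(2)]
  have I_0345_2_1: "dd q 1 6 = (if Gf q 0 3 4 5 2 1 * Kf q 0 3 4 5 2 < 0 then 1 else 0) \<and> Gf q 0 3 4 5 2 1 \<noteq> 0"
    by (rule Fgen[OF no6]) (use B_0_3_4 B_0_3_5 B_0_3_2 B_5_2_4 B_0_5_4 B_0_2_4 B_5_2_3 B_5_3_4 B_2_3_4 B_5_2_0 B_4_5_2 B_0_4_3 B_3_5_0 in simp_all)
  have K_0345_2s: "sgn (Kf q 0 3 4 5 2) = -1" unfolding Kf_br using B_0_2_4 B_0_3_4 B_5_3_4 B_2_3_4 B_5_2_4 B_0_3_5 B_5_2_0 B_0_3_2 B_5_2_3 B_0_5_4 by (simp add: sgn_mult)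
  have K_0345_2: "\<not> 0 < Kf q 0 3 4 5 2" "Kf q 0 3 4 5 2 \<noteq> 0" using sgn_neg_iff1[OF K_0345_2s] by auto
  note F_0345_2_1 = Fbool[OF conjunct1[OF I_0345_2_1] conjunct2[OF I_0345_2_1] K_0345_2(2)]
  note SW_0345_2_1 = Gf_swap_pos[OF conjunct2[OF I_0345_2_1]]
  have I_0345_2_6: "dd q 6 1 = (if Gf q 0 3 4 5 2 6 * Kf q 0 3 4 5 2 < 0 then 1 else 0) \<and> Gf q 0 3 4 5 2 6 \<noteq> 0"
    by (rule Fgen[OF no6]) (use B_0_3_4 B_0_3_5 B_0_3_2 B_5_2_4 B_0_5_4 B_0_2_4 B_5_2_3 B_5_3_4 B_2_3_4 B_5_2_0 B_4_5_2 B_0_4_3 B_3_5_0 in simp_all)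
  note F_0345_2_6 = Fbool[OF conjunct1[OF I_0345_2_6] conjunct2[OF I_0345_2_6] K_0345_2(2)]
  have I_0345_6_2: "dd q 2 1 = (if Gf q 0 3 4 5 6 2 * Kf q 0 3 4 5 6 < 0 then 1 else 0) \<and> Gf q 0 3 4 5 6 2 \<noteq> 0"
    by (rule Fgen[OF no6]) (use B_0_3_4 B_0_3_5 B_0_3_6 B_5_6_4 B_0_5_4 B_0_6_4 B_5_6_3 B_5_3_4 B_6_3_4 B_5_6_0 B_4_5_6 B_0_4_3 B_3_5_0 in simp_all)
  have K_0345_6s: "sgn (Kf q 0 3 4 5 6) = 1" unfolding Kf_br using B_0_3_4 B_5_3_4 B_0_6_4 B_0_3_6 B_5_6_4 B_5_6_3 B_6_3_4 B_5_6_0 B_0_3_5 B_0_5_4 by (simp add: sgn_mult)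
  have K_0345_6: "0 < Kf q 0 3 4 5 6" "Kf q 0 3 4 5 6 \<noteq> 0" using sgn_pos_iff1[OF K_0345_6s] by auto
  note F_0345_6_2 = Fbool[OF conjunct1[OF I_0345_6_2] conjunct2[OF I_0345_6_2] K_0345_6(2)]
  note SW_0345_6_2 = Gf_swap_pos[OF conjunct2[OF I_0345_6_2]]
  have I_0346_1_5: "dd q 5 2 = (if Gf q 0 3 4 6 1 5 * Kf q 0 3 4 6 1 < 0 then 1 else 0) \<and> Gf q 0 3 4 6 1 5 \<noteq> 0"
    by (rule Fgen[OF no6]) (use B_0_3_4 B_0_3_6 B_0_3_1 B_6_1_4 B_0_6_4 B_0_1_4 B_6_1_3 B_6_3_4 B_1_3_4 B_6_1_0 B_4_6_1 B_0_4_3 B_3_6_0 in simp_all)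
  have K_0346_1s: "sgn (Kf q 0 3 4 6 1) = -1" unfolding Kf_br using B_0_1_4 B_0_3_1 B_0_3_4 B_1_3_4 B_6_1_4 B_0_6_4 B_0_3_6 B_6_3_4 B_6_1_0 B_6_1_3 by (simp add: sgn_mult)
  have K_0346_1: "\<not> 0 < Kf q 0 3 4 6 1" "Kf q 0 3 4 6 1 \<noteq> 0" using sgn_neg_iff1[OF K_0346_1s] by auto
  note F_0346_1_5 = Fbool[OF conjunct1[OF I_0346_1_5] conjunct2[OF I_0346_1_5] K_0346_1(2)]
  have I_0346_2_1: "dd q 1 5 = (if Gf q 0 3 4 6 2 1 * Kf q 0 3 4 6 2 < 0 then 1 else 0) \<and> Gf q 0 3 4 6 2 1 \<noteq> 0"
    by (rule Fgen[OF no6]) (use B_0_3_4 B_0_3_6 B_0_3_2 B_6_2_4 B_0_6_4 B_0_2_4 B_6_2_3 B_6_3_4 B_2_3_4 B_6_2_0 B_4_6_2 B_0_4_3 B_3_6_0 in simp_all)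
  have K_0346_2s: "sgn (Kf q 0 3 4 6 2) = -1" unfolding Kf_br using B_6_2_3 B_6_2_0 B_0_2_4 B_0_3_4 B_0_6_4 B_0_3_6 B_6_2_4 B_2_3_4 B_6_3_4 B_0_3_2 by (simp add: sgn_mult)
  have K_0346_2: "\<not> 0 < Kf q 0 3 4 6 2" "Kf q 0 3 4 6 2 \<noteq> 0" using sgn_neg_iff1[OF K_0346_2s] by auto
  note F_0346_2_1 = Fbool[OF conjunct1[OF I_0346_2_1] conjunct2[OF I_0346_2_1] K_0346_2(2)]
  note SW_0346_2_1 = Gf_swap_pos[OF conjunct2[OF I_0346_2_1]]
  have I_0346_2_5: "dd q 5 1 = (if Gf q 0 3 4 6 2 5 * Kf q 0 3 4 6 2 < 0 then 1 else 0) \<and> Gf q 0 3 4 6 2 5 \<noteq> 0"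
    by (rule Fgen[OF no6]) (use B_0_3_4 B_0_3_6 B_0_3_2 B_6_2_4 B_0_6_4 B_0_2_4 B_6_2_3 B_6_3_4 B_2_3_4 B_6_2_0 B_4_6_2 B_0_4_3 B_3_6_0 in simp_all)
  note F_0346_2_5 = Fbool[OF conjunct1[OF I_0346_2_5] conjunct2[OF I_0346_2_5] K_0346_2(2)]
  have I_0346_5_1: "dd q 1 2 = (if Gf q 0 3 4 6 5 1 * Kf q 0 3 4 6 5 < 0 then 1 else 0) \<and> Gf q 0 3 4 6 5 1 \<noteq> 0"
    by (rule Fgen[OF no6]) (use B_0_3_4 B_0_3_6 B_0_3_5 B_6_5_4 B_0_6_4 B_0_5_4 B_6_5_3 B_6_3_4 B_5_3_4 B_6_5_0 B_4_6_5 B_0_4_3 B_3_6_0 in simp_all)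
  have K_0346_5s: "sgn (Kf q 0 3 4 6 5) = -1" unfolding Kf_br using B_6_5_0 B_0_3_4 B_6_5_3 B_5_3_4 B_0_6_4 B_0_3_6 B_6_3_4 B_0_3_5 B_6_5_4 B_0_5_4 by (simp add: sgn_mult)
  have K_0346_5: "\<not> 0 < Kf q 0 3 4 6 5" "Kf q 0 3 4 6 5 \<noteq> 0" using sgn_neg_iff1[OF K_0346_5s] by auto
  note F_0346_5_1 = Fbool[OF conjunct1[OF I_0346_5_1] conjunct2[OF I_0346_5_1] K_0346_5(2)]
  note SW_0346_5_1 = Gf_swap_pos[OF conjunct2[OF I_0346_5_1]]
  have I_0346_5_2: "dd q 2 1 = (if Gf q 0 3 4 6 5 2 * Kf q 0 3 4 6 5 < 0 then 1 else 0) \<and> Gf q 0 3 4 6 5 2 \<noteq> 0"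
    by (rule Fgen[OF no6]) (use B_0_3_4 B_0_3_6 B_0_3_5 B_6_5_4 B_0_6_4 B_0_5_4 B_6_5_3 B_6_3_4 B_5_3_4 B_6_5_0 B_4_6_5 B_0_4_3 B_3_6_0 in simp_all)
  note F_0346_5_2 = Fbool[OF conjunct1[OF I_0346_5_2] conjunct2[OF I_0346_5_2] K_0346_5(2)]
  note SW_0346_5_2 = Gf_swap_pos[OF conjunct2[OF I_0346_5_2]]
  have I_0356_1_2: "dd q 2 4 = (if Gf q 0 3 5 6 1 2 * Kf q 0 3 5 6 1 < 0 then 1 else 0) \<and> Gf q 0 3 5 6 1 2 \<noteq> 0"
    by (rule Fgen[OF no6]) (use B_0_3_5 B_0_3_6 B_0_3_1 B_6_1_5 B_0_6_5 B_0_1_5 B_6_1_3 B_6_3_5 B_1_3_5 B_6_1_0 B_5_6_1 B_0_5_3 B_3_6_0 in simp_all)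
  have K_0356_1s: "sgn (Kf q 0 3 5 6 1) = -1" unfolding Kf_br using B_0_6_5 B_0_3_1 B_1_3_5 B_6_1_5 B_6_3_5 B_0_3_6 B_0_1_5 B_6_1_0 B_0_3_5 B_6_1_3 by (simp add: sgn_mult)
  have K_0356_1: "\<not> 0 < Kf q 0 3 5 6 1" "Kf q 0 3 5 6 1 \<noteq> 0" using sgn_neg_iff1[OF K_0356_1s] by auto
  note F_0356_1_2 = Fbool[OF conjunct1[OF I_0356_1_2] conjunct2[OF I_0356_1_2] K_0356_1(2)]
  have I_0356_1_4: "dd q 4 2 = (if Gf q 0 3 5 6 1 4 * Kf q 0 3 5 6 1 < 0 then 1 else 0) \<and> Gf q 0 3 5 6 1 4 \<noteq> 0"
    by (rule Fgen[OF no6]) (use B_0_3_5 B_0_3_6 B_0_3_1 B_6_1_5 B_0_6_5 B_0_1_5 B_6_1_3 B_6_3_5 B_1_3_5 B_6_1_0 B_5_6_1 B_0_5_3 B_3_6_0 in simp_all)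
  note F_0356_1_4 = Fbool[OF conjunct1[OF I_0356_1_4] conjunct2[OF I_0356_1_4] K_0356_1(2)]
  have I_0356_2_1: "dd q 1 4 = (if Gf q 0 3 5 6 2 1 * Kf q 0 3 5 6 2 < 0 then 1 else 0) \<and> Gf q 0 3 5 6 2 1 \<noteq> 0"
    by (rule Fgen[OF no6]) (use B_0_3_5 B_0_3_6 B_0_3_2 B_6_2_5 B_0_6_5 B_0_2_5 B_6_2_3 B_6_3_5 B_2_3_5 B_6_2_0 B_5_6_2 B_0_5_3 B_3_6_0 in simp_all)
  have K_0356_2s: "sgn (Kf q 0 3 5 6 2) = -1" unfolding Kf_br using B_6_2_3 B_0_6_5 B_6_2_0 B_6_2_5 B_2_3_5 B_6_3_5 B_0_3_6 B_0_2_5 B_0_3_5 B_0_3_2 by (simp add: sgn_mult)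
  have K_0356_2: "\<not> 0 < Kf q 0 3 5 6 2" "Kf q 0 3 5 6 2 \<noteq> 0" using sgn_neg_iff1[OF K_0356_2s] by auto
  note F_0356_2_1 = Fbool[OF conjunct1[OF I_0356_2_1] conjunct2[OF I_0356_2_1] K_0356_2(2)]
  note SW_0356_2_1 = Gf_swap_pos[OF conjunct2[OF I_0356_2_1]]
  have I_0356_4_1: "dd q 1 2 = (if Gf q 0 3 5 6 4 1 * Kf q 0 3 5 6 4 < 0 then 1 else 0) \<and> Gf q 0 3 5 6 4 1 \<noteq> 0"
    by (rule Fgen[OF no6]) (use B_0_3_5 B_0_3_6 B_0_3_4 B_6_4_5 B_0_6_5 B_0_4_5 B_6_4_3 B_6_3_5 B_4_3_5 B_6_4_0 B_5_6_4 B_0_5_3 B_3_6_0 in simp_all)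
  have K_0356_4s: "sgn (Kf q 0 3 5 6 4) = 1" unfolding Kf_br using B_0_6_5 B_6_4_0 B_6_4_3 B_4_3_5 B_0_3_4 B_6_3_5 B_6_4_5 B_0_3_6 B_0_3_5 B_0_4_5 by (simp add: sgn_mult)
  have K_0356_4: "0 < Kf q 0 3 5 6 4" "Kf q 0 3 5 6 4 \<noteq> 0" using sgn_pos_iff1[OF K_0356_4s] by auto
  note F_0356_4_1 = Fbool[OF conjunct1[OF I_0356_4_1] conjunct2[OF I_0356_4_1] K_0356_4(2)]
  note SW_0356_4_1 = Gf_swap_pos[OF conjunct2[OF I_0356_4_1]]
  have I_0456_1_2: "dd q 2 3 = (if Gf q 0 4 5 6 1 2 * Kf q 0 4 5 6 1 < 0 then 1 else 0) \<and> Gf q 0 4 5 6 1 2 \<noteq> 0"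
    by (rule Fgen[OF no6]) (use B_0_4_5 B_0_4_6 B_0_4_1 B_6_1_5 B_0_6_5 B_0_1_5 B_6_1_4 B_6_4_5 B_1_4_5 B_6_1_0 B_5_6_1 B_0_5_4 B_4_6_0 in simp_all)
  have K_0456_1s: "sgn (Kf q 0 4 5 6 1) = -1" unfolding Kf_br using B_0_6_5 B_0_4_1 B_6_1_5 B_6_1_4 B_6_4_5 B_0_1_5 B_0_4_6 B_6_1_0 B_1_4_5 B_0_4_5 by (simp add: sgn_mult)
  have K_0456_1: "\<not> 0 < Kf q 0 4 5 6 1" "Kf q 0 4 5 6 1 \<noteq> 0" using sgn_neg_iff1[OF K_0456_1s] by auto
  note F_0456_1_2 = Fbool[OF conjunct1[OF I_0456_1_2] conjunct2[OF I_0456_1_2] K_0456_1(2)]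
  have I_0456_2_1: "dd q 1 3 = (if Gf q 0 4 5 6 2 1 * Kf q 0 4 5 6 2 < 0 then 1 else 0) \<and> Gf q 0 4 5 6 2 1 \<noteq> 0"
    by (rule Fgen[OF no6]) (use B_0_4_5 B_0_4_6 B_0_4_2 B_6_2_5 B_0_6_5 B_0_2_5 B_6_2_4 B_6_4_5 B_2_4_5 B_6_2_0 B_5_6_2 B_0_5_4 B_4_6_0 in simp_all)
  have K_0456_2s: "sgn (Kf q 0 4 5 6 2) = -1" unfolding Kf_br using B_0_6_5 B_2_4_5 B_6_2_0 B_6_2_5 B_6_4_5 B_6_2_4 B_0_4_6 B_0_2_5 B_0_4_2 B_0_4_5 by (simp add: sgn_mult)
  have K_0456_2: "\<not> 0 < Kf q 0 4 5 6 2" "Kf q 0 4 5 6 2 \<noteq> 0" using sgn_neg_iff1[OF K_0456_2s] by auto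
  note F_0456_2_1 = Fbool[OF conjunct1[OF I_0456_2_1] conjunct2[OF I_0456_2_1] K_0456_2(2)]
  note SW_0456_2_1 = Gf_swap_pos[OF conjunct2[OF I_0456_2_1]]
  have I_1234_0_5: "dd q 5 6 = (if Gf q 1 2 3 4 0 5 * Kf q 1 2 3 4 0 < 0 then 1 else 0) \<and> Gf q 1 2 3 4 0 5 \<noteq> 0"
    by (rule Fgen[OF no6]) (use B_1_2_3 B_1_2_4 B_1_2_0 B_4_0_3 B_1_4_3 B_1_0_3 B_4_0_2 B_4_2_3 B_0_2_3 B_4_0_1 B_3_4_0 B_1_3_2 B_2_4_1 in simp_all)
  have K_1234_0s: "sgn (Kf q 1 2 3 4 0) = 1" unfolding Kf_br using B_1_2_0 B_4_0_1 B_1_2_3 B_0_2_3 B_1_4_3 B_4_0_3 B_1_0_3 B_4_2_3 B_4_0_2 B_1_2_4 by (simp add: sgn_mult)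
  have K_1234_0: "0 < Kf q 1 2 3 4 0" "Kf q 1 2 3 4 0 \<noteq> 0" using sgn_pos_iff1[OF K_1234_0s] by auto
  note F_1234_0_5 = Fbool[OF conjunct1[OF I_1234_0_5] conjunct2[OF I_1234_0_5] K_1234_0(2)]
  have I_1234_5_0: "dd q 0 6 = (if Gf q 1 2 3 4 5 0 * Kf q 1 2 3 4 5 < 0 then 1 else 0) \<and> Gf q 1 2 3 4 5 0 \<noteq> 0"
    by (rule Fgen[OF no6]) (use B_1_2_3 B_1_2_4 B_1_2_5 B_4_5_3 B_1_4_3 B_1_5_3 B_4_5_2 B_4_2_3 B_5_2_3 B_4_5_1 B_3_4_5 B_1_3_2 B_2_4_1 in simp_all)
  have K_1234_5s: "sgn (Kf q 1 2 3 4 5) = 1" unfolding Kf_br using B_4_5_1 B_1_2_3 B_1_4_3 B_4_5_3 B_1_5_3 B_1_2_5 B_4_2_3 B_4_5_2 B_1_2_4 B_5_2_3 by (simp add: sgn_mult)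
  have K_1234_5: "0 < Kf q 1 2 3 4 5" "Kf q 1 2 3 4 5 \<noteq> 0" using sgn_pos_iff1[OF K_1234_5s] by auto
  note F_1234_5_0 = Fbool[OF conjunct1[OF I_1234_5_0] conjunct2[OF I_1234_5_0] K_1234_5(2)]
  note SW_1234_5_0 = Gf_swap_pos[OF conjunct2[OF I_1234_5_0]]
  have I_1234_5_6: "dd q 6 0 = (if Gf q 1 2 3 4 5 6 * Kf q 1 2 3 4 5 < 0 then 1 else 0) \<and> Gf q 1 2 3 4 5 6 \<noteq> 0"
    by (rule Fgen[OF no6]) (use B_1_2_3 B_1_2_4 B_1_2_5 B_4_5_3 B_1_4_3 B_1_5_3 B_4_5_2 B_4_2_3 B_5_2_3 B_4_5_1 B_3_4_5 B_1_3_2 B_2_4_1 in simp_all)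
  note F_1234_5_6 = Fbool[OF conjunct1[OF I_1234_5_6] conjunct2[OF I_1234_5_6] K_1234_5(2)]
  have I_1234_6_5: "dd q 5 0 = (if Gf q 1 2 3 4 6 5 * Kf q 1 2 3 4 6 < 0 then 1 else 0) \<and> Gf q 1 2 3 4 6 5 \<noteq> 0"
    by (rule Fgen[OF no6]) (use B_1_2_3 B_1_2_4 B_1_2_6 B_4_6_3 B_1_4_3 B_1_6_3 B_4_6_2 B_4_2_3 B_6_2_3 B_4_6_1 B_3_4_6 B_1_3_2 B_2_4_1 in simp_all)
  have K_1234_6s: "sgn (Kf q 1 2 3 4 6) = 1" unfolding Kf_br using B_6_2_3 B_1_6_3 B_1_2_6 B_4_6_2 B_1_2_3 B_1_4_3 B_4_6_1 B_4_2_3 B_4_6_3 B_1_2_4 by (simp add: sgn_mult)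
  have K_1234_6: "0 < Kf q 1 2 3 4 6" "Kf q 1 2 3 4 6 \<noteq> 0" using sgn_pos_iff1[OF K_1234_6s] by auto
  note F_1234_6_5 = Fbool[OF conjunct1[OF I_1234_6_5] conjunct2[OF I_1234_6_5] K_1234_6(2)]
  note SW_1234_6_5 = Gf_swap_pos[OF conjunct2[OF I_1234_6_5]]
  have I_1235_0_6: "dd q 6 4 = (if Gf q 1 2 3 5 0 6 * Kf q 1 2 3 5 0 < 0 then 1 else 0) \<and> Gf q 1 2 3 5 0 6 \<noteq> 0"
    by (rule Fgen[OF no6]) (use B_1_2_3 B_1_2_5 B_1_2_0 B_5_0_3 B_1_5_3 B_1_0_3 B_5_0_2 B_5_2_3 B_0_2_3 B_5_0_1 B_3_5_0 B_1_3_2 B_2_5_1 in simp_all)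
  have K_1235_0s: "sgn (Kf q 1 2 3 5 0) = 1" unfolding Kf_br using B_1_2_0 B_5_0_2 B_1_2_3 B_0_2_3 B_5_0_1 B_1_5_3 B_1_0_3 B_1_2_5 B_5_0_3 B_5_2_3 by (simp add: sgn_mult)
  have K_1235_0: "0 < Kf q 1 2 3 5 0" "Kf q 1 2 3 5 0 \<noteq> 0" using sgn_pos_iff1[OF K_1235_0s] by auto
  note F_1235_0_6 = Fbool[OF conjunct1[OF I_1235_0_6] conjunct2[OF I_1235_0_6] K_1235_0(2)]
  have I_1235_6_0: "dd q 0 4 = (if Gf q 1 2 3 5 6 0 * Kf q 1 2 3 5 6 < 0 then 1 else 0) \<and> Gf q 1 2 3 5 6 0 \<noteq> 0"
    by (rule Fgen[OF no6]) (use B_1_2_3 B_1_2_5 B_1_2_6 B_5_6_3 B_1_5_3 B_1_6_3 B_5_6_2 B_5_2_3 B_6_2_3 B_5_6_1 B_3_5_6 B_1_3_2 B_2_5_1 in simp_all)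
  have K_1235_6s: "sgn (Kf q 1 2 3 5 6) = 1" unfolding Kf_br using B_6_2_3 B_1_6_3 B_1_2_6 B_5_6_2 B_1_2_3 B_5_6_1 B_1_5_3 B_1_2_5 B_5_6_3 B_5_2_3 by (simp add: sgn_mult)
  have K_1235_6: "0 < Kf q 1 2 3 5 6" "Kf q 1 2 3 5 6 \<noteq> 0" using sgn_pos_iff1[OF K_1235_6s] by auto
  note F_1235_6_0 = Fbool[OF conjunct1[OF I_1235_6_0] conjunct2[OF I_1235_6_0] K_1235_6(2)]
  note SW_1235_6_0 = Gf_swap_pos[OF conjunct2[OF I_1235_6_0]]
  have I_1236_0_5: "dd q 5 4 = (if Gf q 1 2 3 6 0 5 * Kf q 1 2 3 6 0 < 0 then 1 else 0) \<and> Gf q 1 2 3 6 0 5 \<noteq> 0"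
    by (rule Fgen[OF no6]) (use B_1_2_3 B_1_2_6 B_1_2_0 B_6_0_3 B_1_6_3 B_1_0_3 B_6_0_2 B_6_2_3 B_0_2_3 B_6_0_1 B_3_6_0 B_1_3_2 B_2_6_1 in simp_all)
  have K_1236_0s: "sgn (Kf q 1 2 3 6 0) = 1" unfolding Kf_br using B_6_2_3 B_1_6_3 B_1_2_6 B_1_2_0 B_6_0_3 B_1_2_3 B_0_2_3 B_6_0_2 B_1_0_3 B_6_0_1 by (simp add: sgn_mult)
  have K_1236_0: "0 < Kf q 1 2 3 6 0" "Kf q 1 2 3 6 0 \<noteq> 0" using sgn_pos_iff1[OF K_1236_0s] by auto
  note F_1236_0_5 = Fbool[OF conjunct1[OF I_1236_0_5] conjunct2[OF I_1236_0_5] K_1236_0(2)]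
  have I_1236_5_0: "dd q 0 4 = (if Gf q 1 2 3 6 5 0 * Kf q 1 2 3 6 5 < 0 then 1 else 0) \<and> Gf q 1 2 3 6 5 0 \<noteq> 0"
    by (rule Fgen[OF no6]) (use B_1_2_3 B_1_2_6 B_1_2_5 B_6_5_3 B_1_6_3 B_1_5_3 B_6_5_2 B_6_2_3 B_5_2_3 B_6_5_1 B_3_6_5 B_1_3_2 B_2_6_1 in simp_all)
  have K_1236_5s: "sgn (Kf q 1 2 3 6 5) = -1" unfolding Kf_br using B_6_2_3 B_1_6_3 B_1_2_6 B_6_5_3 B_1_2_3 B_6_5_2 B_1_5_3 B_1_2_5 B_6_5_1 B_5_2_3 by (simp add: sgn_mult)
  have K_1236_5: "\<not> 0 < Kf q 1 2 3 6 5" "Kf q 1 2 3 6 5 \<noteq> 0" using sgn_neg_iff1[OF K_1236_5s] by auto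
  note F_1236_5_0 = Fbool[OF conjunct1[OF I_1236_5_0] conjunct2[OF I_1236_5_0] K_1236_5(2)]
  note SW_1236_5_0 = Gf_swap_pos[OF conjunct2[OF I_1236_5_0]]
  have I_1245_0_3: "dd q 3 6 = (if Gf q 1 2 4 5 0 3 * Kf q 1 2 4 5 0 < 0 then 1 else 0) \<and> Gf q 1 2 4 5 0 3 \<noteq> 0"
    by (rule Fgen[OF no6]) (use B_1_2_4 B_1_2_5 B_1_2_0 B_5_0_4 B_1_5_4 B_1_0_4 B_5_0_2 B_5_2_4 B_0_2_4 B_5_0_1 B_4_5_0 B_1_4_2 B_2_5_1 in simp_all)
  have K_1245_0s: "sgn (Kf q 1 2 4 5 0) = 1" unfolding Kf_br using B_1_5_4 B_1_0_4 B_1_2_0 B_5_0_2 B_0_2_4 B_5_0_1 B_5_0_4 B_1_2_5 B_5_2_4 B_1_2_4 by (simp add: sgn_mult)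
  have K_1245_0: "0 < Kf q 1 2 4 5 0" "Kf q 1 2 4 5 0 \<noteq> 0" using sgn_pos_iff1[OF K_1245_0s] by auto
  note F_1245_0_3 = Fbool[OF conjunct1[OF I_1245_0_3] conjunct2[OF I_1245_0_3] K_1245_0(2)]
  have I_1245_0_6: "dd q 6 3 = (if Gf q 1 2 4 5 0 6 * Kf q 1 2 4 5 0 < 0 then 1 else 0) \<and> Gf q 1 2 4 5 0 6 \<noteq> 0"
    by (rule Fgen[OF no6]) (use B_1_2_4 B_1_2_5 B_1_2_0 B_5_0_4 B_1_5_4 B_1_0_4 B_5_0_2 B_5_2_4 B_0_2_4 B_5_0_1 B_4_5_0 B_1_4_2 B_2_5_1 in simp_all)
  note F_1245_0_6 = Fbool[OF conjunct1[OF I_1245_0_6] conjunct2[OF I_1245_0_6] K_1245_0(2)]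
  have I_1245_3_6: "dd q 6 0 = (if Gf q 1 2 4 5 3 6 * Kf q 1 2 4 5 3 < 0 then 1 else 0) \<and> Gf q 1 2 4 5 3 6 \<noteq> 0"
    by (rule Fgen[OF no6]) (use B_1_2_4 B_1_2_5 B_1_2_3 B_5_3_4 B_1_5_4 B_1_3_4 B_5_3_2 B_5_2_4 B_3_2_4 B_5_3_1 B_4_5_3 B_1_4_2 B_2_5_1 in simp_all)
  have K_1245_3s: "sgn (Kf q 1 2 4 5 3) = 1" unfolding Kf_br using B_1_5_4 B_5_3_2 B_1_2_3 B_1_3_4 B_3_2_4 B_1_2_5 B_5_2_4 B_5_3_1 B_5_3_4 B_1_2_4 by (simp add: sgn_mult)
  have K_1245_3: "0 < Kf q 1 2 4 5 3" "Kf q 1 2 4 5 3 \<noteq> 0" using sgn_pos_iff1[OF K_1245_3s] by auto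
  note F_1245_3_6 = Fbool[OF conjunct1[OF I_1245_3_6] conjunct2[OF I_1245_3_6] K_1245_3(2)]
  have I_1245_6_3: "dd q 3 0 = (if Gf q 1 2 4 5 6 3 * Kf q 1 2 4 5 6 < 0 then 1 else 0) \<and> Gf q 1 2 4 5 6 3 \<noteq> 0"
    by (rule Fgen[OF no6]) (use B_1_2_4 B_1_2_5 B_1_2_6 B_5_6_4 B_1_5_4 B_1_6_4 B_5_6_2 B_5_2_4 B_6_2_4 B_5_6_1 B_4_5_6 B_1_4_2 B_2_5_1 in simp_all)
  have K_1245_6s: "sgn (Kf q 1 2 4 5 6) = 1" unfolding Kf_br using B_1_5_4 B_1_2_6 B_5_6_2 B_5_6_1 B_5_6_4 B_6_2_4 B_1_2_5 B_5_2_4 B_1_6_4 B_1_2_4 by (simp add: sgn_mult)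
  have K_1245_6: "0 < Kf q 1 2 4 5 6" "Kf q 1 2 4 5 6 \<noteq> 0" using sgn_pos_iff1[OF K_1245_6s] by auto
  note F_1245_6_3 = Fbool[OF conjunct1[OF I_1245_6_3] conjunct2[OF I_1245_6_3] K_1245_6(2)]
  note SW_1245_6_3 = Gf_swap_pos[OF conjunct2[OF I_1245_6_3]]
  have I_1256_0_4: "dd q 4 3 = (if Gf q 1 2 5 6 0 4 * Kf q 1 2 5 6 0 < 0 then 1 else 0) \<and> Gf q 1 2 5 6 0 4 \<noteq> 0"
    by (rule Fgen[OF no6]) (use B_1_2_5 B_1_2_6 B_1_2_0 B_6_0_5 B_1_6_5 B_1_0_5 B_6_0_2 B_6_2_5 B_0_2_5 B_6_0_1 B_5_6_0 B_1_5_2 B_2_6_1 in simp_all)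
  have K_1256_0s: "sgn (Kf q 1 2 5 6 0) = 1" unfolding Kf_br using B_1_2_0 B_1_2_6 B_6_2_5 B_6_0_2 B_1_6_5 B_6_0_5 B_1_2_5 B_0_2_5 B_6_0_1 B_1_0_5 by (simp add: sgn_mult)
  have K_1256_0: "0 < Kf q 1 2 5 6 0" "Kf q 1 2 5 6 0 \<noteq> 0" using sgn_pos_iff1[OF K_1256_0s] by auto
  note F_1256_0_4 = Fbool[OF conjunct1[OF I_1256_0_4] conjunct2[OF I_1256_0_4] K_1256_0(2)]
  have I_1256_3_4: "dd q 4 0 = (if Gf q 1 2 5 6 3 4 * Kf q 1 2 5 6 3 < 0 then 1 else 0) \<and> Gf q 1 2 5 6 3 4 \<noteq> 0"
    by (rule Fgen[OF no6]) (use B_1_2_5 B_1_2_6 B_1_2_3 B_6_3_5 B_1_6_5 B_1_3_5 B_6_3_2 B_6_2_5 B_3_2_5 B_6_3_1 B_5_6_3 B_1_5_2 B_2_6_1 in simp_all)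
  have K_1256_3s: "sgn (Kf q 1 2 5 6 3) = 1" unfolding Kf_br using B_1_3_5 B_1_2_6 B_1_2_3 B_6_3_2 B_6_2_5 B_3_2_5 B_6_3_5 B_1_6_5 B_1_2_5 B_6_3_1 by (simp add: sgn_mult)
  have K_1256_3: "0 < Kf q 1 2 5 6 3" "Kf q 1 2 5 6 3 \<noteq> 0" using sgn_pos_iff1[OF K_1256_3s] by auto
  note F_1256_3_4 = Fbool[OF conjunct1[OF I_1256_3_4] conjunct2[OF I_1256_3_4] K_1256_3(2)]
  have I_1256_4_0: "dd q 0 3 = (if Gf q 1 2 5 6 4 0 * Kf q 1 2 5 6 4 < 0 then 1 else 0) \<and> Gf q 1 2 5 6 4 0 \<noteq> 0"
    by (rule Fgen[OF no6]) (use B_1_2_5 B_1_2_6 B_1_2_4 B_6_4_5 B_1_6_5 B_1_4_5 B_6_4_2 B_6_2_5 B_4_2_5 B_6_4_1 B_5_6_4 B_1_5_2 B_2_6_1 in simp_all)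
  have K_1256_4s: "sgn (Kf q 1 2 5 6 4) = 1" unfolding Kf_br using B_4_2_5 B_1_2_6 B_6_2_5 B_6_4_2 B_6_4_5 B_1_6_5 B_1_2_5 B_1_4_5 B_1_2_4 B_6_4_1 by (simp add: sgn_mult)
  have K_1256_4: "0 < Kf q 1 2 5 6 4" "Kf q 1 2 5 6 4 \<noteq> 0" using sgn_pos_iff1[OF K_1256_4s] by auto
  note F_1256_4_0 = Fbool[OF conjunct1[OF I_1256_4_0] conjunct2[OF I_1256_4_0] K_1256_4(2)]
  note SW_1256_4_0 = Gf_swap_pos[OF conjunct2[OF I_1256_4_0]]
  have I_1256_4_3: "dd q 3 0 = (if Gf q 1 2 5 6 4 3 * Kf q 1 2 5 6 4 < 0 then 1 else 0) \<and> Gf q 1 2 5 6 4 3 \<noteq> 0"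
    by (rule Fgen[OF no6]) (use B_1_2_5 B_1_2_6 B_1_2_4 B_6_4_5 B_1_6_5 B_1_4_5 B_6_4_2 B_6_2_5 B_4_2_5 B_6_4_1 B_5_6_4 B_1_5_2 B_2_6_1 in simp_all)
  note F_1256_4_3 = Fbool[OF conjunct1[OF I_1256_4_3] conjunct2[OF I_1256_4_3] K_1256_4(2)]
  note SW_1256_4_3 = Gf_swap_pos[OF conjunct2[OF I_1256_4_3]]
  have I_1346_0_5: "dd q 5 2 = (if Gf q 1 3 4 6 0 5 * Kf q 1 3 4 6 0 < 0 then 1 else 0) \<and> Gf q 1 3 4 6 0 5 \<noteq> 0"
    by (rule Fgen[OF no6]) (use B_1_3_4 B_1_3_6 B_1_3_0 B_6_0_4 B_1_6_4 B_1_0_4 B_6_0_3 B_6_3_4 B_0_3_4 B_6_0_1 B_4_6_0 B_1_4_3 B_3_6_1 in simp_all)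
  have K_1346_0s: "sgn (Kf q 1 3 4 6 0) = 1" unfolding Kf_br using B_1_0_4 B_1_6_4 B_0_3_4 B_6_0_3 B_1_3_4 B_6_3_4 B_1_3_0 B_1_3_6 B_6_0_4 B_6_0_1 by (simp add: sgn_mult)
  have K_1346_0: "0 < Kf q 1 3 4 6 0" "Kf q 1 3 4 6 0 \<noteq> 0" using sgn_pos_iff1[OF K_1346_0s] by auto
  note F_1346_0_5 = Fbool[OF conjunct1[OF I_1346_0_5] conjunct2[OF I_1346_0_5] K_1346_0(2)]
  have I_1346_2_5: "dd q 5 0 = (if Gf q 1 3 4 6 2 5 * Kf q 1 3 4 6 2 < 0 then 1 else 0) \<and> Gf q 1 3 4 6 2 5 \<noteq> 0"
    by (rule Fgen[OF no6]) (use B_1_3_4 B_1_3_6 B_1_3_2 B_6_2_4 B_1_6_4 B_1_2_4 B_6_2_3 B_6_3_4 B_2_3_4 B_6_2_1 B_4_6_2 B_1_4_3 B_3_6_1 in simp_all)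
  have K_1346_2s: "sgn (Kf q 1 3 4 6 2) = -1" unfolding Kf_br using B_6_2_3 B_1_3_6 B_1_3_2 B_1_3_4 B_6_2_4 B_2_3_4 B_6_3_4 B_6_2_1 B_1_6_4 B_1_2_4 by (simp add: sgn_mult)
  have K_1346_2: "\<not> 0 < Kf q 1 3 4 6 2" "Kf q 1 3 4 6 2 \<noteq> 0" using sgn_neg_iff1[OF K_1346_2s] by auto
  note F_1346_2_5 = Fbool[OF conjunct1[OF I_1346_2_5] conjunct2[OF I_1346_2_5] K_1346_2(2)]
  have I_1346_5_0: "dd q 0 2 = (if Gf q 1 3 4 6 5 0 * Kf q 1 3 4 6 5 < 0 then 1 else 0) \<and> Gf q 1 3 4 6 5 0 \<noteq> 0"
    by (rule Fgen[OF no6]) (use B_1_3_4 B_1_3_6 B_1_3_5 B_6_5_4 B_1_6_4 B_1_5_4 B_6_5_3 B_6_3_4 B_5_3_4 B_6_5_1 B_4_6_5 B_1_4_3 B_3_6_1 in simp_all)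
  have K_1346_5s: "sgn (Kf q 1 3 4 6 5) = -1" unfolding Kf_br using B_1_3_6 B_1_5_4 B_1_3_5 B_6_5_3 B_1_3_4 B_6_3_4 B_6_5_1 B_1_6_4 B_5_3_4 B_6_5_4 by (simp add: sgn_mult)
  have K_1346_5: "\<not> 0 < Kf q 1 3 4 6 5" "Kf q 1 3 4 6 5 \<noteq> 0" using sgn_neg_iff1[OF K_1346_5s] by auto
  note F_1346_5_0 = Fbool[OF conjunct1[OF I_1346_5_0] conjunct2[OF I_1346_5_0] K_1346_5(2)]
  note SW_1346_5_0 = Gf_swap_pos[OF conjunct2[OF I_1346_5_0]]
  have I_1346_5_2: "dd q 2 0 = (if Gf q 1 3 4 6 5 2 * Kf q 1 3 4 6 5 < 0 then 1 else 0) \<and> Gf q 1 3 4 6 5 2 \<noteq> 0"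
    by (rule Fgen[OF no6]) (use B_1_3_4 B_1_3_6 B_1_3_5 B_6_5_4 B_1_6_4 B_1_5_4 B_6_5_3 B_6_3_4 B_5_3_4 B_6_5_1 B_4_6_5 B_1_4_3 B_3_6_1 in simp_all)
  note F_1346_5_2 = Fbool[OF conjunct1[OF I_1346_5_2] conjunct2[OF I_1346_5_2] K_1346_5(2)]
  note SW_1346_5_2 = Gf_swap_pos[OF conjunct2[OF I_1346_5_2]]
  have I_1356_0_2: "dd q 2 4 = (if Gf q 1 3 5 6 0 2 * Kf q 1 3 5 6 0 < 0 then 1 else 0) \<and> Gf q 1 3 5 6 0 2 \<noteq> 0"
    by (rule Fgen[OF no6]) (use B_1_3_5 B_1_3_6 B_1_3_0 B_6_0_5 B_1_6_5 B_1_0_5 B_6_0_3 B_6_3_5 B_0_3_5 B_6_0_1 B_5_6_0 B_1_5_3 B_3_6_1 in simp_all)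
  have K_1356_0s: "sgn (Kf q 1 3 5 6 0) = 1" unfolding Kf_br using B_1_3_5 B_6_0_3 B_6_3_5 B_6_0_1 B_1_6_5 B_6_0_5 B_1_3_0 B_1_3_6 B_0_3_5 B_1_0_5 by (simp add: sgn_mult)
  have K_1356_0: "0 < Kf q 1 3 5 6 0" "Kf q 1 3 5 6 0 \<noteq> 0" using sgn_pos_iff1[OF K_1356_0s] by auto
  note F_1356_0_2 = Fbool[OF conjunct1[OF I_1356_0_2] conjunct2[OF I_1356_0_2] K_1356_0(2)]
  have I_1356_2_0: "dd q 0 4 = (if Gf q 1 3 5 6 2 0 * Kf q 1 3 5 6 2 < 0 then 1 else 0) \<and> Gf q 1 3 5 6 2 0 \<noteq> 0"
    by (rule Fgen[OF no6]) (use B_1_3_5 B_1_3_6 B_1_3_2 B_6_2_5 B_1_6_5 B_1_2_5 B_6_2_3 B_6_3_5 B_2_3_5 B_6_2_1 B_5_6_2 B_1_5_3 B_3_6_1 in simp_all)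
  have K_1356_2s: "sgn (Kf q 1 3 5 6 2) = -1" unfolding Kf_br using B_6_2_3 B_1_3_2 B_1_3_5 B_6_2_5 B_2_3_5 B_6_3_5 B_1_6_5 B_1_2_5 B_6_2_1 B_1_3_6 by (simp add: sgn_mult)
  have K_1356_2: "\<not> 0 < Kf q 1 3 5 6 2" "Kf q 1 3 5 6 2 \<noteq> 0" using sgn_neg_iff1[OF K_1356_2s] by auto
  note F_1356_2_0 = Fbool[OF conjunct1[OF I_1356_2_0] conjunct2[OF I_1356_2_0] K_1356_2(2)]
  note SW_1356_2_0 = Gf_swap_pos[OF conjunct2[OF I_1356_2_0]]
  have I_1456_0_2: "dd q 2 3 = (if Gf q 1 4 5 6 0 2 * Kf q 1 4 5 6 0 < 0 then 1 else 0) \<and> Gf q 1 4 5 6 0 2 \<noteq> 0"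
    by (rule Fgen[OF no6]) (use B_1_4_5 B_1_4_6 B_1_4_0 B_6_0_5 B_1_6_5 B_1_0_5 B_6_0_4 B_6_4_5 B_0_4_5 B_6_0_1 B_5_6_0 B_1_5_4 B_4_6_1 in simp_all)
  have K_1456_0s: "sgn (Kf q 1 4 5 6 0) = 1" unfolding Kf_br using B_1_4_0 B_1_4_6 B_6_4_5 B_1_6_5 B_6_0_5 B_6_0_1 B_1_4_5 B_6_0_4 B_0_4_5 B_1_0_5 by (simp add: sgn_mult)
  have K_1456_0: "0 < Kf q 1 4 5 6 0" "Kf q 1 4 5 6 0 \<noteq> 0" using sgn_pos_iff1[OF K_1456_0s] by auto
  note F_1456_0_2 = Fbool[OF conjunct1[OF I_1456_0_2] conjunct2[OF I_1456_0_2] K_1456_0(2)]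
  have I_1456_3_0: "dd q 0 2 = (if Gf q 1 4 5 6 3 0 * Kf q 1 4 5 6 3 < 0 then 1 else 0) \<and> Gf q 1 4 5 6 3 0 \<noteq> 0"
    by (rule Fgen[OF no6]) (use B_1_4_5 B_1_4_6 B_1_4_3 B_6_3_5 B_1_6_5 B_1_3_5 B_6_3_4 B_6_4_5 B_3_4_5 B_6_3_1 B_5_6_3 B_1_5_4 B_4_6_1 in simp_all)
  have K_1456_3s: "sgn (Kf q 1 4 5 6 3) = -1" unfolding Kf_br using B_1_3_5 B_1_4_6 B_6_3_5 B_1_4_3 B_6_4_5 B_1_6_5 B_3_4_5 B_6_3_4 B_6_3_1 B_1_4_5 by (simp add: sgn_mult)
  have K_1456_3: "\<not> 0 < Kf q 1 4 5 6 3" "Kf q 1 4 5 6 3 \<noteq> 0" using sgn_neg_iff1[OF K_1456_3s] by auto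
  note F_1456_3_0 = Fbool[OF conjunct1[OF I_1456_3_0] conjunct2[OF I_1456_3_0] K_1456_3(2)]
  note SW_1456_3_0 = Gf_swap_pos[OF conjunct2[OF I_1456_3_0]]
  have I_1456_3_2: "dd q 2 0 = (if Gf q 1 4 5 6 3 2 * Kf q 1 4 5 6 3 < 0 then 1 else 0) \<and> Gf q 1 4 5 6 3 2 \<noteq> 0"
    by (rule Fgen[OF no6]) (use B_1_4_5 B_1_4_6 B_1_4_3 B_6_3_5 B_1_6_5 B_1_3_5 B_6_3_4 B_6_4_5 B_3_4_5 B_6_3_1 B_5_6_3 B_1_5_4 B_4_6_1 in simp_all)
  note F_1456_3_2 = Fbool[OF conjunct1[OF I_1456_3_2] conjunct2[OF I_1456_3_2] K_1456_3(2)]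
  note SW_1456_3_2 = Gf_swap_pos[OF conjunct2[OF I_1456_3_2]]
  have I_2345_1_6: "dd q 6 0 = (if Gf q 2 3 4 5 1 6 * Kf q 2 3 4 5 1 < 0 then 1 else 0) \<and> Gf q 2 3 4 5 1 6 \<noteq> 0"
    by (rule Fgen[OF no6]) (use B_2_3_4 B_2_3_5 B_2_3_1 B_5_1_4 B_2_5_4 B_2_1_4 B_5_1_3 B_5_3_4 B_1_3_4 B_5_1_2 B_4_5_1 B_2_4_3 B_3_5_2 in simp_all)
  have K_2345_1s: "sgn (Kf q 2 3 4 5 1) = 1" unfolding Kf_br using B_5_1_2 B_2_3_5 B_1_3_4 B_2_5_4 B_5_1_4 B_2_3_4 B_2_3_1 B_5_3_4 B_5_1_3 B_2_1_4 by (simp add: sgn_mult)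
  have K_2345_1: "0 < Kf q 2 3 4 5 1" "Kf q 2 3 4 5 1 \<noteq> 0" using sgn_pos_iff1[OF K_2345_1s] by auto
  note F_2345_1_6 = Fbool[OF conjunct1[OF I_2345_1_6] conjunct2[OF I_2345_1_6] K_2345_1(2)]
  have I_2345_6_1: "dd q 1 0 = (if Gf q 2 3 4 5 6 1 * Kf q 2 3 4 5 6 < 0 then 1 else 0) \<and> Gf q 2 3 4 5 6 1 \<noteq> 0"
    by (rule Fgen[OF no6]) (use B_2_3_4 B_2_3_5 B_2_3_6 B_5_6_4 B_2_5_4 B_2_6_4 B_5_6_3 B_5_3_4 B_6_3_4 B_5_6_2 B_4_5_6 B_2_4_3 B_3_5_2 in simp_all)
  have K_2345_6s: "sgn (Kf q 2 3 4 5 6) = 1" unfolding Kf_br using B_2_3_6 B_5_6_2 B_5_3_4 B_2_3_5 B_5_6_4 B_2_5_4 B_2_3_4 B_6_3_4 B_5_6_3 B_2_6_4 by (simp add: sgn_mult)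
  have K_2345_6: "0 < Kf q 2 3 4 5 6" "Kf q 2 3 4 5 6 \<noteq> 0" using sgn_pos_iff1[OF K_2345_6s] by auto
  note F_2345_6_1 = Fbool[OF conjunct1[OF I_2345_6_1] conjunct2[OF I_2345_6_1] K_2345_6(2)]
  note SW_2345_6_1 = Gf_swap_pos[OF conjunct2[OF I_2345_6_1]]
  have I_2346_0_1: "dd q 1 5 = (if Gf q 2 3 4 6 0 1 * Kf q 2 3 4 6 0 < 0 then 1 else 0) \<and> Gf q 2 3 4 6 0 1 \<noteq> 0"
    by (rule Fgen[OF no6]) (use B_2_3_4 B_2_3_6 B_2_3_0 B_6_0_4 B_2_6_4 B_2_0_4 B_6_0_3 B_6_3_4 B_0_3_4 B_6_0_2 B_4_6_0 B_2_4_3 B_3_6_2 in simp_all)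
  have K_2346_0s: "sgn (Kf q 2 3 4 6 0) = 1" unfolding Kf_br using B_2_3_6 B_0_3_4 B_6_0_3 B_6_0_2 B_2_0_4 B_2_3_4 B_6_3_4 B_6_0_4 B_2_6_4 B_2_3_0 by (simp add: sgn_mult)
  have K_2346_0: "0 < Kf q 2 3 4 6 0" "Kf q 2 3 4 6 0 \<noteq> 0" using sgn_pos_iff1[OF K_2346_0s] by auto
  note F_2346_0_1 = Fbool[OF conjunct1[OF I_2346_0_1] conjunct2[OF I_2346_0_1] K_2346_0(2)]
  have I_2346_1_0: "dd q 0 5 = (if Gf q 2 3 4 6 1 0 * Kf q 2 3 4 6 1 < 0 then 1 else 0) \<and> Gf q 2 3 4 6 1 0 \<noteq> 0"
    by (rule Fgen[OF no6]) (use B_2_3_4 B_2_3_6 B_2_3_1 B_6_1_4 B_2_6_4 B_2_1_4 B_6_1_3 B_6_3_4 B_1_3_4 B_6_1_2 B_4_6_1 B_2_4_3 B_3_6_2 in simp_all)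
  have K_2346_1s: "sgn (Kf q 2 3 4 6 1) = 1" unfolding Kf_br using B_6_1_2 B_2_3_6 B_6_1_3 B_1_3_4 B_6_1_4 B_2_3_4 B_6_3_4 B_2_3_1 B_2_6_4 B_2_1_4 by (simp add: sgn_mult)
  have K_2346_1: "0 < Kf q 2 3 4 6 1" "Kf q 2 3 4 6 1 \<noteq> 0" using sgn_pos_iff1[OF K_2346_1s] by auto
  note F_2346_1_0 = Fbool[OF conjunct1[OF I_2346_1_0] conjunct2[OF I_2346_1_0] K_2346_1(2)]
  note SW_2346_1_0 = Gf_swap_pos[OF conjunct2[OF I_2346_1_0]]
  have I_2346_1_5: "dd q 5 0 = (if Gf q 2 3 4 6 1 5 * Kf q 2 3 4 6 1 < 0 then 1 else 0) \<and> Gf q 2 3 4 6 1 5 \<noteq> 0"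
    by (rule Fgen[OF no6]) (use B_2_3_4 B_2_3_6 B_2_3_1 B_6_1_4 B_2_6_4 B_2_1_4 B_6_1_3 B_6_3_4 B_1_3_4 B_6_1_2 B_4_6_1 B_2_4_3 B_3_6_2 in simp_all)
  note F_2346_1_5 = Fbool[OF conjunct1[OF I_2346_1_5] conjunct2[OF I_2346_1_5] K_2346_1(2)]
  have I_2346_5_0: "dd q 0 1 = (if Gf q 2 3 4 6 5 0 * Kf q 2 3 4 6 5 < 0 then 1 else 0) \<and> Gf q 2 3 4 6 5 0 \<noteq> 0"
    by (rule Fgen[OF no6]) (use B_2_3_4 B_2_3_6 B_2_3_5 B_6_5_4 B_2_6_4 B_2_5_4 B_6_5_3 B_6_3_4 B_5_3_4 B_6_5_2 B_4_6_5 B_2_4_3 B_3_6_2 in simp_all)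
  have K_2346_5s: "sgn (Kf q 2 3 4 6 5) = -1" unfolding Kf_br using B_2_3_6 B_6_5_3 B_2_3_5 B_6_5_2 B_2_5_4 B_2_3_4 B_6_3_4 B_5_3_4 B_6_5_4 B_2_6_4 by (simp add: sgn_mult)
  have K_2346_5: "\<not> 0 < Kf q 2 3 4 6 5" "Kf q 2 3 4 6 5 \<noteq> 0" using sgn_neg_iff1[OF K_2346_5s] by auto
  note F_2346_5_0 = Fbool[OF conjunct1[OF I_2346_5_0] conjunct2[OF I_2346_5_0] K_2346_5(2)]
  note SW_2346_5_0 = Gf_swap_pos[OF conjunct2[OF I_2346_5_0]]
  have I_2456_0_3: "dd q 3 1 = (if Gf q 2 4 5 6 0 3 * Kf q 2 4 5 6 0 < 0 then 1 else 0) \<and> Gf q 2 4 5 6 0 3 \<noteq> 0"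
    by (rule Fgen[OF no6]) (use B_2_4_5 B_2_4_6 B_2_4_0 B_6_0_5 B_2_6_5 B_2_0_5 B_6_0_4 B_6_4_5 B_0_4_5 B_6_0_2 B_5_6_0 B_2_5_4 B_4_6_2 in simp_all)
  have K_2456_0s: "sgn (Kf q 2 4 5 6 0) = 1" unfolding Kf_br using B_2_4_5 B_2_0_5 B_6_4_5 B_6_0_2 B_2_4_0 B_6_0_5 B_2_6_5 B_2_4_6 B_6_0_4 B_0_4_5 by (simp add: sgn_mult)
  have K_2456_0: "0 < Kf q 2 4 5 6 0" "Kf q 2 4 5 6 0 \<noteq> 0" using sgn_pos_iff1[OF K_2456_0s] by auto
  note F_2456_0_3 = Fbool[OF conjunct1[OF I_2456_0_3] conjunct2[OF I_2456_0_3] K_2456_0(2)]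
  have I_2456_3_0: "dd q 0 1 = (if Gf q 2 4 5 6 3 0 * Kf q 2 4 5 6 3 < 0 then 1 else 0) \<and> Gf q 2 4 5 6 3 0 \<noteq> 0"
    by (rule Fgen[OF no6]) (use B_2_4_5 B_2_4_6 B_2_4_3 B_6_3_5 B_2_6_5 B_2_3_5 B_6_3_4 B_6_4_5 B_3_4_5 B_6_3_2 B_5_6_3 B_2_5_4 B_4_6_2 in simp_all)
  have K_2456_3s: "sgn (Kf q 2 4 5 6 3) = -1" unfolding Kf_br using B_2_4_5 B_6_3_2 B_2_3_5 B_6_3_5 B_6_4_5 B_3_4_5 B_2_6_5 B_2_4_3 B_6_3_4 B_2_4_6 by (simp add: sgn_mult)
  have K_2456_3: "\<not> 0 < Kf q 2 4 5 6 3" "Kf q 2 4 5 6 3 \<noteq> 0" using sgn_neg_iff1[OF K_2456_3s] by auto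
  note F_2456_3_0 = Fbool[OF conjunct1[OF I_2456_3_0] conjunct2[OF I_2456_3_0] K_2456_3(2)]
  note SW_2456_3_0 = Gf_swap_pos[OF conjunct2[OF I_2456_3_0]]
  have L_0123_0213_eq: "(det3 (q 0) (q 2) (q 4) * det3 (q 1) (q 3) (q 4)) * Gf q 0 1 2 3 5 6 + (- (det3 (q 0) (q 2) (q 5) * det3 (q 1) (q 3) (q 5))) * Gf q 0 1 2 3 4 6 + (det3 (q 0) (q 2) (q 6) * det3 (q 1) (q 3) (q 6)) * Gf q 0 1 2 3 4 5 = 0"
    by (rule LPgen) (use B_0_1_2 in auto)
  have L_0123_0213_c0: "0 < det3 (q 0) (q 2) (q 4) * det3 (q 1) (q 3) (q 4)" "det3 (q 0) (q 2) (q 4) * det3 (q 1) (q 3) (q 4) \<noteq> 0" using B_0_2_4 B_1_3_4 by (simp_all add: zero_less_mult_iff mult_less_0_iff)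
  have L_0123_0213_c1: "\<not> 0 < - (det3 (q 0) (q 2) (q 5) * det3 (q 1) (q 3) (q 5))" "- (det3 (q 0) (q 2) (q 5) * det3 (q 1) (q 3) (q 5)) \<noteq> 0" using B_0_2_5 B_1_3_5 by (simp_all add: zero_less_mult_iff mult_less_0_iff)
  have L_0123_0213_c2: "0 < det3 (q 0) (q 2) (q 6) * det3 (q 1) (q 3) (q 6)" "det3 (q 0) (q 2) (q 6) * det3 (q 1) (q 3) (q 6) \<noteq> 0" using B_0_2_6 B_1_3_6 by (simp_all add: zero_less_mult_iff mult_less_0_iff)
  note L_0123_0213 = three_sign[OF L_0123_0213_eq Gf_swap_nz[OF conjunct2[OF I_0123_6_5]] conjunct2[OF I_0123_4_6] conjunct2[OF I_0123_4_5] L_0123_0213_c0(2) L_0123_0213_c1(2) L_0123_0213_c2(2)]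
  have L_0125_0215_eq: "(det3 (q 0) (q 2) (q 3) * det3 (q 1) (q 5) (q 3)) * Gf q 0 1 2 5 4 6 + (- (det3 (q 0) (q 2) (q 4) * det3 (q 1) (q 5) (q 4))) * Gf q 0 1 2 5 3 6 + (det3 (q 0) (q 2) (q 6) * det3 (q 1) (q 5) (q 6)) * Gf q 0 1 2 5 3 4 = 0"
    by (rule LPgen) (use B_0_1_2 in auto)
  have L_0125_0215_c0: "\<not> 0 < det3 (q 0) (q 2) (q 3) * det3 (q 1) (q 5) (q 3)" "det3 (q 0) (q 2) (q 3) * det3 (q 1) (q 5) (q 3) \<noteq> 0" using B_0_2_3 B_1_5_3 by (simp_all add: zero_less_mult_iff mult_less_0_iff)
  have L_0125_0215_c1: "0 < - (det3 (q 0) (q 2) (q 4) * det3 (q 1) (q 5) (q 4))" "- (det3 (q 0) (q 2) (q 4) * det3 (q 1) (q 5) (q 4)) \<noteq> 0" using B_0_2_4 B_1_5_4 by (simp_all add: zero_less_mult_iff mult_less_0_iff)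
  have L_0125_0215_c2: "0 < det3 (q 0) (q 2) (q 6) * det3 (q 1) (q 5) (q 6)" "det3 (q 0) (q 2) (q 6) * det3 (q 1) (q 5) (q 6) \<noteq> 0" using B_0_2_6 B_1_5_6 by (simp_all add: zero_less_mult_iff mult_less_0_iff)
  note L_0125_0215 = three_sign[OF L_0125_0215_eq conjunct2[OF I_0125_4_6] Gf_swap_nz[OF conjunct2[OF I_0125_6_3]] conjunct2[OF I_0125_3_4] L_0125_0215_c0(2) L_0125_0215_c1(2) L_0125_0215_c2(2)]
  have L_0346_0634_eq: "(det3 (q 0) (q 6) (q 1) * det3 (q 3) (q 4) (q 1)) * Gf q 0 3 4 6 2 5 + (- (det3 (q 0) (q 6) (q 2) * det3 (q 3) (q 4) (q 2))) * Gf q 0 3 4 6 1 5 + (det3 (q 0) (q 6) (q 5) * det3 (q 3) (q 4) (q 5)) * Gf q 0 3 4 6 1 2 = 0"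
    by (rule LPgen) (use B_0_3_4 in auto)
  have L_0346_0634_c0: "\<not> 0 < det3 (q 0) (q 6) (q 1) * det3 (q 3) (q 4) (q 1)" "det3 (q 0) (q 6) (q 1) * det3 (q 3) (q 4) (q 1) \<noteq> 0" using B_0_6_1 B_3_4_1 by (simp_all add: zero_less_mult_iff mult_less_0_iff)
  have L_0346_0634_c1: "0 < - (det3 (q 0) (q 6) (q 2) * det3 (q 3) (q 4) (q 2))" "- (det3 (q 0) (q 6) (q 2) * det3 (q 3) (q 4) (q 2)) \<noteq> 0" using B_0_6_2 B_3_4_2 by (simp_all add: zero_less_mult_iff mult_less_0_iff)
  have L_0346_0634_c2: "\<not> 0 < det3 (q 0) (q 6) (q 5) * det3 (q 3) (q 4) (q 5)" "det3 (q 0) (q 6) (q 5) * det3 (q 3) (q 4) (q 5) \<noteq> 0" using B_0_6_5 B_3_4_5 by (simp_all add: zero_less_mult_iff mult_less_0_iff)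
  note L_0346_0634 = three_sign[OF L_0346_0634_eq conjunct2[OF I_0346_2_5] conjunct2[OF I_0346_1_5] Gf_swap_nz[OF conjunct2[OF I_0346_2_1]] L_0346_0634_c0(2) L_0346_0634_c1(2) L_0346_0634_c2(2)]
  have L_1245_1524_eq: "(det3 (q 1) (q 5) (q 0) * det3 (q 2) (q 4) (q 0)) * Gf q 1 2 4 5 3 6 + (- (det3 (q 1) (q 5) (q 3) * det3 (q 2) (q 4) (q 3))) * Gf q 1 2 4 5 0 6 + (det3 (q 1) (q 5) (q 6) * det3 (q 2) (q 4) (q 6)) * Gf q 1 2 4 5 0 3 = 0"
    by (rule LPgen) (use B_1_2_4 in auto)
  have L_1245_1524_c0: "0 < det3 (q 1) (q 5) (q 0) * det3 (q 2) (q 4) (q 0)" "det3 (q 1) (q 5) (q 0) * det3 (q 2) (q 4) (q 0) \<noteq> 0" using B_1_5_0 B_2_4_0 by (simp_all add: zero_less_mult_iff mult_less_0_iff)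
  have L_1245_1524_c1: "\<not> 0 < - (det3 (q 1) (q 5) (q 3) * det3 (q 2) (q 4) (q 3))" "- (det3 (q 1) (q 5) (q 3) * det3 (q 2) (q 4) (q 3)) \<noteq> 0" using B_1_5_3 B_2_4_3 by (simp_all add: zero_less_mult_iff mult_less_0_iff)
  have L_1245_1524_c2: "0 < det3 (q 1) (q 5) (q 6) * det3 (q 2) (q 4) (q 6)" "det3 (q 1) (q 5) (q 6) * det3 (q 2) (q 4) (q 6) \<noteq> 0" using B_1_5_6 B_2_4_6 by (simp_all add: zero_less_mult_iff mult_less_0_iff)
  note L_1245_1524 = three_sign[OF L_1245_1524_eq conjunct2[OF I_1245_3_6] conjunct2[OF I_1245_0_6] conjunct2[OF I_1245_0_3] L_1245_1524_c0(2) L_1245_1524_c1(2) L_1245_1524_c2(2)]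
  have L_1456_1456_eq: "(det3 (q 1) (q 4) (q 0) * det3 (q 5) (q 6) (q 0)) * Gf q 1 4 5 6 2 3 + (- (det3 (q 1) (q 4) (q 2) * det3 (q 5) (q 6) (q 2))) * Gf q 1 4 5 6 0 3 + (det3 (q 1) (q 4) (q 3) * det3 (q 5) (q 6) (q 3)) * Gf q 1 4 5 6 0 2 = 0"
    by (rule LPgen) (use B_1_4_5 in auto)
  have L_1456_1456_c0: "0 < det3 (q 1) (q 4) (q 0) * det3 (q 5) (q 6) (q 0)" "det3 (q 1) (q 4) (q 0) * det3 (q 5) (q 6) (q 0) \<noteq> 0" using B_1_4_0 B_5_6_0 by (simp_all add: zero_less_mult_iff mult_less_0_iff)
  have L_1456_1456_c1: "0 < - (det3 (q 1) (q 4) (q 2) * det3 (q 5) (q 6) (q 2))" "- (det3 (q 1) (q 4) (q 2) * det3 (q 5) (q 6) (q 2)) \<noteq> 0" using B_1_4_2 B_5_6_2 by (simp_all add: zero_less_mult_iff mult_less_0_iff)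
  have L_1456_1456_c2: "\<not> 0 < det3 (q 1) (q 4) (q 3) * det3 (q 5) (q 6) (q 3)" "det3 (q 1) (q 4) (q 3) * det3 (q 5) (q 6) (q 3) \<noteq> 0" using B_1_4_3 B_5_6_3 by (simp_all add: zero_less_mult_iff mult_less_0_iff)
  note L_1456_1456 = three_sign[OF L_1456_1456_eq Gf_swap_nz[OF conjunct2[OF I_1456_3_2]] Gf_swap_nz[OF conjunct2[OF I_1456_3_0]] conjunct2[OF I_1456_0_2] L_1456_1456_c0(2) L_1456_1456_c1(2) L_1456_1456_c2(2)]
  have L_2346_2436_eq: "(det3 (q 2) (q 4) (q 0) * det3 (q 3) (q 6) (q 0)) * Gf q 2 3 4 6 1 5 + (- (det3 (q 2) (q 4) (q 1) * det3 (q 3) (q 6) (q 1))) * Gf q 2 3 4 6 0 5 + (det3 (q 2) (q 4) (q 5) * det3 (q 3) (q 6) (q 5)) * Gf q 2 3 4 6 0 1 = 0"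
    by (rule LPgen) (use B_2_3_4 in auto)
  have L_2346_2436_c0: "0 < det3 (q 2) (q 4) (q 0) * det3 (q 3) (q 6) (q 0)" "det3 (q 2) (q 4) (q 0) * det3 (q 3) (q 6) (q 0) \<noteq> 0" using B_2_4_0 B_3_6_0 by (simp_all add: zero_less_mult_iff mult_less_0_iff)
  have L_2346_2436_c1: "\<not> 0 < - (det3 (q 2) (q 4) (q 1) * det3 (q 3) (q 6) (q 1))" "- (det3 (q 2) (q 4) (q 1) * det3 (q 3) (q 6) (q 1)) \<noteq> 0" using B_2_4_1 B_3_6_1 by (simp_all add: zero_less_mult_iff mult_less_0_iff)
  have L_2346_2436_c2: "\<not> 0 < det3 (q 2) (q 4) (q 5) * det3 (q 3) (q 6) (q 5)" "det3 (q 2) (q 4) (q 5) * det3 (q 3) (q 6) (q 5) \<noteq> 0" using B_2_4_5 B_3_6_5 by (simp_all add: zero_less_mult_iff mult_less_0_iff)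
  note L_2346_2436 = three_sign[OF L_2346_2436_eq conjunct2[OF I_2346_1_5] Gf_swap_nz[OF conjunct2[OF I_2346_5_0]] conjunct2[OF I_2346_0_1] L_2346_2436_c0(2) L_2346_2436_c1(2) L_2346_2436_c2(2)]
  have BB_0: "((Dd q 0 2 \<longleftrightarrow> \<not> Dd q 1 2) \<and> (Dd q 0 3 \<longleftrightarrow> \<not> Dd q 1 3) \<and> (Dd q 0 4 \<longleftrightarrow> \<not> Dd q 1 4) \<and> (Dd q 0 5 \<longleftrightarrow> \<not> Dd q 1 5) \<and> (Dd q 0 6 \<longleftrightarrow> \<not> Dd q 1 6)) \<and> ((Dd q 0 1 \<or> Dd q 0 2 \<or> Dd q 0 3 \<or> Dd q 0 4 \<or> Dd q 0 5 \<or> Dd q 0 6) \<and> (\<not> Dd q 0 1 \<or> \<not> Dd q 0 2 \<or> \<not> Dd q 0 3 \<or> \<not> Dd q 0 4 \<or> \<not> Dd q 0 5 \<or> \<not> Dd q 0 6) \<longrightarrow> (Dd q 0 1 \<longleftrightarrow> Dd q 1 0) \<and> (Dd q 6 0 \<longleftrightarrow> Dd q 0 6) \<and> (Dd q 6 0 \<longleftrightarrow> \<not> Dd q 0 1))"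
    unfolding Dd_def using F_1234_5_0 K_1234_5(1) SW_1234_5_0 F_0123_4_6 K_0123_4(1) F_1456_3_0 K_1456_3(1) SW_1456_3_0 F_1236_5_0 K_1236_5(1) SW_1236_5_0 F_1236_0_5 K_1236_0(1) F_0135_2_4 K_0135_2(1) F_0346_5_1 K_0346_5(1) SW_0346_5_1 F_0456_1_2 K_0456_1(1) F_2346_1_0 K_2346_1(1) SW_2346_1_0 F_0256_4_1 K_0256_4(1) SW_0256_4_1 F_0123_6_5 K_0123_6(1) SW_0123_6_5 F_0234_6_1 K_0234_6(1) SW_0234_6_1 F_1234_6_5 K_1234_6(1) SW_1234_6_5 F_0125_3_4 K_0125_3(1) F_0256_1_4 K_0256_1(1) F_0356_1_2 K_0356_1(1) F_0345_2_1 K_0345_2(1) SW_0345_2_1 F_0124_5_3 K_0124_5(1) SW_0124_5_3 L_0125_0215 L_0125_0215_c0(1) L_0125_0215_c1(1) L_0125_0215_c2(1) F_0156_3_2 K_0156_3(1) SW_0156_3_2 F_0125_4_6 K_0125_4(1) F_0234_1_6 K_0234_1(1) F_0356_2_1 K_0356_2(1) SW_0356_2_1 F_2345_1_6 K_2345_1(1) F_2346_5_0 K_2346_5(1) SW_2346_5_0 F_2346_0_1 K_2346_0(1) F_1234_0_5 K_1234_0(1) F_0124_3_5 K_0124_3(1) F_0456_2_1 K_0456_2(1) SW_0456_2_1 F_0125_6_3 K_0125_6(1) SW_0125_6_3 F_0346_2_5 K_0346_2(1) F_1245_3_6 K_1245_3(1) F_0156_2_3 K_0156_2(1) F_1346_5_0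 K_1346_5(1) SW_1346_5_0 F_0125_6_4 K_0125_6(1) SW_0125_6_4 L_1456_1456 L_1456_1456_c0(1) L_1456_1456_c1(1) L_1456_1456_c2(1) F_1356_2_0 K_1356_2(1) SW_1356_2_0 F_2345_6_1 K_2345_6(1) SW_2345_6_1 F_1346_2_5 K_1346_2(1) F_0256_3_4 K_0256_3(1) F_1245_0_6 K_1245_0(1) F_0256_4_3 K_0256_4(1) SW_0256_4_3 F_0346_1_5 K_0346_1(1) F_1256_4_0 K_1256_4(1) SW_1256_4_0 F_0236_5_4 K_0236_5(1) SW_0236_5_4 F_1356_0_2 K_1356_0(1) F_0123_4_5 K_0123_4(1) F_0135_4_2 K_0135_4(1) SW_0135_4_2 L_0123_0213 L_0123_0213_c0(1) L_0123_0213_c1(1) L_0123_0213_c2(1) F_1456_3_2 K_1456_3(1) SW_1456_3_2 F_1256_0_4 K_1256_0(1) F_2346_1_5 K_2346_1(1) L_0346_0634 L_0346_0634_c0(1) L_0346_0634_c1(1) L_0346_0634_c2(1) L_2346_2436 L_2346_2436_c0(1) L_2346_2436_c1(1) L_2346_2436_c2(1) F_2456_3_0 K_2456_3(1) SW_2456_3_0 F_0345_1_2 K_0345_1(1) F_0236_4_5 K_0236_4(1) F_2456_0_3 K_2456_0(1) F_1234_5_6 K_1234_5(1) F_1346_0_5 K_1346_0(1) F_0346_2_1 K_0346_2(1) SW_0346_2_1 F_1245_0_3 K_1245_0(1) F_1346_5_2 K_1346_5(1) SW_1346_5_2 F_1456_0_2 K_1456_0(1) F_0125_4_3 K_0125_4(1)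 SW_0125_4_3 L_1245_1524 L_1245_1524_c0(1) L_1245_1524_c1(1) L_1245_1524_c2(1) by sat
  have BB_1: "((Dd q 1 0 \<longleftrightarrow> \<not> Dd q 2 0) \<and> (Dd q 1 3 \<longleftrightarrow> \<not> Dd q 2 3) \<and> (Dd q 1 4 \<longleftrightarrow> \<not> Dd q 2 4) \<and> (Dd q 1 5 \<longleftrightarrow> \<not> Dd q 2 5) \<and> (Dd q 1 6 \<longleftrightarrow> \<not> Dd q 2 6)) \<and> ((Dd q 1 0 \<or> Dd q 1 2 \<or> Dd q 1 3 \<or> Dd q 1 4 \<or> Dd q 1 5 \<or> Dd q 1 6) \<and> (\<not> Dd q 1 0 \<or> \<not> Dd q 1 2 \<or> \<not> Dd q 1 3 \<or> \<not> Dd q 1 4 \<or> \<not> Dd q 1 5 \<or> \<not> Dd q 1 6) \<longrightarrow> (Dd q 1 2 \<longleftrightarrow> Dd q 2 1) \<and> (Dd q 0 1 \<longleftrightarrow> Dd q 1 0) \<and> (Dd q 0 1 \<longleftrightarrow> \<not> Dd q 1 2))"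
    unfolding Dd_def using F_1456_3_0 K_1456_3(1) SW_1456_3_0 F_0135_2_4 K_0135_2(1) F_0346_5_1 K_0346_5(1) SW_0346_5_1 F_0456_1_2 K_0456_1(1) F_0256_4_1 K_0256_4(1) SW_0256_4_1 F_1234_6_5 K_1234_6(1) SW_1234_6_5 F_0125_3_4 K_0125_3(1) F_0256_1_4 K_0256_1(1) F_0356_1_2 K_0356_1(1) F_0345_2_1 K_0345_2(1) SW_0345_2_1 L_0125_0215 L_0125_0215_c0(1) L_0125_0215_c1(1) L_0125_0215_c2(1) F_0156_3_2 K_0156_3(1) SW_0156_3_2 F_0125_4_6 K_0125_4(1) F_0356_2_1 K_0356_2(1) SW_0356_2_1 F_0246_1_3 K_0246_1(1) F_2345_1_6 K_2345_1(1) F_2346_5_0 K_2346_5(1) SW_2346_5_0 F_2346_0_1 K_2346_0(1) F_0456_2_1 K_0456_2(1) SW_0456_2_1 F_0125_6_3 K_0125_6(1) SW_0125_6_3 F_0346_2_5 K_0346_2(1) F_1245_3_6 K_1245_3(1) F_0146_3_2 K_0146_3(1) SW_0146_3_2 F_0156_2_3 K_0156_2(1) F_1346_5_0 K_1346_5(1) SW_1346_5_0 F_0125_6_4 K_0125_6(1) SW_0125_6_4 L_1456_1456 L_1456_1456_c0(1) L_1456_1456_c1(1) L_1456_1456_c2(1) F_2345_6_1 K_2345_6(1) SW_2345_6_1 F_1346_2_5 K_1346_2(1) F_0256_3_4 K_0256_3(1) F_1245_0_6 K_1245_0(1) F_0256_4_3 K_0256_4(1) SW_0256_4_3 F_0346_1_5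 K_0346_1(1) F_0146_2_3 K_0146_2(1) F_0236_5_4 K_0236_5(1) SW_0236_5_4 F_0135_4_2 K_0135_4(1) SW_0135_4_2 F_1456_3_2 K_1456_3(1) SW_1456_3_2 F_2346_1_5 K_2346_1(1) L_0346_0634 L_0346_0634_c0(1) L_0346_0634_c1(1) L_0346_0634_c2(1) L_2346_2436 L_2346_2436_c0(1) L_2346_2436_c1(1) L_2346_2436_c2(1) F_0346_5_2 K_0346_5(1) SW_0346_5_2 F_0246_3_1 K_0246_3(1) SW_0246_3_1 F_2456_3_0 K_2456_3(1) SW_2456_3_0 F_0345_1_2 K_0345_1(1) F_0236_4_5 K_0236_4(1) F_2456_0_3 K_2456_0(1) F_1234_5_6 K_1234_5(1) F_1346_0_5 K_1346_0(1) F_0346_2_1 K_0346_2(1) SW_0346_2_1 F_1245_0_3 K_1245_0(1) F_1346_5_2 K_1346_5(1) SW_1346_5_2 F_1456_0_2 K_1456_0(1) F_0125_4_3 K_0125_4(1) SW_0125_4_3 L_1245_1524 L_1245_1524_c0(1) L_1245_1524_c1(1) L_1245_1524_c2(1) by sat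
  have BB_2: "((Dd q 2 0 \<longleftrightarrow> \<not> Dd q 3 0) \<and> (Dd q 2 1 \<longleftrightarrow> \<not> Dd q 3 1) \<and> (Dd q 2 4 \<longleftrightarrow> \<not> Dd q 3 4) \<and> (Dd q 2 5 \<longleftrightarrow> \<not> Dd q 3 5) \<and> (Dd q 2 6 \<longleftrightarrow> \<not> Dd q 3 6)) \<and> ((Dd q 2 0 \<or> Dd q 2 1 \<or> Dd q 2 3 \<or> Dd q 2 4 \<or> Dd q 2 5 \<or> Dd q 2 6) \<and> (\<not> Dd q 2 0 \<or> \<not> Dd q 2 1 \<or> \<not> Dd q 2 3 \<or> \<not> Dd q 2 4 \<or> \<not> Dd q 2 5 \<or> \<not> Dd q 2 6) \<longrightarrow> (Dd q 2 3 \<longleftrightarrow> Dd q 3 2) \<and> (Dd q 1 2 \<longleftrightarrow> Dd q 2 1) \<and> (Dd q 1 2 \<longleftrightarrow> \<not> Dd q 2 3))"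
    unfolding Dd_def using F_0123_4_6 K_0123_4(1) F_1456_3_0 K_1456_3(1) SW_1456_3_0 F_1236_5_0 K_1236_5(1) SW_1236_5_0 F_1236_0_5 K_1236_0(1) F_0135_2_4 K_0135_2(1) F_0346_5_1 K_0346_5(1) SW_0346_5_1 F_0146_5_3 K_0146_5(1) SW_0146_5_3 F_0456_1_2 K_0456_1(1) F_0256_4_1 K_0256_4(1) SW_0256_4_1 F_0123_6_5 K_0123_6(1) SW_0123_6_5 F_0234_6_1 K_0234_6(1) SW_0234_6_1 F_1234_6_5 K_1234_6(1) SW_1234_6_5 F_0125_3_4 K_0125_3(1) F_0256_1_4 K_0256_1(1) F_0124_5_3 K_0124_5(1) SW_0124_5_3 L_0125_0215 L_0125_0215_c0(1) L_0125_0215_c1(1) L_0125_0215_c2(1) F_0156_3_2 K_0156_3(1) SW_0156_3_2 F_0125_4_6 K_0125_4(1) F_0234_1_6 K_0234_1(1) F_0246_1_3 K_0246_1(1) F_2346_5_0 K_2346_5(1) SW_2346_5_0 F_2346_0_1 K_2346_0(1) F_1245_6_3 K_1245_6(1) SW_1245_6_3 F_0124_3_5 K_0124_3(1) F_0456_2_1 K_0456_2(1) SW_0456_2_1 F_0125_6_3 K_0125_6(1) SW_0125_6_3 F_0346_2_5 K_0346_2(1) F_1245_3_6 K_1245_3(1) F_0146_3_2 K_0146_3(1) SW_0146_3_2 F_0156_2_3 K_0156_2(1) F_1346_5_0 K_1346_5(1) SW_1346_5_0 F_0125_6_4 K_0125_6(1) SW_0125_6_4 L_1456_1456 L_1456_1456_c0(1)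 L_1456_1456_c1(1) L_1456_1456_c2(1) F_1356_2_0 K_1356_2(1) SW_1356_2_0 F_1346_2_5 K_1346_2(1) F_0256_3_4 K_0256_3(1) F_1245_0_6 K_1245_0(1) F_0256_4_3 K_0256_4(1) SW_0256_4_3 F_0346_1_5 K_0346_1(1) F_0146_2_3 K_0146_2(1) F_0236_5_4 K_0236_5(1) SW_0236_5_4 F_1356_0_2 K_1356_0(1) F_0123_4_5 K_0123_4(1) F_0135_4_2 K_0135_4(1) SW_0135_4_2 L_0123_0213 L_0123_0213_c0(1) L_0123_0213_c1(1) L_0123_0213_c2(1) F_1456_3_2 K_1456_3(1) SW_1456_3_2 F_2346_1_5 K_2346_1(1) L_0346_0634 L_0346_0634_c0(1) L_0346_0634_c1(1) L_0346_0634_c2(1) L_2346_2436 L_2346_2436_c0(1) L_2346_2436_c1(1) L_2346_2436_c2(1) F_0346_5_2 K_0346_5(1) SW_0346_5_2 F_0146_3_5 K_0146_3(1) F_0246_3_1 K_0246_3(1) SW_0246_3_1 F_2456_3_0 K_2456_3(1) SW_2456_3_0 F_0236_4_5 K_0236_4(1) F_2456_0_3 K_2456_0(1) F_1234_5_6 K_1234_5(1) F_1346_0_5 K_1346_0(1) F_0346_2_1 K_0346_2(1) SW_0346_2_1 F_1245_0_3 K_1245_0(1) F_1346_5_2 K_1346_5(1) SW_1346_5_2 F_1456_0_2 K_1456_0(1) F_0125_4_3 K_0125_4(1) SW_0125_4_3 L_1245_1524 L_1245_1524_c0(1) L_1245_1524_c1(1) L_1245_1524_c2(1) by sat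
  have BB_3: "((Dd q 3 0 \<longleftrightarrow> \<not> Dd q 4 0) \<and> (Dd q 3 1 \<longleftrightarrow> \<not> Dd q 4 1) \<and> (Dd q 3 2 \<longleftrightarrow> \<not> Dd q 4 2) \<and> (Dd q 3 5 \<longleftrightarrow> \<not> Dd q 4 5) \<and> (Dd q 3 6 \<longleftrightarrow> \<not> Dd q 4 6)) \<and> ((Dd q 3 0 \<or> Dd q 3 1 \<or> Dd q 3 2 \<or> Dd q 3 4 \<or> Dd q 3 5 \<or> Dd q 3 6) \<and> (\<not> Dd q 3 0 \<or> \<not> Dd q 3 1 \<or> \<not> Dd q 3 2 \<or> \<not> Dd q 3 4 \<or> \<not> Dd q 3 5 \<or> \<not> Dd q 3 6) \<longrightarrow> (Dd q 3 4 \<longleftrightarrow> Dd q 4 3) \<and> (Dd q 2 3 \<longleftrightarrow> Dd q 3 2) \<and> (Dd q 2 3 \<longleftrightarrow> \<not> Dd q 3 4))"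
    unfolding Dd_def using F_0123_4_6 K_0123_4(1) F_1456_3_0 K_1456_3(1) SW_1456_3_0 F_1236_5_0 K_1236_5(1) SW_1236_5_0 F_1236_0_5 K_1236_0(1) F_0346_5_1 K_0346_5(1) SW_0346_5_1 F_0146_5_3 K_0146_5(1) SW_0146_5_3 F_0456_1_2 K_0456_1(1) F_0256_4_1 K_0256_4(1) SW_0256_4_1 F_1256_4_3 K_1256_4(1) SW_1256_4_3 F_0123_6_5 K_0123_6(1) SW_0123_6_5 F_0234_6_1 K_0234_6(1) SW_0234_6_1 F_1234_6_5 K_1234_6(1) SW_1234_6_5 F_0125_3_4 K_0125_3(1) F_0256_1_4 K_0256_1(1) F_0124_5_3 K_0124_5(1) SW_0124_5_3 L_0125_0215 L_0125_0215_c0(1) L_0125_0215_c1(1) L_0125_0215_c2(1) F_0123_6_4 K_0123_6(1) SW_0123_6_4 F_1256_3_4 K_1256_3(1) F_0156_3_2 K_0156_3(1) SW_0156_3_2 F_0125_4_6 K_0125_4(1) F_0234_1_6 K_0234_1(1) F_0246_1_3 K_0246_1(1) F_1245_6_3 K_1245_6(1) SW_1245_6_3 F_0124_3_5 K_0124_3(1) F_0456_2_1 K_0456_2(1) SW_0456_2_1 F_0125_6_3 K_0125_6(1) SW_0125_6_3 F_0346_2_5 K_0346_2(1) F_1245_3_6 K_1245_3(1) F_0156_2_3 K_0156_2(1) F_1346_5_0 K_1346_5(1) SW_1346_5_0 F_0125_6_4 K_0125_6(1) SW_0125_6_4 L_1456_1456 L_1456_1456_c0(1) L_1456_1456_c1(1)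 L_1456_1456_c2(1) F_1356_2_0 K_1356_2(1) SW_1356_2_0 F_1346_2_5 K_1346_2(1) F_0256_3_4 K_0256_3(1) F_1245_0_6 K_1245_0(1) F_0256_4_3 K_0256_4(1) SW_0256_4_3 F_0346_1_5 K_0346_1(1) F_0356_1_4 K_0356_1(1) F_0236_5_4 K_0236_5(1) SW_0236_5_4 F_0356_4_1 K_0356_4(1) SW_0356_4_1 F_1356_0_2 K_1356_0(1) F_0123_4_5 K_0123_4(1) L_0123_0213 L_0123_0213_c0(1) L_0123_0213_c1(1) L_0123_0213_c2(1) F_1456_3_2 K_1456_3(1) SW_1456_3_2 L_0346_0634 L_0346_0634_c0(1) L_0346_0634_c1(1) L_0346_0634_c2(1) F_0146_3_5 K_0146_3(1) F_0246_3_1 K_0246_3(1) SW_0246_3_1 F_0236_4_5 K_0236_4(1) F_1234_5_6 K_1234_5(1) F_1346_0_5 K_1346_0(1) F_0346_2_1 K_0346_2(1) SW_0346_2_1 F_1245_0_3 K_1245_0(1) F_1346_5_2 K_1346_5(1) SW_1346_5_2 F_1456_0_2 K_1456_0(1) F_0125_4_3 K_0125_4(1) SW_0125_4_3 L_1245_1524 L_1245_1524_c0(1) L_1245_1524_c1(1) L_1245_1524_c2(1) by sat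
  have BB_4: "((Dd q 4 0 \<longleftrightarrow> \<not> Dd q 5 0) \<and> (Dd q 4 1 \<longleftrightarrow> \<not> Dd q 5 1) \<and> (Dd q 4 2 \<longleftrightarrow> \<not> Dd q 5 2) \<and> (Dd q 4 3 \<longleftrightarrow> \<not> Dd q 5 3) \<and> (Dd q 4 6 \<longleftrightarrow> \<not> Dd q 5 6)) \<and> ((Dd q 4 0 \<or> Dd q 4 1 \<or> Dd q 4 2 \<or> Dd q 4 3 \<or> Dd q 4 5 \<or> Dd q 4 6) \<and> (\<not> Dd q 4 0 \<or> \<not> Dd q 4 1 \<or> \<not> Dd q 4 2 \<or> \<not> Dd q 4 3 \<or> \<not> Dd q 4 5 \<or> \<not> Dd q 4 6) \<longrightarrow> (Dd q 4 5 \<longleftrightarrow> Dd q 5 4) \<and> (Dd q 3 4 \<longleftrightarrow> Dd q 4 3) \<and> (Dd q 3 4 \<longleftrightarrow> \<not> Dd q 4 5))"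
    unfolding Dd_def using F_1456_3_0 K_1456_3(1) SW_1456_3_0 F_1236_5_0 K_1236_5(1) SW_1236_5_0 F_1236_0_5 K_1236_0(1) F_0346_5_1 K_0346_5(1) SW_0346_5_1 F_0456_1_2 K_0456_1(1) F_0256_4_1 K_0256_4(1) SW_0256_4_1 F_1256_4_3 K_1256_4(1) SW_1256_4_3 F_0123_6_5 K_0123_6(1) SW_0123_6_5 F_0126_4_5 K_0126_4(1) F_1234_6_5 K_1234_6(1) SW_1234_6_5 F_0125_3_4 K_0125_3(1) F_0256_1_4 K_0256_1(1) F_0124_5_3 K_0124_5(1) SW_0124_5_3 L_0125_0215 L_0125_0215_c0(1) L_0125_0215_c1(1) L_0125_0215_c2(1) F_0123_6_4 K_0123_6(1) SW_0123_6_4 F_1256_3_4 K_1256_3(1) F_0156_3_2 K_0156_3(1) SW_0156_3_2 F_0125_4_6 K_0125_4(1) F_2346_5_0 K_2346_5(1) SW_2346_5_0 F_2346_0_1 K_2346_0(1) F_1245_6_3 K_1245_6(1) SW_1245_6_3 F_0124_3_5 K_0124_3(1) F_0456_2_1 K_0456_2(1) SW_0456_2_1 F_0125_6_3 K_0125_6(1) SW_0125_6_3 F_0346_2_5 K_0346_2(1) F_1245_3_6 K_1245_3(1) F_0156_2_3 K_0156_2(1) F_1346_5_0 K_1346_5(1) SW_1346_5_0 F_0125_6_4 K_0125_6(1) SW_0125_6_4 L_1456_1456 L_1456_1456_c0(1) L_1456_1456_c1(1) L_1456_1456_c2(1) F_1356_2_0 K_1356_2(1) SW_1356_2_0 F_1346_2_5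 K_1346_2(1) F_0256_3_4 K_0256_3(1) F_1245_0_6 K_1245_0(1) F_0256_4_3 K_0256_4(1) SW_0256_4_3 F_0346_1_5 K_0346_1(1) F_0356_1_4 K_0356_1(1) F_0236_5_4 K_0236_5(1) SW_0236_5_4 F_0126_5_4 K_0126_5(1) SW_0126_5_4 F_0356_4_1 K_0356_4(1) SW_0356_4_1 F_1356_0_2 K_1356_0(1) F_0123_4_5 K_0123_4(1) L_0123_0213 L_0123_0213_c0(1) L_0123_0213_c1(1) L_0123_0213_c2(1) F_1456_3_2 K_1456_3(1) SW_1456_3_2 F_2346_1_5 K_2346_1(1) L_0346_0634 L_0346_0634_c0(1) L_0346_0634_c1(1) L_0346_0634_c2(1) L_2346_2436 L_2346_2436_c0(1) L_2346_2436_c1(1) L_2346_2436_c2(1) F_2456_3_0 K_2456_3(1) SW_2456_3_0 F_0236_4_5 K_0236_4(1) F_2456_0_3 K_2456_0(1) F_1234_5_6 K_1234_5(1) F_1346_0_5 K_1346_0(1) F_0346_2_1 K_0346_2(1) SW_0346_2_1 F_1245_0_3 K_1245_0(1) F_1346_5_2 K_1346_5(1) SW_1346_5_2 F_1456_0_2 K_1456_0(1) F_0125_4_3 K_0125_4(1) SW_0125_4_3 L_1245_1524 L_1245_1524_c0(1) L_1245_1524_c1(1) L_1245_1524_c2(1) by sat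
  have BB_5: "((Dd q 5 0 \<longleftrightarrow> \<not> Dd q 6 0) \<and> (Dd q 5 1 \<longleftrightarrow> \<not> Dd q 6 1) \<and> (Dd q 5 2 \<longleftrightarrow> \<not> Dd q 6 2) \<and> (Dd q 5 3 \<longleftrightarrow> \<not> Dd q 6 3) \<and> (Dd q 5 4 \<longleftrightarrow> \<not> Dd q 6 4)) \<and> ((Dd q 5 0 \<or> Dd q 5 1 \<or> Dd q 5 2 \<or> Dd q 5 3 \<or> Dd q 5 4 \<or> Dd q 5 6) \<and> (\<not> Dd q 5 0 \<or> \<not> Dd q 5 1 \<or> \<not> Dd q 5 2 \<or> \<not> Dd q 5 3 \<or> \<not> Dd q 5 4 \<or> \<not> Dd q 5 6) \<longrightarrow> (Dd q 5 6 \<longleftrightarrow> Dd q 6 5) \<and> (Dd q 4 5 \<longleftrightarrow> Dd q 5 4) \<and> (Dd q 4 5 \<longleftrightarrow> \<not> Dd q 5 6))"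
    unfolding Dd_def using F_0123_4_6 K_0123_4(1) F_1456_3_0 K_1456_3(1) SW_1456_3_0 F_1236_5_0 K_1236_5(1) SW_1236_5_0 F_1236_0_5 K_1236_0(1) F_0346_5_1 K_0346_5(1) SW_0346_5_1 F_0456_1_2 K_0456_1(1) F_0256_4_1 K_0256_4(1) SW_0256_4_1 F_0123_6_5 K_0123_6(1) SW_0123_6_5 F_0126_4_5 K_0126_4(1) F_1234_6_5 K_1234_6(1) SW_1234_6_5 F_0256_1_4 K_0256_1(1) F_0124_5_3 K_0124_5(1) SW_0124_5_3 L_0125_0215 L_0125_0215_c0(1) L_0125_0215_c1(1) L_0125_0215_c2(1) F_1235_0_6 K_1235_0(1) F_0123_6_4 K_0123_6(1) SW_0123_6_4 F_0156_3_2 K_0156_3(1) SW_0156_3_2 F_0125_4_6 K_0125_4(1) F_2346_5_0 K_2346_5(1) SW_2346_5_0 F_2346_0_1 K_2346_0(1) F_0124_3_5 K_0124_3(1) F_1235_6_0 K_1235_6(1) SW_1235_6_0 F_0456_2_1 K_0456_2(1) SW_0456_2_1 F_0125_6_3 K_0125_6(1) SW_0125_6_3 F_0346_2_5 K_0346_2(1) F_1245_3_6 K_1245_3(1) F_0345_2_6 K_0345_2(1) F_0156_2_3 K_0156_2(1) F_1346_5_0 K_1346_5(1) SW_1346_5_0 F_0125_6_4 K_0125_6(1) SW_0125_6_4 L_1456_1456 L_1456_1456_c0(1) L_1456_1456_c1(1) L_1456_1456_c2(1) F_1356_2_0 K_1356_2(1) SW_1356_2_0 F_1346_2_5 K_1346_2(1)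 F_0256_3_4 K_0256_3(1) F_1245_0_6 K_1245_0(1) F_0256_4_3 K_0256_4(1) SW_0256_4_3 F_0345_6_2 K_0345_6(1) SW_0345_6_2 F_0346_1_5 K_0346_1(1) F_0356_1_4 K_0356_1(1) F_0236_5_4 K_0236_5(1) SW_0236_5_4 F_0126_5_4 K_0126_5(1) SW_0126_5_4 F_0356_4_1 K_0356_4(1) SW_0356_4_1 F_1356_0_2 K_1356_0(1) F_0123_4_5 K_0123_4(1) L_0123_0213 L_0123_0213_c0(1) L_0123_0213_c1(1) L_0123_0213_c2(1) F_1456_3_2 K_1456_3(1) SW_1456_3_2 F_2346_1_5 K_2346_1(1) L_0346_0634 L_0346_0634_c0(1) L_0346_0634_c1(1) L_0346_0634_c2(1) L_2346_2436 L_2346_2436_c0(1) L_2346_2436_c1(1) L_2346_2436_c2(1) F_0135_6_4 K_0135_6(1) SW_0135_6_4 F_0346_5_2 K_0346_5(1) SW_0346_5_2 F_0135_4_6 K_0135_4(1) F_2456_3_0 K_2456_3(1) SW_2456_3_0 F_0236_4_5 K_0236_4(1) F_2456_0_3 K_2456_0(1) F_1234_5_6 K_1234_5(1) F_1346_0_5 K_1346_0(1) F_0346_2_1 K_0346_2(1) SW_0346_2_1 F_1245_0_3 K_1245_0(1) F_1346_5_2 K_1346_5(1) SW_1346_5_2 F_1456_0_2 K_1456_0(1) F_0125_4_3 K_0125_4(1) SW_0125_4_3 L_1245_1524 L_1245_1524_c0(1) L_1245_1524_c1(1) L_1245_1524_c2(1) by sat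
  have BB_6: "((Dd q 6 1 \<longleftrightarrow> \<not> Dd q 0 1) \<and> (Dd q 6 2 \<longleftrightarrow> \<not> Dd q 0 2) \<and> (Dd q 6 3 \<longleftrightarrow> \<not> Dd q 0 3) \<and> (Dd q 6 4 \<longleftrightarrow> \<not> Dd q 0 4) \<and> (Dd q 6 5 \<longleftrightarrow> \<not> Dd q 0 5)) \<and> ((Dd q 6 0 \<or> Dd q 6 1 \<or> Dd q 6 2 \<or> Dd q 6 3 \<or> Dd q 6 4 \<or> Dd q 6 5) \<and> (\<not> Dd q 6 0 \<or> \<not> Dd q 6 1 \<or> \<not> Dd q 6 2 \<or> \<not> Dd q 6 3 \<or> \<not> Dd q 6 4 \<or> \<not> Dd q 6 5) \<longrightarrow> (Dd q 6 0 \<longleftrightarrow> Dd q 0 6) \<and> (Dd q 5 6 \<longleftrightarrow> Dd q 6 5) \<and> (Dd q 5 6 \<longleftrightarrow> \<not> Dd q 6 0))"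
    unfolding Dd_def using F_1234_5_0 K_1234_5(1) SW_1234_5_0 F_0123_4_6 K_0123_4(1) F_1236_5_0 K_1236_5(1) SW_1236_5_0 F_1236_0_5 K_1236_0(1) F_0346_5_1 K_0346_5(1) SW_0346_5_1 F_2346_1_0 K_2346_1(1) SW_2346_1_0 F_0123_6_5 K_0123_6(1) SW_0123_6_5 F_0234_6_1 K_0234_6(1) SW_0234_6_1 F_1234_6_5 K_1234_6(1) SW_1234_6_5 F_0124_5_3 K_0124_5(1) SW_0124_5_3 L_0125_0215 L_0125_0215_c0(1) L_0125_0215_c1(1) L_0125_0215_c2(1) F_1235_0_6 K_1235_0(1) F_0156_3_2 K_0156_3(1) SW_0156_3_2 F_0125_4_6 K_0125_4(1) F_0234_1_6 K_0234_1(1) F_2346_5_0 K_2346_5(1) SW_2346_5_0 F_2346_0_1 K_2346_0(1) F_1234_0_5 K_1234_0(1) F_0124_3_5 K_0124_3(1) F_1235_6_0 K_1235_6(1) SW_1235_6_0 F_0125_6_3 K_0125_6(1) SW_0125_6_3 F_0346_2_5 K_0346_2(1) F_1245_3_6 K_1245_3(1) F_0345_2_6 K_0345_2(1) F_0156_2_3 K_0156_2(1) F_1346_5_0 K_1346_5(1) SW_1346_5_0 F_0125_6_4 K_0125_6(1) SW_0125_6_4 F_1356_2_0 K_1356_2(1) SW_1356_2_0 F_0256_3_4 K_0256_3(1) F_1245_0_6 K_1245_0(1) F_0256_4_3 K_0256_4(1) SW_0256_4_3 F_0345_6_2 K_0345_6(1) SW_0345_6_2 F_0346_1_5 K_0346_1(1)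 F_0356_1_4 K_0356_1(1) F_1256_4_0 K_1256_4(1) SW_1256_4_0 F_0236_5_4 K_0236_5(1) SW_0236_5_4 F_0356_4_1 K_0356_4(1) SW_0356_4_1 F_1356_0_2 K_1356_0(1) F_0123_4_5 K_0123_4(1) L_0123_0213 L_0123_0213_c0(1) L_0123_0213_c1(1) L_0123_0213_c2(1) F_1256_0_4 K_1256_0(1) F_2346_1_5 K_2346_1(1) L_0346_0634 L_0346_0634_c0(1) L_0346_0634_c1(1) L_0346_0634_c2(1) L_2346_2436 L_2346_2436_c0(1) L_2346_2436_c1(1) L_2346_2436_c2(1) F_0135_6_4 K_0135_6(1) SW_0135_6_4 F_0346_5_2 K_0346_5(1) SW_0346_5_2 F_0135_4_6 K_0135_4(1) F_2456_3_0 K_2456_3(1) SW_2456_3_0 F_0236_4_5 K_0236_4(1) F_2456_0_3 K_2456_0(1) F_1234_5_6 K_1234_5(1) F_1346_0_5 K_1346_0(1) F_0346_2_1 K_0346_2(1) SW_0346_2_1 F_1245_0_3 K_1245_0(1) F_0125_4_3 K_0125_4(1) SW_0125_4_3 L_1245_1524 L_1245_1524_c0(1) L_1245_1524_c1(1) L_1245_1524_c2(1) by sat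
  have A_0: "\<forall>j. j \<noteq> (0::7) \<and> j \<noteq> 0+1 \<longrightarrow> (Dd q 0 j \<longleftrightarrow> \<not> Dd q (0+1) j)" using BB_0 unfolding all7 by simp
  have B_0: "(\<exists>j. j \<noteq> (0::7) \<and> Dd q 0 j) \<and> (\<exists>j. j \<noteq> (0::7) \<and> \<not> Dd q 0 j) \<longrightarrow> (Dd q 0 (0+1) \<longleftrightarrow> Dd q (0+1) 0) \<and> (Dd q (0-1) 0 \<longleftrightarrow> Dd q 0 (0-1)) \<and> (Dd q (0-1) 0 \<longleftrightarrow> \<not> Dd q 0 (0+1))"
    apply (simp only: ex7) apply simp using BB_0 by sat
  have A_1: "\<forall>j. j \<noteq> (1::7) \<and> j \<noteq> 1+1 \<longrightarrow> (Dd q 1 j \<longleftrightarrow> \<not> Dd q (1+1) j)" using BB_1 unfolding all7 by simp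
  have B_1: "(\<exists>j. j \<noteq> (1::7) \<and> Dd q 1 j) \<and> (\<exists>j. j \<noteq> (1::7) \<and> \<not> Dd q 1 j) \<longrightarrow> (Dd q 1 (1+1) \<longleftrightarrow> Dd q (1+1) 1) \<and> (Dd q (1-1) 1 \<longleftrightarrow> Dd q 1 (1-1)) \<and> (Dd q (1-1) 1 \<longleftrightarrow> \<not> Dd q 1 (1+1))"
    apply (simp only: ex7) apply simp using BB_1 by sat
  have A_2: "\<forall>j. j \<noteq> (2::7) \<and> j \<noteq> 2+1 \<longrightarrow> (Dd q 2 j \<longleftrightarrow> \<not> Dd q (2+1) j)" using BB_2 unfolding all7 by simp
  have B_2: "(\<exists>j. j \<noteq> (2::7) \<and> Dd q 2 j) \<and> (\<exists>j. j \<noteq> (2::7) \<and> \<not> Dd q 2 j) \<longrightarrow> (Dd q 2 (2+1) \<longleftrightarrow> Dd q (2+1) 2) \<and> (Dd q (2-1) 2 \<longleftrightarrow> Dd q 2 (2-1)) \<and> (Dd q (2-1) 2 \<longleftrightarrow> \<not> Dd q 2 (2+1))"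
    apply (simp only: ex7) apply simp using BB_2 by sat
  have A_3: "\<forall>j. j \<noteq> (3::7) \<and> j \<noteq> 3+1 \<longrightarrow> (Dd q 3 j \<longleftrightarrow> \<not> Dd q (3+1) j)" using BB_3 unfolding all7 by simp
  have B_3: "(\<exists>j. j \<noteq> (3::7) \<and> Dd q 3 j) \<and> (\<exists>j. j \<noteq> (3::7) \<and> \<not> Dd q 3 j) \<longrightarrow> (Dd q 3 (3+1) \<longleftrightarrow> Dd q (3+1) 3) \<and> (Dd q (3-1) 3 \<longleftrightarrow> Dd q 3 (3-1)) \<and> (Dd q (3-1) 3 \<longleftrightarrow> \<not> Dd q 3 (3+1))"
    apply (simp only: ex7) apply simp using BB_3 by sat
  have A_4: "\<forall>j. j \<noteq> (4::7) \<and> j \<noteq> 4+1 \<longrightarrow> (Dd q 4 j \<longleftrightarrow> \<not> Dd q (4+1) j)" using BB_4 unfolding all7 by simp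
  have B_4: "(\<exists>j. j \<noteq> (4::7) \<and> Dd q 4 j) \<and> (\<exists>j. j \<noteq> (4::7) \<and> \<not> Dd q 4 j) \<longrightarrow> (Dd q 4 (4+1) \<longleftrightarrow> Dd q (4+1) 4) \<and> (Dd q (4-1) 4 \<longleftrightarrow> Dd q 4 (4-1)) \<and> (Dd q (4-1) 4 \<longleftrightarrow> \<not> Dd q 4 (4+1))"
    apply (simp only: ex7) apply simp using BB_4 by sat
  have A_5: "\<forall>j. j \<noteq> (5::7) \<and> j \<noteq> 5+1 \<longrightarrow> (Dd q 5 j \<longleftrightarrow> \<not> Dd q (5+1) j)" using BB_5 unfolding all7 by simp
  have B_5: "(\<exists>j. j \<noteq> (5::7) \<and> Dd q 5 j) \<and> (\<exists>j. j \<noteq> (5::7) \<and> \<not> Dd q 5 j) \<longrightarrow> (Dd q 5 (5+1) \<longleftrightarrow> Dd q (5+1) 5) \<and> (Dd q (5-1) 5 \<longleftrightarrow> Dd q 5 (5-1)) \<and> (Dd q (5-1) 5 \<longleftrightarrow> \<not> Dd q 5 (5+1))"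
    apply (simp only: ex7) apply simp using BB_5 by sat
  have A_6: "\<forall>j. j \<noteq> (6::7) \<and> j \<noteq> 6+1 \<longrightarrow> (Dd q 6 j \<longleftrightarrow> \<not> Dd q (6+1) j)" using BB_6 unfolding all7 by simp
  have B_6: "(\<exists>j. j \<noteq> (6::7) \<and> Dd q 6 j) \<and> (\<exists>j. j \<noteq> (6::7) \<and> \<not> Dd q 6 j) \<longrightarrow> (Dd q 6 (6+1) \<longleftrightarrow> Dd q (6+1) 6) \<and> (Dd q (6-1) 6 \<longleftrightarrow> Dd q 6 (6-1)) \<and> (Dd q (6-1) 6 \<longleftrightarrow> \<not> Dd q 6 (6+1))"
    apply (simp only: ex7) apply simp using BB_6 by sat
  have AL: "\<forall>i. (\<forall>j. j \<noteq> i \<and> j \<noteq> i + 1 \<longrightarrow> dd q i j + dd q (i + 1) j = 1)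
    \<and> (dom_index q i \<notin> {0, 6} \<longrightarrow> dd q i (i + 1) = dd q (i + 1) i \<and> dd q (i - 1) i = dd q i (i - 1))
    \<and> (dom_index q i \<notin> {0, 6} \<longrightarrow> dd q (i - 1) i \<noteq> dd q i (i + 1))"
    by (rule all7[THEN iffD2]) (rule conjI[OF conv[OF A_0 B_0] conjI[OF conv[OF A_1 B_1] conjI[OF conv[OF A_2 B_2] conjI[OF conv[OF A_3 B_3] conjI[OF conv[OF A_4 B_4] conjI[OF conv[OF A_5 B_5] conv[OF A_6 B_6]]]]]]])
  then show ?thesis by (rule spec)
qed

theorem lemma3p3:
  fixes p :: "7 \<Rightarrow> real^3" and i :: 7
  assumes "typical7 p" and "heptagonal_cyclic p"
  shows "(\<forall>j. j \<noteq> i \<and> j \<noteq> i + 1 \<longrightarrow> dd p i j + dd p (i + 1) j = 1)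
    \<and> (dom_index p i \<notin> {0, 6} \<longrightarrow> dd p i (i + 1) = dd p (i + 1) i \<and> dd p (i - 1) i = dd p i (i - 1))
    \<and> (dom_index p i \<notin> {0, 6} \<longrightarrow> dd p (i - 1) i \<noteq> dd p i (i + 1))"
proof -
  obtain w \<sigma> where w: "w \<noteq> 0" "\<sigma> \<in> {1, -1::real}" "\<forall>k. w \<bullet> p k \<noteq> 0"
    "\<forall>k m. m \<noteq> k \<and> m \<noteq> k + 1 \<longrightarrow> \<sigma> * det3 (aff w (p k)) (aff w (p (k + 1))) (aff w (p m)) > 0"
    using assms(2) unfolding heptagonal_cyclic_def by - (elim exE conjE, rule that, assumption+)
  define c where "c = (\<lambda>k. \<sigma> / (w \<bullet> p k))"
  define q where "q = (\<lambda>k. c k *\<^sub>R p k)"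
  have cnz: "\<forall>k. c k \<noteq> 0" using w(2,3) unfolding c_def by auto
  have edge: "\<forall>k m. m \<noteq> k \<and> m \<noteq> k + 1 \<longrightarrow> 0 < det3 (q k) (q (k+1)) (q m)"
    using edge_q[OF w] unfolding q_def c_def .
  have t6: "\<forall>m. \<not> (\<exists>A. conic_through A (p ` (UNIV - {m})))" using assms(1) unfolding typical7_def by (elim conjE) assumption
  have no6: "\<forall>m A. \<not> conic_through A (q ` (UNIV - {m}))"
  proof (intro allI)
    fix m A
    show "\<not> conic_through A (q ` (UNIV - {m}))"
      unfolding q_def conic_scale_iff[OF cnz] using t6 by blast
  qed
  have ddq: "\<And>u v. dd q u v = dd p u v" unfolding q_def by (rule dd_scale[OF cnz])
  have domq: "\<And>u. dom_index q u = dom_index p u" unfolding q_def by (rule dom_scale[OF cnz])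
  show ?thesis using qmain[OF edge no6, of i] unfolding ddq domq .
qed

end
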